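(* Let $V$ be a complex vector space of finite dimension $N$, $n\ge2$. Let $F$ be a skew-invertible involutive symmetry on $V\otimes V$ and $R$ a braiding compatible with $F$ which is either an involutive symmetry (rational case) or a Hecke symmetry with parameter $q$ (trigonometric case). Put $$R(u,v)=R-\frac{I}{u-v},\quad f(u,v)=1-\frac{1}{u-v}\qquad\text{(rational case)},$$ $$R(u,v)=R-\frac{(q-q^{-1})u\,I}{u-v},\quad f(u,v)=q-\frac{(q-q^{-1})u}{u-v}\qquad\text{(trigonometric case)},$$ and $\mathcal{R}(u,v)=R(u,v)\,F\,f(u,v)^{-1}$ (as rational functions of $u,v$). Let $g$ be a numerical $N\times N$ matrix with $g_{\overline i}g_{\overline j}=g_{\overline j}g_{\overline i}$ and $[R_{\overline{ij}},g_{\overline i}g_{\overline j}]=0$ for all distinct $i,j$. Fix a nontrivial $p\in\mathbb{C}$ and let $T_i$ be the shift operator on functions $\Psi(u_1,\dots,u_n)$ with values in $V^{\otimes n}$: $T_i\Psi(\dots,u_i,\dots)=\Psi(\dots,u_i+p,\dots)$ in the rational case and $T_i\Psi(\dots,u_i,\dots)=\Psi(\dots,p\,u_i,\dots)$ in the trigonometric case. Define $$\mathcal{R}_{i\downarrow}=\mathcal{R}_{\overline{i\,i-1}}(u_i,u_{i-1})\cdots\mathcal{R}_{\overline{i\,1}}(u_i,u_1),\qquad \mathcal{R}_{i\uparrow}=\mathcal{R}_{\overline{i\,n}}(u_i,u_n)\cdots\mathcal{R}_{\overline{i\,i+1}}(u_i,u_{i+1}),$$ $\Delta_i=\mathcal{R}_{i\downarrow}\,T_i^{-1}g_{\overline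 i}\,\mathcal{R}_{i\uparrow}$ and $\mathcal{M}_i=T_i\Delta_i$ (operators on such functions, matrix-valued functions acting by multiplication). Then for all $i,j$ the holonomy condition $$T_i\mathcal{M}_jT_i^{-1}\mathcal{M}_i=T_j\mathcal{M}_iT_j^{-1}\mathcal{M}_j$$ holds, equivalently $\Delta_i\Delta_j=\Delta_j\Delta_i$; i.e. the system $\Psi(u_1,\dots,T_i u_i,\dots,u_n)=\kappa\,\mathcal{M}_i\Psi(u_1,\dots,u_n)$, $i=1,\dots,n$ ($\kappa\ne0$), is compatible.
   Context: A braiding is an invertible $R\in\mathrm{End}(V\otimes V)$ with $(R\otimes I)(I\otimes R)(R\otimes I)=(I\otimes R)(R\otimes I)(I\otimes R)$; involutive symmetry: $R^2=I$; Hecke symmetry: $(R-qI)(R+q^{-1}I)=0$, $q\ne\pm1$. $F$ is skew-invertible if there is $\Psi^F$ with $\mathrm{Tr}_{(2)}F_{12}\Psi^F_{23}=\mathrm{Tr}_{(2)}\Psi^F_{12}F_{23}=P_{13}$ ($P$ the flip). Compatibility: $R_{12}F_{23}F_{12}=F_{23}F_{12}R_{23}$ and $R_{23}F_{12}F_{23}=F_{12}F_{23}R_{12}$, where $X_{k,k+1}$ is $X$ acting on factors $k,k+1$ of $V^{\otimes n}$. Overlined indices: $g_{\overline 1}=g\otimes I\otimes\cdots\otimes I$, $g_{\overline{k+1}}=F_{k,k+1}g_{\overline k}F_{k,k+1}^{-1}$; for $X\in\mathrm{End}(V\otimes V)$ (possibly depending on parameters, which are kept fixed) and $k<l$, $X_{\overline{kl}}=(F_{k-1,k}\cdots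 F_{12})(F_{l-1,l}\cdots F_{23})X_{12}(F_{23}^{-1}\cdots F_{l-1,l}^{-1})(F_{12}^{-1}\cdots F_{k-1,k}^{-1})$, and $X_{\overline{lk}}:=(FXF)_{\overline{kl}}$. Thus $\mathcal{R}_{\overline{ij}}(u_i,u_j)$ is $\mathcal{R}(u_i,u_j)$ placed at positions $i,j$ in this way, and $R_{\overline{ij}}$ is the constant braiding $R$ so placed. *)

theory Defs
  imports Complex_Main
begin

text \<open>The basis of V^{\<otimes>n} is indexed by lists of length n with entries < N.
  Factor k (1-based) of a basis tensor xs is xs!(k-1).
  An operator is given by its matrix entries (row index, column index).
  All equalities of operators are only required on the genuine index set.\<close>

type_synonym op = "nat list \<Rightarrow> nat list \<Rightarrow> complex"

definition tidx :: "nat \<Rightarrow> nat \<Rightarrow> nat list set" where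
  "tidx N n = {xs. length xs = n \<and> (\<forall>x\<in>set xs. x < N)}"

definition opmul :: "nat \<Rightarrow> nat \<Rightarrow> op \<Rightarrow> op \<Rightarrow> op" where
  "opmul N n A B = (\<lambda>xs ys. \<Sum>zs\<in>tidx N n. A xs zs * B zs ys)"

definition opid :: op where
  "opid = (\<lambda>xs ys. if xs = ys then 1 else 0)"

definition opadd :: "op \<Rightarrow> op \<Rightarrow> op" where
  "opadd A B = (\<lambda>xs ys. A xs ys + B xs ys)"

definition opscale :: "complex \<Rightarrow> op \<Rightarrow> op" where
  "opscale c A = (\<lambda>xs ys. c * A xs ys)"

definition opzero :: op where
  "opzero = (\<lambda>xs ys. 0)"

definition opeq :: "nat \<Rightarrow> nat \<Rightarrow> op \<Rightarrow> op \<Rightarrow> bool" where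
  "opeq N n A B \<longleftrightarrow> (\<forall>xs\<in>tidx N n. \<forall>ys\<in>tidx N n. A xs ys = B xs ys)"

definition opprod :: "nat \<Rightarrow> nat \<Rightarrow> op list \<Rightarrow> op" where
  "opprod N n As = foldr (opmul N n) As opid"

text \<open>X in End(V\<otimes>V) placed at factors k, k+1 (1-based), i.e. X_{k,k+1}.\<close>
definition place2 :: "nat \<Rightarrow> op \<Rightarrow> op" where
  "place2 k X = (\<lambda>xs ys.
     if length xs = length ys \<and> (\<forall>m<length xs. m \<noteq> k - 1 \<and> m \<noteq> k \<longrightarrow> xs!m = ys!m)
     then X [xs!(k-1), xs!k] [ys!(k-1), ys!k] else 0)"

definition place1 :: "(nat \<Rightarrow> nat \<Rightarrow> complex) \<Rightarrow> op" where
  "place1 g = (\<lambda>xs ys.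
     if length xs = length ys \<and> (\<forall>m<length xs. m \<noteq> 0 \<longrightarrow> xs!m = ys!m)
     then g (xs!0) (ys!0) else 0)"

definition braiding :: "nat \<Rightarrow> op \<Rightarrow> bool" where
  "braiding N R \<longleftrightarrow>
     (\<exists>Ri. opeq N 2 (opmul N 2 R Ri) opid \<and> opeq N 2 (opmul N 2 Ri R) opid) \<and>
     opeq N 3 (opmul N 3 (place2 1 R) (opmul N 3 (place2 2 R) (place2 1 R)))
              (opmul N 3 (place2 2 R) (opmul N 3 (place2 1 R) (place2 2 R)))"

definition involutive_symmetry :: "nat \<Rightarrow> op \<Rightarrow> bool" where
  "involutive_symmetry N R \<longleftrightarrow> braiding N R \<and> opeq N 2 (opmul N 2 R R) opid"

definition hecke_symmetry :: "nat \<Rightarrow> complex \<Rightarrow> op \<Rightarrow> bool" where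
  "hecke_symmetry N q R \<longleftrightarrow> braiding N R \<and> q \<noteq> 0 \<and> q \<noteq> 1 \<and> q \<noteq> -1 \<and>
     opeq N 2 (opmul N 2 (opadd R (opscale (-q) opid)) (opadd R (opscale (inverse q) opid))) opzero"

text \<open>Partial trace over the middle factor of an operator on V^{\<otimes>3}, giving an operator on V\<otimes>V
  (factors 1 and 3).\<close>
definition trace2 :: "nat \<Rightarrow> op \<Rightarrow> op" where
  "trace2 N A = (\<lambda>xs ys. \<Sum>b<N. A [xs!0, b, xs!1] [ys!0, b, ys!1])"

text \<open>The flip P (here P_{13} viewed on the remaining factors 1,3).\<close>
definition flip :: op where
  "flip = (\<lambda>xs ys. if xs!0 = ys!1 \<and> xs!1 = ys!0 then 1 else 0)"

definition skew_invertible :: "nat \<Rightarrow> op \<Rightarrow> bool" where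
  "skew_invertible N F \<longleftrightarrow> (\<exists>Psi.
     opeq N 2 (trace2 N (opmul N 3 (place2 1 F) (place2 2 Psi))) flip \<and>
     opeq N 2 (trace2 N (opmul N 3 (place2 1 Psi) (place2 2 F))) flip)"

definition compatible :: "nat \<Rightarrow> op \<Rightarrow> op \<Rightarrow> bool" where
  "compatible N R F \<longleftrightarrow>
     opeq N 3 (opprod N 3 [place2 1 R, place2 2 F, place2 1 F])
              (opprod N 3 [place2 2 F, place2 1 F, place2 2 R]) \<and>
     opeq N 3 (opprod N 3 [place2 2 R, place2 1 F, place2 2 F])
              (opprod N 3 [place2 1 F, place2 2 F, place2 1 R])"

section \<open>Overlined indices (F is involutive, so F^{-1} = F)\<close>

text \<open>gbar_r N n F g k is g_{\<overline>{k+1}}.\<close>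
fun gbar_r :: "nat \<Rightarrow> nat \<Rightarrow> op \<Rightarrow> (nat \<Rightarrow> nat \<Rightarrow> complex) \<Rightarrow> nat \<Rightarrow> op" where
  "gbar_r N n F g 0 = place1 g"
| "gbar_r N n F g (Suc k) =
     opprod N n [place2 (Suc k) F, gbar_r N n F g k, place2 (Suc k) F]"

definition gbar :: "nat \<Rightarrow> nat \<Rightarrow> op \<Rightarrow> (nat \<Rightarrow> nat \<Rightarrow> complex) \<Rightarrow> nat \<Rightarrow> op" where
  "gbar N n F g k = gbar_r N n F g (k - 1)"

definition Fdesc :: "nat \<Rightarrow> nat \<Rightarrow> op \<Rightarrow> nat \<Rightarrow> nat \<Rightarrow> op" where
  "Fdesc N n F a b = opprod N n (map (\<lambda>m. place2 m F) (rev [a..<b]))"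

definition Fasc :: "nat \<Rightarrow> nat \<Rightarrow> op \<Rightarrow> nat \<Rightarrow> nat \<Rightarrow> op" where
  "Fasc N n F a b = opprod N n (map (\<lambda>m. place2 m F) [a..<b])"

definition xbar_lt :: "nat \<Rightarrow> nat \<Rightarrow> op \<Rightarrow> nat \<Rightarrow> nat \<Rightarrow> op \<Rightarrow> op" where
  "xbar_lt N n F k l X = opprod N n
     [Fdesc N n F 1 k, Fdesc N n F 2 l, place2 1 X, Fasc N n F 2 l, Fasc N n F 1 k]"

definition xbar :: "nat \<Rightarrow> nat \<Rightarrow> op \<Rightarrow> nat \<Rightarrow> nat \<Rightarrow> op \<Rightarrow> op" where
  "xbar N n F k l X = (if k < l then xbar_lt N n F k l X
                       else xbar_lt N n F l k (opprod N 2 [F, X, F]))"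

section \<open>Spectral R-matrices; trig = False: rational case, trig = True: trigonometric case\<close>

definition Ruv :: "bool \<Rightarrow> complex \<Rightarrow> op \<Rightarrow> complex \<Rightarrow> complex \<Rightarrow> op" where
  "Ruv trig q R u v = (if trig then opadd R (opscale (- ((q - inverse q) * u / (u - v))) opid)
                       else opadd R (opscale (- (1 / (u - v))) opid))"

definition fuv :: "bool \<Rightarrow> complex \<Rightarrow> complex \<Rightarrow> complex \<Rightarrow> complex" where
  "fuv trig q u v = (if trig then q - (q - inverse q) * u / (u - v) else 1 - 1 / (u - v))"

definition calR :: "nat \<Rightarrow> bool \<Rightarrow> complex \<Rightarrow> op \<Rightarrow> op \<Rightarrow> complex \<Rightarrow> complex \<Rightarrow> op" where
  "calR N trig q R F u v = opscale (inverse (fuv trig q u v)) (opmul N 2 (Ruv trig q R u v) F)"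

text \<open>Spectral parameters u_1,...,u_n are u 1, ..., u n.\<close>
definition Rdown :: "nat \<Rightarrow> nat \<Rightarrow> bool \<Rightarrow> complex \<Rightarrow> op \<Rightarrow> op \<Rightarrow> nat \<Rightarrow> (nat \<Rightarrow> complex) \<Rightarrow> op" where
  "Rdown N n trig q R F i u = opprod N n
     (map (\<lambda>k. xbar N n F i k (calR N trig q R F (u i) (u k))) (rev [1..<i]))"

definition Rup :: "nat \<Rightarrow> nat \<Rightarrow> bool \<Rightarrow> complex \<Rightarrow> op \<Rightarrow> op \<Rightarrow> nat \<Rightarrow> (nat \<Rightarrow> complex) \<Rightarrow> op" where
  "Rup N n trig q R F i u = opprod N n
     (map (\<lambda>k. xbar N n F i k (calR N trig q R F (u i) (u k))) (rev [Suc i..<Suc n]))"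

type_synonym vfun = "(nat \<Rightarrow> complex) \<Rightarrow> nat list \<Rightarrow> complex"

definition opapp :: "nat \<Rightarrow> nat \<Rightarrow> op \<Rightarrow> (nat list \<Rightarrow> complex) \<Rightarrow> nat list \<Rightarrow> complex" where
  "opapp N n A v = (\<lambda>xs. \<Sum>ys\<in>tidx N n. A xs ys * v ys)"

definition mulop :: "nat \<Rightarrow> nat \<Rightarrow> ((nat \<Rightarrow> complex) \<Rightarrow> op) \<Rightarrow> vfun \<Rightarrow> vfun" where
  "mulop N n M Psi = (\<lambda>u. opapp N n (M u) (Psi u))"

definition shiftf :: "bool \<Rightarrow> complex \<Rightarrow> complex \<Rightarrow> complex" where
  "shiftf trig p z = (if trig then p * z else z + p)"

definition unshiftf :: "bool \<Rightarrow> complex \<Rightarrow> complex \<Rightarrow> complex" where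
  "unshiftf trig p z = (if trig then z / p else z - p)"

definition Tsh :: "bool \<Rightarrow> complex \<Rightarrow> nat \<Rightarrow> vfun \<Rightarrow> vfun" where
  "Tsh trig p i Psi = (\<lambda>u. Psi (u(i := shiftf trig p (u i))))"

definition Tinv :: "bool \<Rightarrow> complex \<Rightarrow> nat \<Rightarrow> vfun \<Rightarrow> vfun" where
  "Tinv trig p i Psi = (\<lambda>u. Psi (u(i := unshiftf trig p (u i))))"

definition Delta :: "nat \<Rightarrow> nat \<Rightarrow> bool \<Rightarrow> complex \<Rightarrow> complex \<Rightarrow> op \<Rightarrow> op
                      \<Rightarrow> (nat \<Rightarrow> nat \<Rightarrow> complex) \<Rightarrow> nat \<Rightarrow> vfun \<Rightarrow> vfun" where
  "Delta N n trig q p R F g i Psi =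
     mulop N n (Rdown N n trig q R F i)
       (Tinv trig p i (mulop N n (\<lambda>_. gbar N n F g i) (mulop N n (Rup N n trig q R F i) Psi)))"

definition Mop :: "nat \<Rightarrow> nat \<Rightarrow> bool \<Rightarrow> complex \<Rightarrow> complex \<Rightarrow> op \<Rightarrow> op
                      \<Rightarrow> (nat \<Rightarrow> nat \<Rightarrow> complex) \<Rightarrow> nat \<Rightarrow> vfun \<Rightarrow> vfun" where
  "Mop N n trig q p R F g i Psi = Tsh trig p i (Delta N n trig q p R F g i Psi)"

text \<open>Generic spectral parameters: all denominators (u_a - u_b and the zeros of f) that can occur
  at the points u shifted by at most two steps are nonzero.  Identities of rational functions are
  asserted at all such points.\<close>
definition generic :: "nat \<Rightarrow> bool \<Rightarrow> complex \<Rightarrow> complex \<Rightarrow> (nat \<Rightarrow> complex) \<Rightarrow> bool" where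
  "generic n trig q p u \<longleftrightarrow> (\<forall>a\<in>{1..n}. \<forall>b\<in>{1..n}. a \<noteq> b \<longrightarrow> (\<forall>m::int. \<bar>m\<bar> \<le> 2 \<longrightarrow>
     (if trig then p powi m * u a \<noteq> u b \<and> p powi m * u a \<noteq> q^2 * u b
      else u a - u b + of_int m * p \<noteq> 0 \<and> u a - u b + of_int m * p \<noteq> 1)))"

end

theory Submission
  imports Defs
begin


section \<open>Normalised operators\<close>

definition nrm :: "nat \<Rightarrow> nat \<Rightarrow> op \<Rightarrow> op" where
  "nrm N n A = (\<lambda>xs ys. if xs \<in> tidx N n \<and> ys \<in> tidx N n then A xs ys else 0)"

definition mm :: "nat \<Rightarrow> nat \<Rightarrow> op \<Rightarrow> op \<Rightarrow> op" where
  "mm N n A B = nrm N n (opmul N n A B)"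

definition one :: "nat \<Rightarrow> nat \<Rightarrow> op" where
  "one N n = nrm N n opid"

lemma finite_tidx[simp]: "finite (tidx N n)"
proof -
  have "tidx N n \<subseteq> {xs. set xs \<subseteq> {..<N} \<and> length xs = n}"
    by (auto simp: tidx_def)
  moreover have "finite {xs. set xs \<subseteq> {..<N} \<and> length xs = n}"
    by (rule finite_lists_length_eq) simp
  ultimately show ?thesis by (rule finite_subset)
qed

lemma opeq_nrm: "opeq N n A B \<longleftrightarrow> nrm N n A = nrm N n B"
  by (auto simp: opeq_def nrm_def fun_eq_iff)

lemma nrm_out: "\<not> (xs \<in> tidx N n \<and> ys \<in> tidx N n) \<Longrightarrow> nrm N n A xs ys = 0"
  by (auto simp: nrm_def)

lemma nrm_in: "xs \<in> tidx N n \<Longrightarrow> ys \<in> tidx N n \<Longrightarrow> nrm N n A xs ys = A xs ys"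
  by (simp add: nrm_def)

lemma nrm_nrm[simp]: "nrm N n (nrm N n A) = nrm N n A"
  by (auto simp: nrm_def fun_eq_iff)

lemma opmul_nrm_l: "xs \<in> tidx N n \<Longrightarrow> opmul N n (nrm N n A) B xs ys = opmul N n A B xs ys"
  unfolding opmul_def nrm_def by (intro sum.cong) auto

lemma opmul_nrm_r: "ys \<in> tidx N n \<Longrightarrow> opmul N n A (nrm N n B) xs ys = opmul N n A B xs ys"
  unfolding opmul_def nrm_def by (intro sum.cong) auto

lemma mm_nrm_l[simp]: "mm N n (nrm N n A) B = mm N n A B"
  unfolding mm_def
  by (rule ext, rule ext, simp add: nrm_def[of N n "opmul N n (nrm N n A) B"]
        nrm_def[of N n "opmul N n A B"] opmul_nrm_l)

lemma mm_nrm_r[simp]: "mm N n A (nrm N n B) = mm N n A B"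
  unfolding mm_def
  by (rule ext, rule ext, simp add: nrm_def[of N n "opmul N n A (nrm N n B)"]
        nrm_def[of N n "opmul N n A B"] opmul_nrm_r)

lemma nrm_mm[simp]: "nrm N n (mm N n A B) = mm N n A B"
  by (simp add: mm_def)

lemma opmul_assoc: "opmul N n (opmul N n A B) C = opmul N n A (opmul N n B C)"
proof -
  have "\<And>xs ys. (\<Sum>zs\<in>tidx N n. (\<Sum>ws\<in>tidx N n. A xs ws * B ws zs) * C zs ys)
     = (\<Sum>ws\<in>tidx N n. A xs ws * (\<Sum>zs\<in>tidx N n. B ws zs * C zs ys))"
  proof -
    fix xs ys
    have "(\<Sum>zs\<in>tidx N n. (\<Sum>ws\<in>tidx N n. A xs ws * B ws zs) * C zs ys)
        = (\<Sum>zs\<in>tidx N n. \<Sum>ws\<in>tidx N n. A xs ws * B ws zs * C zs ys)"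
      by (simp add: sum_distrib_right)
    also have "\<dots> = (\<Sum>ws\<in>tidx N n. \<Sum>zs\<in>tidx N n. A xs ws * B ws zs * C zs ys)"
      by (rule sum.swap)
    also have "\<dots> = (\<Sum>ws\<in>tidx N n. A xs ws * (\<Sum>zs\<in>tidx N n. B ws zs * C zs ys))"
      by (simp add: sum_distrib_left mult.assoc)
    finally show "?thesis xs ys" .
  qed
  then show ?thesis by (simp add: opmul_def fun_eq_iff)
qed

lemma mm_assoc: "mm N n (mm N n A B) C = mm N n A (mm N n B C)"
  unfolding mm_def
  by (metis mm_def mm_nrm_l mm_nrm_r opmul_assoc)

lemma opmul_id_l: "xs \<in> tidx N n \<Longrightarrow> opmul N n opid B xs ys = B xs ys"
proof -
  assume xs: "xs \<in> tidx N n"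
  have "opmul N n opid B xs ys = (\<Sum>zs\<in>tidx N n. if xs = zs then B zs ys else 0)"
    unfolding opmul_def by (rule sum.cong) (auto simp: opid_def)
  also have "\<dots> = B xs ys" using xs by (simp add: sum.delta)
  finally show ?thesis .
qed

lemma opmul_id_r: "ys \<in> tidx N n \<Longrightarrow> opmul N n A opid xs ys = A xs ys"
proof -
  assume ys: "ys \<in> tidx N n"
  have "opmul N n A opid xs ys = (\<Sum>zs\<in>tidx N n. if zs = ys then A xs zs else 0)"
    unfolding opmul_def by (rule sum.cong) (auto simp: opid_def)
  also have "\<dots> = A xs ys" using ys by (simp add: sum.delta')
  finally show ?thesis .
qed

lemma mm_one_l[simp]: "mm N n (one N n) A = nrm N n A"
  unfolding one_def mm_nrm_l
  by (rule ext, rule ext, simp add: mm_def nrm_def[of N n "opmul N n opid A"] opmul_id_l nrm_def[of N n A])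

lemma mm_one_r[simp]: "mm N n A (one N n) = nrm N n A"
  unfolding one_def mm_nrm_r
  by (rule ext, rule ext, simp add: mm_def nrm_def[of N n "opmul N n A opid"] opmul_id_r nrm_def[of N n A])

lemma nrm_one[simp]: "nrm N n (one N n) = one N n"
  by (simp add: one_def)

lemma nrm_opmul: "nrm N n (opmul N n A B) = mm N n A B"
  by (simp add: mm_def)

lemma nrm_opprod: "nrm N n (opprod N n L) = foldr (mm N n) (map (nrm N n) L) (one N n)"
proof (induction L)
  case Nil then show ?case by (simp add: opprod_def one_def)
next
  case (Cons A L)
  have "nrm N n (opprod N n (A # L)) = mm N n A (opprod N n L)"
    by (simp add: opprod_def mm_def)
  also have "\<dots> = mm N n (nrm N n A) (nrm N n (opprod N n L))" by simp
  finally show ?case using Cons by simp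
qed

lemma nrm_add: "nrm N n (opadd A B) = opadd (nrm N n A) (nrm N n B)"
  by (auto simp: nrm_def opadd_def fun_eq_iff)

lemma nrm_scale: "nrm N n (opscale c A) = opscale c (nrm N n A)"
  by (auto simp: nrm_def opscale_def fun_eq_iff)

lemma mm_add_l: "mm N n (opadd A B) C = opadd (mm N n A C) (mm N n B C)"
  by (auto simp: mm_def nrm_def opmul_def opadd_def fun_eq_iff distrib_right sum.distrib)

lemma mm_add_r: "mm N n A (opadd B C) = opadd (mm N n A B) (mm N n A C)"
  by (auto simp: mm_def nrm_def opmul_def opadd_def fun_eq_iff distrib_left sum.distrib)

lemma mm_scale_l: "mm N n (opscale c A) B = opscale c (mm N n A B)"
  by (auto simp: mm_def nrm_def opmul_def opscale_def fun_eq_iff sum_distrib_left mult.assoc)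

lemma mm_scale_r: "mm N n A (opscale c B) = opscale c (mm N n A B)"
  by (auto simp: mm_def nrm_def opmul_def opscale_def fun_eq_iff sum_distrib_left mult_ac)

section \<open>Embeddings\<close>

definition agree :: "nat \<Rightarrow> nat \<Rightarrow> nat \<Rightarrow> nat list \<Rightarrow> nat list \<Rightarrow> bool" where
  "agree n k m xs ys \<longleftrightarrow> (\<forall>t<n. (t < k \<or> k + m \<le> t) \<longrightarrow> xs!t = ys!t)"

definition mid :: "nat \<Rightarrow> nat \<Rightarrow> nat list \<Rightarrow> nat list" where
  "mid k m xs = take m (drop k xs)"

definition emb :: "nat \<Rightarrow> nat \<Rightarrow> nat \<Rightarrow> op \<Rightarrow> op" where
  "emb n k m A = (\<lambda>xs ys. if length xs = n \<and> length ys = n \<and> agree n k m xs ys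
                     then A (mid k m xs) (mid k m ys) else 0)"

lemma agree_refl[simp]: "agree n k m xs xs"
  by (simp add: agree_def)

lemma agree_sym: "agree n k m xs ys = agree n k m ys xs"
  by (auto simp: agree_def)

lemma agree_trans: "agree n k m xs ys \<Longrightarrow> agree n k m ys zs \<Longrightarrow> agree n k m xs zs"
  by (auto simp: agree_def)

lemma tidx_length: "xs \<in> tidx N n \<Longrightarrow> length xs = n"
  by (simp add: tidx_def)

lemma mid_tidx: "xs \<in> tidx N n \<Longrightarrow> k + m \<le> n \<Longrightarrow> mid k m xs \<in> tidx N m"
  by (auto simp: tidx_def mid_def dest: in_set_takeD in_set_dropD)

lemma agree_take_drop:
  assumes "length xs = n" "length zs = n" "k + m \<le> n"
  shows "agree n k m xs zs \<longleftrightarrow> take k xs = take k zs \<and> drop (k+m) xs = drop (k+m) zs"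
proof
  assume a: "agree n k m xs zs"
  show "take k xs = take k zs \<and> drop (k+m) xs = drop (k+m) zs"
  proof
    show "take k xs = take k zs"
      using a assms by (intro nth_equalityI) (auto simp: agree_def)
    show "drop (k+m) xs = drop (k+m) zs"
      using a assms by (intro nth_equalityI) (auto simp: agree_def)
  qed
next
  assume b: "take k xs = take k zs \<and> drop (k+m) xs = drop (k+m) zs"
  show "agree n k m xs zs"
    unfolding agree_def
  proof (intro allI impI)
    fix t assume t: "t < n" "t < k \<or> k + m \<le> t"
    show "xs!t = zs!t"
    proof (cases "t < k")
      case True
      then show ?thesis using b by (metis nth_take)
    next
      case False
      then have "k + m \<le> t" using t by simp
      then have "drop (k+m) xs ! (t - (k+m)) = drop (k+m) zs ! (t - (k+m))" using b by simp
      then show ?thesis using \<open>k+m \<le> t\<close> assms t by simp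
    qed
  qed
qed

lemma fibre_sum:
  fixes f :: "nat list \<Rightarrow> complex"
  assumes km: "k + m \<le> n" and xs: "xs \<in> tidx N n"
    and zero: "\<And>zs. zs \<in> tidx N n \<Longrightarrow> \<not> agree n k m xs zs \<Longrightarrow> f zs = 0"
  shows "(\<Sum>zs\<in>tidx N n. f zs) = (\<Sum>w\<in>tidx N m. f (take k xs @ w @ drop (k+m) xs))"
proof -
  define h where "h w = take k xs @ w @ drop (k+m) xs" for w
  have lx: "length xs = n" using xs by (simp add: tidx_def)
  have hin: "h w \<in> tidx N n" if "w \<in> tidx N m" for w
    using that xs km by (auto simp: h_def tidx_def dest: in_set_takeD in_set_dropD)
  have hag: "agree n k m xs (h w)" if "w \<in> tidx N m" for w
    using that xs km lx by (subst agree_take_drop) (auto simp: h_def tidx_def)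
  have inj: "inj_on h (tidx N m)"
    by (auto simp: inj_on_def h_def tidx_def)
  have img: "h ` tidx N m = {zs \<in> tidx N n. agree n k m xs zs}"
  proof
    show "h ` tidx N m \<subseteq> {zs \<in> tidx N n. agree n k m xs zs}" using hin hag by auto
    show "{zs \<in> tidx N n. agree n k m xs zs} \<subseteq> h ` tidx N m"
    proof
      fix zs assume z: "zs \<in> {zs \<in> tidx N n. agree n k m xs zs}"
      then have lz: "length zs = n" by (simp add: tidx_def)
      have td: "take k xs = take k zs \<and> drop (k+m) xs = drop (k+m) zs"
        using z lx lz km agree_take_drop by blast
      have "zs = take k zs @ take m (drop k zs) @ drop (k+m) zs"
        by (metis append_take_drop_id drop_drop add.commute)
      then have "zs = h (take m (drop k zs))" using td by (simp add: h_def)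
      moreover have "take m (drop k zs) \<in> tidx N m"
        using z km by (auto simp: tidx_def dest: in_set_takeD in_set_dropD)
      ultimately show "zs \<in> h ` tidx N m" by blast
    qed
  qed
  have "(\<Sum>zs\<in>{zs \<in> tidx N n. agree n k m xs zs}. f zs) = (\<Sum>zs\<in>tidx N n. f zs)"
    by (rule sum.mono_neutral_left) (use zero in auto)
  then have "(\<Sum>zs\<in>tidx N n. f zs) = (\<Sum>zs\<in>{zs \<in> tidx N n. agree n k m xs zs}. f zs)" ..
  also have "\<dots> = (\<Sum>zs\<in>h ` tidx N m. f zs)" by (simp add: img)
  also have "\<dots> = (\<Sum>w\<in>tidx N m. f (h w))" by (rule sum.reindex[OF inj, unfolded comp_def])
  finally show ?thesis by (simp add: h_def)
qed

lemma mid_h: "length xs = n \<Longrightarrow> k + m \<le> n \<Longrightarrow> length w = m \<Longrightarrow>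
   mid k m (take k xs @ w @ drop (k+m) xs) = w"
  by (simp add: mid_def)

lemma emb_mul:
  assumes km: "k + m \<le> n"
  shows "mm N n (emb n k m A) (emb n k m B) = nrm N n (emb n k m (opmul N m A B))"
proof (rule ext, rule ext)
  fix xs ys
  show "mm N n (emb n k m A) (emb n k m B) xs ys = nrm N n (emb n k m (opmul N m A B)) xs ys"
  proof (cases "xs \<in> tidx N n \<and> ys \<in> tidx N n")
    case False then show ?thesis by (simp add: mm_def nrm_out)
  next
    case True
    then have xs: "xs \<in> tidx N n" and ys: "ys \<in> tidx N n" by auto
    have lx: "length xs = n" and ly: "length ys = n" using xs ys by (auto simp: tidx_def)
    have "mm N n (emb n k m A) (emb n k m B) xs ys
        = (\<Sum>zs\<in>tidx N n. emb n k m A xs zs * emb n k m B zs ys)"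
      using True by (simp add: mm_def nrm_def opmul_def)
    also have "\<dots> = (\<Sum>w\<in>tidx N m. emb n k m A xs (take k xs @ w @ drop (k+m) xs)
                          * emb n k m B (take k xs @ w @ drop (k+m) xs) ys)"
      by (rule fibre_sum[OF km xs]) (simp add: emb_def)
    also have "\<dots> = emb n k m (opmul N m A B) xs ys"
    proof (cases "agree n k m xs ys")
      case True
      have "\<And>w. w \<in> tidx N m \<Longrightarrow> agree n k m xs (take k xs @ w @ drop (k+m) xs)"
        using km lx by (subst agree_take_drop) (auto simp: tidx_def)
      moreover have "\<And>w. w \<in> tidx N m \<Longrightarrow> agree n k m (take k xs @ w @ drop (k+m) xs) ys"
        using agree_trans agree_sym True calculation by blast
      ultimately show ?thesis using True lx ly km
        by (auto simp: emb_def opmul_def mid_h tidx_def intro!: sum.cong)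
    next
      case False
      have contra: "\<And>w. agree n k m xs (take k xs @ w @ drop (k+m) xs) \<Longrightarrow>
                 agree n k m (take k xs @ w @ drop (k+m) xs) ys \<Longrightarrow> False"
        using False agree_trans by blast
      have "\<And>w. emb n k m A xs (take k xs @ w @ drop (k+m) xs)
                          * emb n k m B (take k xs @ w @ drop (k+m) xs) ys = 0"
        unfolding emb_def using contra by auto
      then have "(\<Sum>w\<in>tidx N m. emb n k m A xs (take k xs @ w @ drop (k+m) xs)
                          * emb n k m B (take k xs @ w @ drop (k+m) xs) ys) = 0"
        by (simp only: sum.neutral_const)
      then show ?thesis using False by (simp add: emb_def)
    qed
    finally show ?thesis using True by (simp add: nrm_def)
  qed
qed


lemma mid_nth: "i < m \<Longrightarrow> k + m \<le> length xs \<Longrightarrow> mid k m xs ! i = xs ! (k + i)"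
  by (simp add: mid_def)

lemma length_mid: "k + m \<le> length xs \<Longrightarrow> length (mid k m xs) = m"
  by (simp add: mid_def)

lemma mid_eqI: "k + m \<le> length xs \<Longrightarrow> k + m \<le> length ys \<Longrightarrow>
   (\<And>i. i < m \<Longrightarrow> xs ! (k+i) = ys ! (k+i)) \<Longrightarrow> mid k m xs = mid k m ys"
  by (rule nth_equalityI) (auto simp: length_mid mid_nth)

lemma sum_single:
  assumes "finite S" "z \<in> S" "\<And>x. x \<in> S \<Longrightarrow> x \<noteq> z \<Longrightarrow> f x = 0"
  shows "sum f S = f z"
proof -
  have "sum f S = f z + sum f (S - {z})" using assms by (simp add: sum.remove)
  also have "sum f (S - {z}) = 0" using assms by (intro sum.neutral) auto
  finally show ?thesis by simp
qed

lemma tidx_append: "xs \<in> tidx N n \<Longrightarrow> ys \<in> tidx N n \<Longrightarrow> k \<le> n \<Longrightarrow>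
   take k ys @ drop k xs \<in> tidx N n"
  by (auto simp: tidx_def dest: in_set_takeD in_set_dropD)

lemma nth_td: "length xs = n \<Longrightarrow> length ys = n \<Longrightarrow> k \<le> n \<Longrightarrow> t < n \<Longrightarrow>
   (take k ys @ drop k xs) ! t = (if t < k then ys ! t else xs ! t)"
  by (simp add: nth_append)

lemma emb_comm_aux:
  assumes km: "k + m \<le> k'" and kn: "k' + m' \<le> n"
    and xs: "xs \<in> tidx N n" and ys: "ys \<in> tidx N n"
  shows "opmul N n (emb n k m A) (emb n k' m' B) xs ys
       = (if agree n k m xs (take k' ys @ drop k' xs) \<and> agree n k' m' (take k' ys @ drop k' xs) ys
          then A (mid k m xs) (mid k m ys) * B (mid k' m' xs) (mid k' m' ys) else 0)"
proof -
  have lx: "length xs = n" and ly: "length ys = n" using xs ys by (auto simp: tidx_def)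
  define z0 where "z0 = take k' ys @ drop k' xs"
  have z0: "z0 \<in> tidx N n" unfolding z0_def using xs ys kn by (intro tidx_append) auto
  have lz: "length z0 = n" using z0 by (simp add: tidx_def)
  have z0n: "\<And>t. t < n \<Longrightarrow> z0 ! t = (if t < k' then ys ! t else xs ! t)"
    unfolding z0_def using lx ly kn by (intro nth_td) auto
  have "opmul N n (emb n k m A) (emb n k' m' B) xs ys
      = emb n k m A xs z0 * emb n k' m' B z0 ys"
    unfolding opmul_def
  proof (rule sum_single[OF finite_tidx z0])
    fix zs assume zs: "zs \<in> tidx N n" "zs \<noteq> z0"
    have lzs: "length zs = n" using zs by (simp add: tidx_def)
    show "emb n k m A xs zs * emb n k' m' B zs ys = 0"
    proof (rule ccontr)
      assume "emb n k m A xs zs * emb n k' m' B zs ys \<noteq> 0"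
      then have a1: "agree n k m xs zs" and a2: "agree n k' m' zs ys"
        by (auto simp: emb_def split: if_splits)
      have "zs = z0"
      proof (rule nth_equalityI)
        show "length zs = length z0" using lzs lz by simp
        fix t assume "t < length zs"
        then have t: "t < n" using lzs by simp
        show "zs ! t = z0 ! t"
        proof (cases "t < k'")
          case True then show ?thesis using a2 t z0n by (simp add: agree_def)
        next
          case False then show ?thesis using a1 t z0n km by (simp add: agree_def)
        qed
      qed
      then show False using zs by simp
    qed
  qed
  also have "\<dots> = (if agree n k m xs z0 \<and> agree n k' m' z0 ys
          then A (mid k m xs) (mid k m ys) * B (mid k' m' xs) (mid k' m' ys) else 0)"
  proof -
    have "mid k m z0 = mid k m ys"
      using lz ly km kn z0n by (intro mid_eqI) auto
    moreover have "mid k' m' z0 = mid k' m' xs"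
      using lz lx km kn z0n by (intro mid_eqI) auto
    ultimately show ?thesis using lx ly lz by (simp add: emb_def)
  qed
  finally show ?thesis by (simp add: z0_def)
qed

lemma emb_comm_aux2:
  assumes km: "k + m \<le> k'" and kn: "k' + m' \<le> n"
    and xs: "xs \<in> tidx N n" and ys: "ys \<in> tidx N n"
  shows "opmul N n (emb n k' m' B) (emb n k m A) xs ys
       = (if agree n k' m' xs (take k' xs @ drop k' ys) \<and> agree n k m (take k' xs @ drop k' ys) ys
          then A (mid k m xs) (mid k m ys) * B (mid k' m' xs) (mid k' m' ys) else 0)"
proof -
  have lx: "length xs = n" and ly: "length ys = n" using xs ys by (auto simp: tidx_def)
  define z1 where "z1 = take k' xs @ drop k' ys"
  have z1: "z1 \<in> tidx N n" unfolding z1_def using xs ys kn by (intro tidx_append) auto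
  have lz: "length z1 = n" using z1 by (simp add: tidx_def)
  have z1n: "\<And>t. t < n \<Longrightarrow> z1 ! t = (if t < k' then xs ! t else ys ! t)"
    unfolding z1_def using lx ly kn by (intro nth_td) auto
  have "opmul N n (emb n k' m' B) (emb n k m A) xs ys
      = emb n k' m' B xs z1 * emb n k m A z1 ys"
    unfolding opmul_def
  proof (rule sum_single[OF finite_tidx z1])
    fix zs assume zs: "zs \<in> tidx N n" "zs \<noteq> z1"
    have lzs: "length zs = n" using zs by (simp add: tidx_def)
    show "emb n k' m' B xs zs * emb n k m A zs ys = 0"
    proof (rule ccontr)
      assume "emb n k' m' B xs zs * emb n k m A zs ys \<noteq> 0"
      then have a1: "agree n k' m' xs zs" and a2: "agree n k m zs ys"
        by (auto simp: emb_def split: if_splits)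
      have "zs = z1"
      proof (rule nth_equalityI)
        show "length zs = length z1" using lzs lz by simp
        fix t assume "t < length zs"
        then have t: "t < n" using lzs by simp
        show "zs ! t = z1 ! t"
        proof (cases "t < k'")
          case True then show ?thesis using a1 t z1n by (simp add: agree_def)
        next
          case False then show ?thesis using a2 t z1n km by (simp add: agree_def)
        qed
      qed
      then show False using zs by simp
    qed
  qed
  also have "\<dots> = (if agree n k' m' xs z1 \<and> agree n k m z1 ys
          then A (mid k m xs) (mid k m ys) * B (mid k' m' xs) (mid k' m' ys) else 0)"
  proof -
    have "mid k m z1 = mid k m xs"
      using lz lx km kn z1n by (intro mid_eqI) auto
    moreover have "mid k' m' z1 = mid k' m' ys"
      using lz ly km kn z1n by (intro mid_eqI) auto
    ultimately show ?thesis using lx ly lz by (simp add: emb_def mult.commute)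
  qed
  finally show ?thesis by (simp add: z1_def)
qed

lemma emb_comm:
  assumes km: "k + m \<le> k'" and kn: "k' + m' \<le> n"
  shows "mm N n (emb n k m A) (emb n k' m' B) = mm N n (emb n k' m' B) (emb n k m A)"
proof (rule ext, rule ext)
  fix xs ys
  show "mm N n (emb n k m A) (emb n k' m' B) xs ys = mm N n (emb n k' m' B) (emb n k m A) xs ys"
  proof (cases "xs \<in> tidx N n \<and> ys \<in> tidx N n")
    case False then show ?thesis by (simp add: mm_def nrm_out)
  next
    case True
    then have xs: "xs \<in> tidx N n" and ys: "ys \<in> tidx N n" by auto
    have lx: "length xs = n" and ly: "length ys = n" using xs ys by (auto simp: tidx_def)
    have n0: "\<And>t. t < n \<Longrightarrow> (take k' ys @ drop k' xs) ! t = (if t < k' then ys ! t else xs ! t)"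
      using lx ly kn by (intro nth_td) auto
    have n1: "\<And>t. t < n \<Longrightarrow> (take k' xs @ drop k' ys) ! t = (if t < k' then xs ! t else ys ! t)"
      using lx ly kn by (intro nth_td) auto
    have "(agree n k m xs (take k' ys @ drop k' xs) \<and> agree n k' m' (take k' ys @ drop k' xs) ys)
        = (agree n k' m' xs (take k' xs @ drop k' ys) \<and> agree n k m (take k' xs @ drop k' ys) ys)"
      unfolding agree_def using km by (auto simp: n0 n1)
    then show ?thesis using True
      by (simp add: mm_def nrm_in emb_comm_aux[OF km kn xs ys] emb_comm_aux2[OF km kn xs ys])
  qed
qed

lemma emb_opeq:
  assumes "k + m \<le> n" "opeq N m A B"
  shows "nrm N n (emb n k m A) = nrm N n (emb n k m B)"
proof (rule ext, rule ext)
  fix xs ys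
  show "nrm N n (emb n k m A) xs ys = nrm N n (emb n k m B) xs ys"
  proof (cases "xs \<in> tidx N n \<and> ys \<in> tidx N n")
    case False then show ?thesis by (simp add: nrm_out)
  next
    case True
    then have "mid k m xs \<in> tidx N m" "mid k m ys \<in> tidx N m"
      using mid_tidx assms(1) by blast+
    then have "A (mid k m xs) (mid k m ys) = B (mid k m xs) (mid k m ys)"
      using assms(2) by (simp add: opeq_def)
    then show ?thesis using True by (simp add: nrm_in emb_def)
  qed
qed

lemma emb_nrm:
  assumes "k + m \<le> n"
  shows "nrm N n (emb n k m (nrm N m A)) = nrm N n (emb n k m A)"
proof -
  have "opeq N m (nrm N m A) A" by (simp add: opeq_nrm)
  from emb_opeq[OF assms this] show ?thesis .
qed

lemma emb_id:
  assumes km: "k + m \<le> n"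
  shows "nrm N n (emb n k m opid) = one N n"
proof (rule ext, rule ext)
  fix xs ys
  show "nrm N n (emb n k m opid) xs ys = one N n xs ys"
  proof (cases "xs \<in> tidx N n \<and> ys \<in> tidx N n")
    case False then show ?thesis by (simp add: one_def nrm_out)
  next
    case True
    then have lx: "length xs = n" and ly: "length ys = n" by (auto simp: tidx_def)
    have "(agree n k m xs ys \<and> mid k m xs = mid k m ys) = (xs = ys)"
    proof
      assume a: "agree n k m xs ys \<and> mid k m xs = mid k m ys"
      show "xs = ys"
      proof (rule nth_equalityI)
        show "length xs = length ys" using lx ly by simp
        fix t assume "t < length xs"
        then have t: "t < n" using lx by simp
        show "xs ! t = ys ! t"
        proof (cases "t < k \<or> k + m \<le> t")
          case True then show ?thesis using a t by (auto simp: agree_def)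
        next
          case False
          then have "mid k m xs ! (t - k) = mid k m ys ! (t - k)" using a by simp
          moreover have "mid k m xs ! (t - k) = xs ! t" using False km lx by (subst mid_nth) auto
          moreover have "mid k m ys ! (t - k) = ys ! t" using False km ly by (subst mid_nth) auto
          ultimately show ?thesis by simp
        qed
      qed
    qed (simp add: agree_def)
    then show ?thesis using True lx ly by (auto simp: nrm_in one_def emb_def opid_def)
  qed
qed

lemma emb_add: "emb n k m (opadd A B) = opadd (emb n k m A) (emb n k m B)"
  by (simp add: emb_def opadd_def fun_eq_iff)

lemma emb_scale: "emb n k m (opscale c A) = opscale c (emb n k m A)"
  by (simp add: emb_def opscale_def fun_eq_iff)

lemma mid2: "k + 2 \<le> length xs \<Longrightarrow> mid k 2 xs = [xs!k, xs!(k+1)]"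
proof -
  assume a: "k + 2 \<le> length xs"
  have "drop k xs = xs!k # xs!(k+1) # drop (k+2) xs"
    using a by (metis Cons_nth_drop_Suc add_2_eq_Suc' add_Suc_right add_lessD1 lessI
        less_le_trans Suc_eq_plus1)
  then show ?thesis by (simp add: mid_def)
qed

lemma all_less_3: "(\<forall>m<(3::nat). P m) \<longleftrightarrow> P 0 \<and> P 1 \<and> P 2"
  by (auto simp: numeral_3_eq_3 numeral_2_eq_2 less_Suc_eq)

lemma agree_3_1: "j + 3 \<le> n \<Longrightarrow> agree n j 3 xs ys \<and> xs!(j+2) = ys!(j+2) \<longleftrightarrow> agree n j 2 xs ys"
proof
  assume "j + 3 \<le> n" "agree n j 3 xs ys \<and> xs!(j+2) = ys!(j+2)"
  then have a: "agree n j 3 xs ys \<and> xs!(j+2) = ys!(j+2)" by simp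
  show "agree n j 2 xs ys" unfolding agree_def
  proof (intro allI impI)
    fix t assume "t < n" "t < j \<or> j + 2 \<le> t"
    then show "xs!t = ys!t" using a by (cases "t = j+2") (auto simp: agree_def)
  qed
qed (auto simp: agree_def)

lemma agree_3_2: "j + 3 \<le> n \<Longrightarrow> agree n j 3 xs ys \<and> xs!j = ys!j \<longleftrightarrow> agree n (j+1) 2 xs ys"
proof
  assume "j + 3 \<le> n" "agree n j 3 xs ys \<and> xs!j = ys!j"
  then have a: "agree n j 3 xs ys \<and> xs!j = ys!j" by simp
  show "agree n (j+1) 2 xs ys" unfolding agree_def
  proof (intro allI impI)
    fix t assume "t < n" "t < j + 1 \<or> j + 1 + 2 \<le> t"
    then show "xs!t = ys!t" using a by (cases "t = j") (auto simp: agree_def)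
  qed
qed (auto simp: agree_def)

lemma place2_emb:
  assumes "1 \<le> k" "k + 1 \<le> n"
  shows "nrm N n (place2 k X) = nrm N n (emb n (k-1) 2 X)"
proof (rule ext, rule ext)
  fix xs ys
  show "nrm N n (place2 k X) xs ys = nrm N n (emb n (k-1) 2 X) xs ys"
  proof (cases "xs \<in> tidx N n \<and> ys \<in> tidx N n")
    case False then show ?thesis by (simp add: nrm_out)
  next
    case True
    then have lx: "length xs = n" and ly: "length ys = n" by (auto simp: tidx_def)
    have c: "(\<forall>m<length xs. m \<noteq> k - 1 \<and> m \<noteq> k \<longrightarrow> xs!m = ys!m) = agree n (k-1) 2 xs ys"
    proof -
      have "\<And>t. (t \<noteq> k-1 \<and> t \<noteq> k) = (t < k-1 \<or> k-1+2 \<le> t)" using assms by auto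
      then show ?thesis by (simp add: agree_def lx)
    qed
    have m1: "mid (k-1) 2 xs = [xs!(k-1), xs!k]"
      using assms lx mid2[of "k-1" xs] by simp
    have m2: "mid (k-1) 2 ys = [ys!(k-1), ys!k]"
      using assms ly mid2[of "k-1" ys] by simp
    show ?thesis using True lx ly c m1 m2 by (simp add: nrm_in place2_def emb_def)
  qed
qed

lemma place1_emb:
  assumes "1 \<le> n"
  shows "nrm N n (place1 g) = nrm N n (emb n 0 1 (\<lambda>a b. g (a!0) (b!0)))"
proof (rule ext, rule ext)
  fix xs ys
  show "nrm N n (place1 g) xs ys = nrm N n (emb n 0 1 (\<lambda>a b. g (a!0) (b!0))) xs ys"
  proof (cases "xs \<in> tidx N n \<and> ys \<in> tidx N n")
    case False then show ?thesis by (simp add: nrm_out)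
  next
    case True
    then have lx: "length xs = n" and ly: "length ys = n" by (auto simp: tidx_def)
    have c: "(\<forall>m<length xs. m \<noteq> 0 \<longrightarrow> xs!m = ys!m) = agree n 0 1 xs ys"
      unfolding agree_def using assms lx by auto
    have m1: "mid 0 1 xs ! 0 = xs ! 0" "mid 0 1 ys ! 0 = ys ! 0"
      using assms lx ly by (auto simp: mid_nth)
    show ?thesis using True lx ly c m1 by (simp add: nrm_in place1_def emb_def)
  qed
qed

lemma emb3_place:
  assumes jn: "j + 3 \<le> n" and l: "l = 1 \<or> l = 2"
  shows "nrm N n (emb n j 3 (place2 l X)) = nrm N n (emb n (j + l - 1) 2 X)"
proof (rule ext, rule ext)
  fix xs ys
  show "nrm N n (emb n j 3 (place2 l X)) xs ys = nrm N n (emb n (j + l - 1) 2 X) xs ys"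
  proof (cases "xs \<in> tidx N n \<and> ys \<in> tidx N n")
    case False then show ?thesis by (simp add: nrm_out)
  next
    case True
    then have lx: "length xs = n" and ly: "length ys = n" by (auto simp: tidx_def)
    have lm: "length (mid j 3 xs) = 3" "length (mid j 3 ys) = 3"
      using jn lx ly by (auto simp: length_mid)
    have c: "(agree n j 3 xs ys \<and> (\<forall>m<3. m \<noteq> l - 1 \<and> m \<noteq> l \<longrightarrow> mid j 3 xs ! m = mid j 3 ys ! m))
           = agree n (j + l - 1) 2 xs ys"
      using l
    proof
      assume l1: "l = 1"
      show ?thesis unfolding all_less_3 using l1 jn lx ly agree_3_1[OF jn, of xs ys]
        by (simp add: mid_nth)
    next
      assume l2: "l = 2"
      show ?thesis unfolding all_less_3 using l2 jn lx ly agree_3_2[OF jn, of xs ys]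
        by (simp add: mid_nth)
    qed
    have m1: "[mid j 3 xs ! (l-1), mid j 3 xs ! l] = mid (j + l - 1) 2 xs"
      using jn lx l mid2[of "j+l-1" xs] by (auto simp: mid_nth)
    have m2: "[mid j 3 ys ! (l-1), mid j 3 ys ! l] = mid (j + l - 1) 2 ys"
      using jn ly l mid2[of "j+l-1" ys] by (auto simp: mid_nth)
    have "emb n j 3 (place2 l X) xs ys = (if agree n j 3 xs ys \<and> (\<forall>m<3. m \<noteq> l - 1 \<and> m \<noteq> l \<longrightarrow> mid j 3 xs ! m = mid j 3 ys ! m)
       then X [mid j 3 xs ! (l-1), mid j 3 xs ! l] [mid j 3 ys ! (l-1), mid j 3 ys ! l] else 0)"
      using lx ly lm by (auto simp: emb_def place2_def)
    also have "\<dots> = (if agree n (j + l - 1) 2 xs ys then X (mid (j + l - 1) 2 xs) (mid (j + l - 1) 2 ys) else 0)"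
      by (simp only: c m1 m2)
    finally show ?thesis using True lx ly by (simp add: nrm_in emb_def)
  qed
qed


definition sw :: "nat \<Rightarrow> nat \<Rightarrow> nat" where
  "sw k a = (if a = k then k + 1 else if a = k + 1 then k else a)"

lemma sw_range: "1 \<le> k \<Longrightarrow> k < n \<Longrightarrow> a \<in> {1..n} \<Longrightarrow> sw k a \<in> {1..n}"
  by (auto simp: sw_def)

lemma sw_inj: "sw k a = sw k b \<longleftrightarrow> a = b"
  by (auto simp: sw_def)

lemma sw_sw[simp]: "sw k (sw k a) = a"
  by (auto simp: sw_def)

section \<open>Abstract monoid with generators\<close>

locale mon =
  fixes mul :: "'a \<Rightarrow> 'a \<Rightarrow> 'a" (infixr "\<odot>" 70) and e :: 'a and M :: "'a set"
  assumes closed[simp]: "x \<odot> y \<in> M" and e_M[simp]: "e \<in> M"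
    and assoc[simp]: "(x \<odot> y) \<odot> z = x \<odot> (y \<odot> z)"
    and lunit[simp]: "x \<in> M \<Longrightarrow> e \<odot> x = x" and runit[simp]: "x \<in> M \<Longrightarrow> x \<odot> e = x"
begin

definition pr :: "'a list \<Rightarrow> 'a" where "pr xs = foldr (\<odot>) xs e"

lemma pr_M[simp]: "pr xs \<in> M"
  by (cases xs) (auto simp: pr_def)

lemma pr_Nil[simp]: "pr [] = e" by (simp add: pr_def)
lemma pr_Cons[simp]: "pr (x # xs) = x \<odot> pr xs" by (simp add: pr_def)

lemma pr_append[simp]: "pr (xs @ ys) = pr xs \<odot> pr ys"
  by (induction xs) auto

lemma ext1: "p \<odot> q = r \<Longrightarrow> p \<odot> (q \<odot> z) = r \<odot> z"
  by (metis assoc)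

lemma ext2: "p \<odot> q = r \<odot> t \<Longrightarrow> p \<odot> (q \<odot> z) = r \<odot> (t \<odot> z)"
  by (metis assoc)

lemma inv_unique:
  assumes "p \<odot> q = e" "q' \<odot> p = e" "q \<in> M" "q' \<in> M"
  shows "q = q'"
proof -
  have "q = (q' \<odot> p) \<odot> q" using assms by simp
  also have "\<dots> = q' \<odot> (p \<odot> q)" by simp
  also have "\<dots> = q'" using assms by simp
  finally show ?thesis .
qed

lemma conj_gen:
  assumes sk: "sk \<odot> sk = e" "sk \<in> M"
    and W: "W \<odot> W' = e" "W' \<odot> W = e" "W \<in> M" "W' \<in> M"
    and W2: "W2 \<odot> W2' = e" "W2' \<odot> W2 = e" "W2 \<in> M" "W2' \<in> M"
    and u: "u \<odot> u = e" "u \<in> M"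
    and eq: "sk \<odot> W = W2 \<odot> u"
  shows "sk \<odot> W \<odot> Y \<odot> W' \<odot> sk = W2 \<odot> (u \<odot> Y \<odot> u) \<odot> W2'"
proof -
  have i: "W' \<odot> sk = u \<odot> W2'"
  proof (rule inv_unique[of "sk \<odot> W"])
    have "W \<odot> (W' \<odot> sk) = sk" using W sk by (metis assoc lunit)
    then show "(sk \<odot> W) \<odot> (W' \<odot> sk) = e" using sk by simp
    have "(u \<odot> W2') \<odot> (sk \<odot> W) = u \<odot> (W2' \<odot> (W2 \<odot> u))" using eq by simp
    also have "W2' \<odot> (W2 \<odot> u) = u" using W2 u by (metis assoc lunit)
    finally show "(u \<odot> W2') \<odot> (sk \<odot> W) = e" using u by simp
  qed simp_all
  have "sk \<odot> W \<odot> Y \<odot> W' \<odot> sk = (sk \<odot> W) \<odot> Y \<odot> (W' \<odot> sk)" by simp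
  also have "\<dots> = W2 \<odot> (u \<odot> Y \<odot> u) \<odot> W2'" using eq i by simp
  finally show ?thesis .
qed

end

locale gens = mon +
  fixes n :: nat and s :: "nat \<Rightarrow> 'a"
  assumes s_M[simp]: "s k \<in> M"
    and s_inv: "1 \<le> k \<Longrightarrow> k < n \<Longrightarrow> s k \<odot> s k = e"
    and s_braid: "1 \<le> k \<Longrightarrow> k + 1 < n \<Longrightarrow> s k \<odot> s (k+1) \<odot> s k = s (k+1) \<odot> s k \<odot> s (k+1)"
    and s_far: "1 \<le> k \<Longrightarrow> k + 1 < l \<Longrightarrow> l < n \<Longrightarrow> s k \<odot> s l = s l \<odot> s k"
begin

definition fd :: "nat \<Rightarrow> nat \<Rightarrow> 'a" where "fd a b = pr (map s (rev [a..<b]))"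
definition fa :: "nat \<Rightarrow> nat \<Rightarrow> 'a" where "fa a b = pr (map s [a..<b])"

lemma fd_M[simp]: "fd a b \<in> M" by (simp add: fd_def)
lemma fa_M[simp]: "fa a b \<in> M" by (simp add: fa_def)

lemma fd_empty: "b \<le> a \<Longrightarrow> fd a b = e" by (simp add: fd_def)
lemma fa_empty: "b \<le> a \<Longrightarrow> fa a b = e" by (simp add: fa_def)

lemma fd_Suc: "a \<le> b \<Longrightarrow> fd a (Suc b) = s b \<odot> fd a b"
  by (simp add: fd_def)

lemma fa_Suc: "a \<le> b \<Longrightarrow> fa a (Suc b) = fa a b \<odot> s b"
  by (simp add: fa_def)

lemma s_inv': "1 \<le> k \<Longrightarrow> k < n \<Longrightarrow> s k \<odot> (s k \<odot> x) = x \<odot> e"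
  using s_inv by (metis assoc lunit mon.closed mon_axioms runit)

lemma s_inv2: "1 \<le> k \<Longrightarrow> k < n \<Longrightarrow> x \<in> M \<Longrightarrow> s k \<odot> (s k \<odot> x) = x"
  using s_inv by (metis assoc lunit)

lemma fd_fa: "1 \<le> a \<Longrightarrow> b \<le> n \<Longrightarrow> fd a b \<odot> fa a b = e"
proof (induction b)
  case 0 then show ?case by (simp add: fd_empty fa_empty)
next
  case (Suc b)
  show ?case
  proof (cases "a \<le> b")
    case True
    have "fd a (Suc b) \<odot> fa a (Suc b) = s b \<odot> (fd a b \<odot> fa a b) \<odot> s b"
      using True by (simp add: fd_Suc fa_Suc)
    also have "\<dots> = e" using Suc True by (simp add: s_inv)
    finally show ?thesis .
  next
    case False then show ?thesis by (simp add: fd_empty fa_empty)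
  qed
qed

lemma fa_fd: "1 \<le> a \<Longrightarrow> b \<le> n \<Longrightarrow> fa a b \<odot> fd a b = e"
proof (induction b)
  case 0 then show ?case by (simp add: fd_empty fa_empty)
next
  case (Suc b)
  show ?case
  proof (cases "a \<le> b")
    case True
    have "fa a (Suc b) \<odot> fd a (Suc b) = fa a b \<odot> (s b \<odot> s b) \<odot> fd a b"
      using True by (simp add: fd_Suc fa_Suc)
    also have "\<dots> = e" using Suc True by (simp add: s_inv)
    finally show ?thesis .
  next
    case False then show ?thesis by (simp add: fd_empty fa_empty)
  qed
qed

lemma fd_fa_c[simp]: "1 \<le> a \<Longrightarrow> b \<le> n \<Longrightarrow> z \<in> M \<Longrightarrow> fd a b \<odot> (fa a b \<odot> z) = z"
  using fd_fa by (metis assoc lunit)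

lemma fa_fd_c[simp]: "1 \<le> a \<Longrightarrow> b \<le> n \<Longrightarrow> z \<in> M \<Longrightarrow> fa a b \<odot> (fd a b \<odot> z) = z"
  using fa_fd by (metis assoc lunit)

lemma fd_comm:
  assumes "1 \<le> k" "k < n" "1 \<le> a" "b \<le> n" "k + 2 \<le> a \<or> b + 1 \<le> k"
  shows "s k \<odot> fd a b = fd a b \<odot> s k"
  using assms
proof (induction b)
  case 0 then show ?case by (simp add: fd_empty)
next
  case (Suc b)
  show ?case
  proof (cases "a \<le> b")
    case True
    have far: "s k \<odot> s b = s b \<odot> s k"
    proof (cases "k < b")
      case True then show ?thesis using Suc \<open>a \<le> b\<close> by (intro s_far) auto
    next
      case False then show ?thesis using Suc \<open>a \<le> b\<close> by (intro s_far[symmetric]) auto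
    qed
    have "s k \<odot> fd a (Suc b) = (s k \<odot> s b) \<odot> fd a b" using True by (simp add: fd_Suc)
    also have "\<dots> = s b \<odot> (s k \<odot> fd a b)" using far by simp
    also have "\<dots> = s b \<odot> fd a b \<odot> s k"
    proof -
      have "s k \<odot> fd a b = fd a b \<odot> s k" using Suc.IH Suc.prems by auto
      then show ?thesis by simp
    qed
    finally show ?thesis using True by (simp add: fd_Suc)
  next
    case False then show ?thesis by (simp add: fd_empty)
  qed
qed

lemma fd_shift:
  assumes "1 \<le> a" "a \<le> k" "k + 1 < b" "b \<le> n"
  shows "s k \<odot> fd a b = fd a b \<odot> s (k+1)"
  using assms
proof (induction b)
  case 0 then show ?case by simp
next
  case (Suc b)
  show ?case
  proof (cases "k + 1 < b")
    case True
    have far: "s k \<odot> s b = s b \<odot> s k" using Suc True by (intro s_far) auto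
    have "s k \<odot> fd a (Suc b) = (s k \<odot> s b) \<odot> fd a b" using Suc by (simp add: fd_Suc)
    also have "\<dots> = s b \<odot> (s k \<odot> fd a b)" using far by simp
    also have "\<dots> = s b \<odot> fd a b \<odot> s (k+1)" using Suc True by simp
    finally show ?thesis using Suc by (simp add: fd_Suc)
  next
    case False
    then have b: "b = k + 1" using Suc by simp
    have e1: "fd a (Suc b) = s (k+1) \<odot> s k \<odot> fd a k"
      using b Suc by (simp add: fd_Suc)
    have c: "s (k+1) \<odot> fd a k = fd a k \<odot> s (k+1)"
      using Suc b by (intro fd_comm) auto
    have "s k \<odot> fd a (Suc b) = (s k \<odot> s (k+1) \<odot> s k) \<odot> fd a k" using e1 by simp
    also have "\<dots> = (s (k+1) \<odot> s k \<odot> s (k+1)) \<odot> fd a k"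
      using Suc b by (simp only: s_braid)
    also have "\<dots> = s (k+1) \<odot> s k \<odot> (s (k+1) \<odot> fd a k)" by simp
    also have "\<dots> = s (k+1) \<odot> s k \<odot> fd a k \<odot> s (k+1)" using c by simp
    finally show ?thesis using e1 by simp
  qed
qed

lemma fd_top: "1 \<le> a \<Longrightarrow> a < b \<Longrightarrow> b \<le> n \<Longrightarrow> s (b-1) \<odot> fd a b = fd a (b-1)"
proof -
  assume a: "1 \<le> a" "a < b" "b \<le> n"
  then have "fd a b = s (b-1) \<odot> fd a (b-1)" using fd_Suc[of a "b-1"] by simp
  then show ?thesis using a by (simp add: s_inv2)
qed

lemma fd_top2: "a \<le> b \<Longrightarrow> s b \<odot> fd a b = fd a (b+1)"
  by (simp add: fd_Suc)


definition xbl :: "nat \<Rightarrow> nat \<Rightarrow> 'a \<Rightarrow> 'a" where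
  "xbl a b X = fd 1 a \<odot> fd 2 b \<odot> X \<odot> fa 2 b \<odot> fa 1 a"

definition xb :: "nat \<Rightarrow> nat \<Rightarrow> 'a \<Rightarrow> 'a" where
  "xb a b X = (if a < b then xbl a b X else xbl b a (s 1 \<odot> X \<odot> s 1))"

lemma xbl_M[simp]: "xbl a b X \<in> M" by (simp add: xbl_def)
lemma xb_M[simp]: "xb a b X \<in> M" by (simp add: xb_def)

lemma conj_step:
  assumes k: "1 \<le> k" "k < n" and ab: "1 \<le> a" "a \<le> n" "b \<le> n"
    and ab2: "1 \<le> a2" "a2 \<le> n" "b2 \<le> n"
    and u: "u \<odot> u = e" "u \<in> M" and eq: "s k \<odot> (fd 1 a \<odot> fd 2 b) = (fd 1 a2 \<odot> fd 2 b2) \<odot> u"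
  shows "s k \<odot> xbl a b Y \<odot> s k = xbl a2 b2 (u \<odot> Y \<odot> u)"
proof -
  have W: "(fd 1 a \<odot> fd 2 b) \<odot> (fa 2 b \<odot> fa 1 a) = e" "(fa 2 b \<odot> fa 1 a) \<odot> (fd 1 a \<odot> fd 2 b) = e"
    using ab by (simp_all add: fd_fa fa_fd)
  have W2: "(fd 1 a2 \<odot> fd 2 b2) \<odot> (fa 2 b2 \<odot> fa 1 a2) = e" "(fa 2 b2 \<odot> fa 1 a2) \<odot> (fd 1 a2 \<odot> fd 2 b2) = e"
    using ab2 by (simp_all add: fd_fa fa_fd)
  have "s k \<odot> (fd 1 a \<odot> fd 2 b) \<odot> Y \<odot> (fa 2 b \<odot> fa 1 a) \<odot> s k
      = (fd 1 a2 \<odot> fd 2 b2) \<odot> (u \<odot> Y \<odot> u) \<odot> (fa 2 b2 \<odot> fa 1 a2)"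
    by (rule conj_gen[OF s_inv[OF k] s_M W _ _ W2 _ _ u eq]) simp_all
  then show ?thesis by (simp add: xbl_def)
qed

lemma uYu_e: "Y \<in> M \<Longrightarrow> e \<odot> Y \<odot> e = Y" by simp

lemma uYu_s: "3 \<le> j \<Longrightarrow> j < n \<Longrightarrow> Y \<in> M \<Longrightarrow> s j \<odot> Y = Y \<odot> s j \<Longrightarrow> s j \<odot> Y \<odot> s j = Y"
proof -
  assume a: "3 \<le> j" "j < n" "Y \<in> M" "s j \<odot> Y = Y \<odot> s j"
  have "s j \<odot> Y \<odot> s j = Y \<odot> (s j \<odot> s j)" using ext1[OF a(4)[symmetric], of "s j"] by simp
  then show ?thesis using a s_inv by simp
qed

lemma Qlem: "1 \<le> a \<Longrightarrow> a < n \<Longrightarrow> s a \<odot> (fd 1 a \<odot> fd 2 (a+1)) = (fd 1 a \<odot> fd 2 (a+1)) \<odot> s 1"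
proof (induction a)
  case 0 then show ?case by simp
next
  case (Suc a)
  show ?case
  proof (cases "a = 0")
    case True then show ?thesis by (simp add: fd_empty)
  next
    case False
    then have a1: "1 \<le> a" "a < n" using Suc by auto
    have IH: "s a \<odot> (fd 1 a \<odot> fd 2 (a+1)) = (fd 1 a \<odot> fd 2 (a+1)) \<odot> s 1"
      using Suc a1 by simp
    have c: "s (a+1) \<odot> fd 1 a = fd 1 a \<odot> s (a+1)"
      using a1 Suc by (intro fd_comm) auto
    have Q: "fd 1 (Suc a) \<odot> fd 2 (Suc a + 1) = s a \<odot> s (a+1) \<odot> (fd 1 a \<odot> fd 2 (a+1))"
    proof -
      have "fd 1 (Suc a) \<odot> fd 2 (Suc a + 1) = s a \<odot> (fd 1 a \<odot> s (a+1)) \<odot> fd 2 (a+1)"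
        using a1 by (simp add: fd_Suc)
      also have "\<dots> = s a \<odot> (s (a+1) \<odot> fd 1 a) \<odot> fd 2 (a+1)" using c by simp
      finally show ?thesis by simp
    qed
    have "s (Suc a) \<odot> (fd 1 (Suc a) \<odot> fd 2 (Suc a + 1))
        = (s (a+1) \<odot> s a \<odot> s (a+1)) \<odot> (fd 1 a \<odot> fd 2 (a+1))" using Q by simp
    also have "\<dots> = (s a \<odot> s (a+1) \<odot> s a) \<odot> (fd 1 a \<odot> fd 2 (a+1))"
      using a1 Suc by (simp only: s_braid)
    also have "\<dots> = s a \<odot> s (a+1) \<odot> (s a \<odot> (fd 1 a \<odot> fd 2 (a+1)))" by simp
    also have "\<dots> = s a \<odot> s (a+1) \<odot> ((fd 1 a \<odot> fd 2 (a+1)) \<odot> s 1)" using IH by simp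
    finally show ?thesis using Q by simp
  qed
qed

lemma conj_xbl:
  assumes k: "1 \<le> k" "k < n" and ab: "1 \<le> a" "a < b" "b \<le> n"
    and X: "X \<in> M" "\<And>j. 3 \<le> j \<Longrightarrow> j < n \<Longrightarrow> s j \<odot> X = X \<odot> s j"
  shows "s k \<odot> xbl a b X \<odot> s k = (if k = a \<and> b = a + 1 then xbl a b (s 1 \<odot> X \<odot> s 1)
                                 else xbl (sw k a) (sw k b) X)"
proof -
  consider "k + 1 < a" | "k + 1 = a" | "k = a \<and> b = a + 1" | "k = a \<and> b \<noteq> a + 1"
    | "a < k \<and> k + 1 < b" | "a < k \<and> k + 1 = b" | "k = b" | "b < k" by linarith
  then show ?thesis
  proof cases
    case 1
    have "s k \<odot> (fd 1 a \<odot> fd 2 b) = (fd 1 a \<odot> fd 2 b) \<odot> s (k+2)"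
    proof -
      have "s k \<odot> fd 1 a = fd 1 a \<odot> s (k+1)" using fd_shift[of 1 k a] 1 k ab by simp
      then have "s k \<odot> (fd 1 a \<odot> fd 2 b) = fd 1 a \<odot> (s (k+1) \<odot> fd 2 b)" by (rule ext2)
      also have "\<dots> = fd 1 a \<odot> fd 2 b \<odot> s (k+2)"
        using fd_shift[of 2 "k+1" b] 1 k ab by simp
      finally show ?thesis by simp
    qed
    then have "s k \<odot> xbl a b X \<odot> s k = xbl a b (s (k+2) \<odot> X \<odot> s (k+2))"
      using k ab 1 by (intro conj_step) (simp_all add: s_inv)
    also have "s (k+2) \<odot> X \<odot> s (k+2) = X" using 1 k ab X by (intro uYu_s) auto
    finally show ?thesis using 1 ab by (simp add: sw_def)
  next
    case 2
    have "s k \<odot> fd 1 a = fd 1 (a-1)" using fd_top[of 1 a] 2 k ab by (simp add: \<open>k + 1 = a\<close>[symmetric])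
    then have "s k \<odot> (fd 1 a \<odot> fd 2 b) = (fd 1 (a-1) \<odot> fd 2 b) \<odot> e" using ext1 by simp
    then have "s k \<odot> xbl a b X \<odot> s k = xbl (a-1) b (e \<odot> X \<odot> e)"
      using k ab 2 by (intro conj_step) simp_all
    moreover have "a - 1 = k" using 2 by simp
    ultimately show ?thesis using 2 X ab by (auto simp: sw_def)
  next
    case 3
    have "s k \<odot> xbl a b X \<odot> s k = xbl a b (s 1 \<odot> X \<odot> s 1)"
      using k ab 3 Qlem[of a] by (intro conj_step) (simp_all add: s_inv)
    then show ?thesis using 3 by simp
  next
    case 4
    have "s k \<odot> fd 1 a = fd 1 (a+1)" using fd_top2[of 1 a] 4 ab by simp
    then have "s k \<odot> (fd 1 a \<odot> fd 2 b) = (fd 1 (a+1) \<odot> fd 2 b) \<odot> e" using ext1 by simp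
    then have "s k \<odot> xbl a b X \<odot> s k = xbl (a+1) b (e \<odot> X \<odot> e)"
      using k ab 4 by (intro conj_step) simp_all
    then show ?thesis using 4 X ab by (simp add: sw_def)
  next
    case 5
    have "s k \<odot> (fd 1 a \<odot> fd 2 b) = (fd 1 a \<odot> fd 2 b) \<odot> s (k+1)"
    proof -
      have "s k \<odot> fd 1 a = fd 1 a \<odot> s k" using fd_comm[of k 1 a] 5 k ab by simp
      then have "s k \<odot> (fd 1 a \<odot> fd 2 b) = fd 1 a \<odot> (s k \<odot> fd 2 b)" by (rule ext2)
      also have "\<dots> = fd 1 a \<odot> fd 2 b \<odot> s (k+1)"
        using fd_shift[of 2 k b] 5 k ab by simp
      finally show ?thesis by simp
    qed
    then have "s k \<odot> xbl a b X \<odot> s k = xbl a b (s (k+1) \<odot> X \<odot> s (k+1))"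
      using k ab 5 by (intro conj_step) (simp_all add: s_inv)
    also have "s (k+1) \<odot> X \<odot> s (k+1) = X" using 5 k ab X by (intro uYu_s) auto
    finally show ?thesis using 5 by (simp add: sw_def)
  next
    case 6
    have "s k \<odot> (fd 1 a \<odot> fd 2 b) = (fd 1 a \<odot> fd 2 (b-1)) \<odot> e"
    proof -
      have "s k \<odot> fd 1 a = fd 1 a \<odot> s k" using fd_comm[of k 1 a] 6 k ab by simp
      then have "s k \<odot> (fd 1 a \<odot> fd 2 b) = fd 1 a \<odot> (s k \<odot> fd 2 b)" by (rule ext2)
      also have "s k \<odot> fd 2 b = fd 2 (b-1)"
        using fd_top[of 2 b] 6 k ab by (simp add: conj_commute[of "a < k"] flip: \<open>a < k \<and> k + 1 = b\<close>[THEN conjunct2])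
      finally show ?thesis by simp
    qed
    then have "s k \<odot> xbl a b X \<odot> s k = xbl a (b-1) (e \<odot> X \<odot> e)"
      using k ab 6 by (intro conj_step) simp_all
    moreover have "b - 1 = k" using 6 by auto
    ultimately show ?thesis using 6 X by (simp add: sw_def)
  next
    case 7
    have "s k \<odot> (fd 1 a \<odot> fd 2 b) = (fd 1 a \<odot> fd 2 (b+1)) \<odot> e"
    proof -
      have "s k \<odot> fd 1 a = fd 1 a \<odot> s k" using fd_comm[of k 1 a] 7 k ab by simp
      then have "s k \<odot> (fd 1 a \<odot> fd 2 b) = fd 1 a \<odot> (s k \<odot> fd 2 b)" by (rule ext2)
      also have "s k \<odot> fd 2 b = fd 2 (b+1)"
        using fd_top2[of 2 b] 7 k ab by simp
      finally show ?thesis by simp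
    qed
    then have "s k \<odot> xbl a b X \<odot> s k = xbl a (b+1) (e \<odot> X \<odot> e)"
      using k ab 7 by (intro conj_step) simp_all
    then show ?thesis using 7 X ab by (simp add: sw_def)
  next
    case 8
    have "s k \<odot> (fd 1 a \<odot> fd 2 b) = (fd 1 a \<odot> fd 2 b) \<odot> s k"
    proof -
      have "s k \<odot> fd 1 a = fd 1 a \<odot> s k" using fd_comm[of k 1 a] 8 k ab by simp
      then have "s k \<odot> (fd 1 a \<odot> fd 2 b) = fd 1 a \<odot> (s k \<odot> fd 2 b)" by (rule ext2)
      also have "s k \<odot> fd 2 b = fd 2 b \<odot> s k"
        using fd_comm[of k 2 b] 8 k ab by simp
      finally show ?thesis by simp
    qed
    then have "s k \<odot> xbl a b X \<odot> s k = xbl a b (s k \<odot> X \<odot> s k)"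
      using k ab 8 by (intro conj_step) (simp_all add: s_inv)
    also have "s k \<odot> X \<odot> s k = X" using 8 k ab X by (intro uYu_s) auto
    finally show ?thesis using 8 ab by (simp add: sw_def)
  qed
qed


lemma sX_comm:
  assumes X: "X \<in> M" "\<And>j. 3 \<le> j \<Longrightarrow> j < n \<Longrightarrow> s j \<odot> X = X \<odot> s j"
  shows "\<And>j. 3 \<le> j \<Longrightarrow> j < n \<Longrightarrow> s j \<odot> (s 1 \<odot> X \<odot> s 1) = (s 1 \<odot> X \<odot> s 1) \<odot> s j"
proof -
  fix j assume j: "3 \<le> j" "j < n"
  have c1: "s j \<odot> s 1 = s 1 \<odot> s j" using j by (intro s_far[symmetric]) auto
  have "s j \<odot> (s 1 \<odot> X \<odot> s 1) = s 1 \<odot> (s j \<odot> X) \<odot> s 1" using ext2[OF c1] by simp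
  also have "\<dots> = s 1 \<odot> X \<odot> (s j \<odot> s 1)" using X j by simp
  also have "\<dots> = (s 1 \<odot> X \<odot> s 1) \<odot> s j" using c1 by simp
  finally show "s j \<odot> (s 1 \<odot> X \<odot> s 1) = (s 1 \<odot> X \<odot> s 1) \<odot> s j" .
qed

theorem conj_xb:
  assumes k: "1 \<le> k" "k < n" and ab: "a \<in> {1..n}" "b \<in> {1..n}" "a \<noteq> b"
    and X: "X \<in> M" "\<And>j. 3 \<le> j \<Longrightarrow> j < n \<Longrightarrow> s j \<odot> X = X \<odot> s j"
  shows "s k \<odot> xb a b X \<odot> s k = xb (sw k a) (sw k b) X"
proof (cases "a < b")
  case True
  note c = conj_xbl[OF k _ True _ X]
  show ?thesis
  proof (cases "k = a \<and> b = a + 1")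
    case True
    then show ?thesis using c ab \<open>a < b\<close> by (simp add: xb_def sw_def)
  next
    case False
    then have "sw k a < sw k b" using \<open>a < b\<close> by (auto simp: sw_def)
    then show ?thesis using c ab \<open>a < b\<close> False by (auto simp: xb_def)
  qed
next
  case False
  then have ba: "b < a" using ab by simp
  have X': "s 1 \<odot> X \<odot> s 1 \<in> M" by simp
  note c = conj_xbl[OF k _ ba _ X' sX_comm[OF X]]
  show ?thesis
  proof (cases "k = b \<and> a = b + 1")
    case True
    have "s 1 \<odot> s 1 \<odot> X \<odot> s 1 \<odot> s 1 = X"
      using s_inv[of 1] k X by (simp add: s_inv2)
    then show ?thesis using c ab ba True by (simp add: xb_def sw_def)
  next
    case False
    then have "sw k b < sw k a" using ba by (auto simp: sw_def)
    then show ?thesis using c ab ba False by (auto simp: xb_def)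
  qed
qed

end


section \<open>Orbit lemma\<close>

definition valid :: "nat \<Rightarrow> nat \<Rightarrow> nat list \<Rightarrow> bool" where
  "valid n m t \<longleftrightarrow> distinct t \<and> set t \<subseteq> {1..n} \<and> length t = m"

definition dd :: "nat list \<Rightarrow> int" where
  "dd t = (\<Sum>p<length t. (int (t!p) - int p - 1)^2)"

lemma dd_nonneg: "0 \<le> dd t"
  by (simp add: dd_def sum_nonneg)

lemma valid_sw: "valid n m t \<Longrightarrow> 1 \<le> k \<Longrightarrow> k < n \<Longrightarrow> valid n m (map (sw k) t)"
proof -
  assume a: "valid n m t" "1 \<le> k" "k < n"
  have "set (map (sw k) t) \<subseteq> {1..n}"
  proof
    fix y assume "y \<in> set (map (sw k) t)"
    then obtain x where "x \<in> set t" "y = sw k x" by auto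
    then show "y \<in> {1..n}" using a sw_range[of k n x] by (auto simp: valid_def)
  qed
  then show ?thesis using a by (auto simp: valid_def distinct_map inj_on_def sw_inj)
qed

lemma dd_change:
  assumes "length t' = length t" "\<And>p. p < length t \<Longrightarrow> p \<notin> S \<Longrightarrow> t'!p = t!p" "S \<subseteq> {..<length t}"
  shows "dd t' - dd t = (\<Sum>p\<in>S. (int (t'!p) - int p - 1)^2 - (int (t!p) - int p - 1)^2)"
proof -
  have "dd t' - dd t = (\<Sum>p<length t. (int (t'!p) - int p - 1)^2 - (int (t!p) - int p - 1)^2)"
    using assms(1) by (simp add: dd_def sum_subtractf)
  also have "\<dots> = (\<Sum>p\<in>S. (int (t'!p) - int p - 1)^2 - (int (t!p) - int p - 1)^2)"
    using assms by (intro sum.mono_neutral_right) auto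
  finally show ?thesis .
qed

lemma sq_aux1: "0 \<le> (x::int) \<Longrightarrow> x^2 - (x+1)^2 < 0"
  by (simp add: power2_eq_square algebra_simps)

lemma sq_aux2: "((a::int)^2 - (a+1)^2) + ((b+1)^2 - b^2) = 2 * (b - a)"
  by (simp add: power2_eq_square algebra_simps)

lemma orbit_step:
  assumes v: "valid n m t" and ne: "t \<noteq> [Suc 0..<Suc m]"
  shows "\<exists>k. 1 \<le> k \<and> k < n \<and> dd (map (sw k) t) < dd t"
proof -
  have lt: "length t = m" and dt: "distinct t" and st: "set t \<subseteq> {1..n}" using v by (auto simp: valid_def)
  have "\<exists>p<m. t!p \<noteq> p + 1"
  proof (rule ccontr)
    assume "\<not> ?thesis"
    then have "t = [Suc 0..<Suc m]" using lt by (intro nth_equalityI) (auto simp del: upt_Suc)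
    then show False using ne by simp
  qed
  then obtain p0 where p0: "p0 < m" "t!p0 \<noteq> p0 + 1" and least: "\<And>p. p < p0 \<Longrightarrow> t!p = p + 1"
    using exists_least_iff[of "\<lambda>p. p < m \<and> t!p \<noteq> p + 1"]
    by (metis (no_types, lifting) less_trans)
  define v where "v = t!p0"
  have vin: "v \<in> {1..n}" using st p0 lt nth_mem[of p0 t] unfolding v_def by blast
  have vbig: "p0 + 1 < v"
  proof (rule ccontr)
    assume "\<not> p0 + 1 < v"
    then have "v \<le> p0" using p0 v_def by simp
    define q where "q = v - 1"
    have q: "q < p0" "v = q + 1" using vin \<open>v \<le> p0\<close> p0 v_def by (auto simp: q_def)
    then have "t!q = t!p0" using least v_def by simp
    then show False using dt q p0 lt by (simp add: nth_eq_iff_index_eq)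
  qed
  define k where "k = v - 1"
  have k: "1 \<le> k" "k < n" "k + 1 = v" using vbig vin by (auto simp: k_def)
  define t' where "t' = map (sw k) t"
  have lt': "length t' = length t" by (simp add: t'_def)
  have t'p0: "t'!p0 = k" using p0 lt k by (simp add: t'_def sw_def v_def[symmetric])
  show ?thesis
  proof (cases "k \<in> set t")
    case False
    have oth: "\<And>p. p < length t \<Longrightarrow> p \<notin> {p0} \<Longrightarrow> t'!p = t!p"
    proof -
      fix p assume "p < length t" "p \<notin> {p0}"
      then have "t!p \<noteq> v" "t!p \<noteq> k" using dt p0 lt False by (auto simp: v_def nth_eq_iff_index_eq)
      then show "t'!p = t!p" using \<open>p < length t\<close> k by (simp add: t'_def sw_def)
    qed
    have "dd t' - dd t = (\<Sum>p\<in>{p0}. (int (t'!p) - int p - 1)^2 - (int (t!p) - int p - 1)^2)"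
      using p0 lt by (intro dd_change[OF lt' oth]) auto
    also have "\<dots> = (int k - int p0 - 1)^2 - (int v - int p0 - 1)^2" using t'p0 v_def by simp
    also have "\<dots> < 0"
    proof -
      have "int v - int p0 - 1 = (int k - int p0 - 1) + 1" using k by simp
      moreover have "0 \<le> int k - int p0 - 1" using k vbig by simp
      ultimately show ?thesis using sq_aux1 by metis
    qed
    finally show ?thesis using k by (auto simp: t'_def)
  next
    case True
    then obtain p1 where p1: "p1 < m" "t!p1 = k" using lt by (metis in_set_conv_nth)
    have p1p0: "p0 < p1"
    proof (rule ccontr)
      assume "\<not> p0 < p1"
      moreover have "p1 \<noteq> p0" using p1 k v_def by auto
      ultimately have "p1 < p0" by simp
      then have "t!p1 = p1 + 1" using least by simp
      then show False using p1 k vbig \<open>p1 < p0\<close> by simp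
    qed
    have t'p1: "t'!p1 = v" using p1 lt k by (simp add: t'_def sw_def)
    have oth: "\<And>p. p < length t \<Longrightarrow> p \<notin> {p0, p1} \<Longrightarrow> t'!p = t!p"
    proof -
      fix p assume "p < length t" "p \<notin> {p0, p1}"
      then have "t!p \<noteq> v" "t!p \<noteq> k" using dt p0 p1 lt by (auto simp: v_def nth_eq_iff_index_eq)
      then show "t'!p = t!p" using \<open>p < length t\<close> k by (simp add: t'_def sw_def)
    qed
    have "dd t' - dd t = (\<Sum>p\<in>{p0, p1}. (int (t'!p) - int p - 1)^2 - (int (t!p) - int p - 1)^2)"
      using p0 p1 lt by (intro dd_change[OF lt' oth]) auto
    also have "\<dots> = ((int k - int p0 - 1)^2 - (int v - int p0 - 1)^2)
                   + ((int v - int p1 - 1)^2 - (int k - int p1 - 1)^2)"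
      using t'p0 t'p1 v_def p1 p1p0 by simp
    also have "\<dots> = 2 * ((int k - int p1 - 1) - (int k - int p0 - 1))"
    proof -
      have "int v - int p0 - 1 = (int k - int p0 - 1) + 1" "int v - int p1 - 1 = (int k - int p1 - 1) + 1"
        using k by simp_all
      then show ?thesis using sq_aux2 by metis
    qed
    also have "\<dots> < 0" using p1p0 by simp
    finally show ?thesis using k by (auto simp: t'_def)
  qed
qed

lemma orbit:
  assumes base: "m \<le> n \<Longrightarrow> Q [Suc 0..<Suc m]"
    and step: "\<And>k t. 1 \<le> k \<Longrightarrow> k < n \<Longrightarrow> valid n m t \<Longrightarrow> Q t \<Longrightarrow> Q (map (sw k) t)"
  shows "valid n m t \<Longrightarrow> Q t"
proof (induction "nat (dd t)" arbitrary: t rule: less_induct)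
  case less
  show ?case
  proof (cases "t = [Suc 0..<Suc m]")
    case True
    have "m \<le> n"
    proof (cases m)
      case (Suc m')
      then have "m \<in> set t" using True by simp
      then show ?thesis using less.prems by (auto simp: valid_def)
    qed simp
    then show ?thesis using base True by simp
  next
    case False
    obtain k where k: "1 \<le> k" "k < n" "dd (map (sw k) t) < dd t"
      using orbit_step[OF less.prems False] by blast
    have v': "valid n m (map (sw k) t)" using valid_sw less.prems k by blast
    have "Q (map (sw k) t)"
      using less.hyps[of "map (sw k) t"] k v' dd_nonneg[of "map (sw k) t"] by simp
    then have "Q (map (sw k) (map (sw k) t))" using step k v' by blast
    then show ?thesis by (simp add: comp_def)
  qed
qed


context mon
begin

lemma tailI: "x = y \<Longrightarrow> x \<odot> z = y \<odot> z"
  by simp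

lemma upt_split3: "i \<le> j \<Longrightarrow> j \<le> k \<Longrightarrow> [i..<k] = [i..<j] @ [j..<k]"
  using upt_add_eq_append[of i j "k - j"] by simp

lemma comm_block:
  assumes "\<And>k. k \<in> set ks \<Longrightarrow> x \<odot> f k = f k \<odot> x" "x \<in> M"
  shows "x \<odot> pr (map f ks) = pr (map f ks) \<odot> x"
  using assms(1)
proof (induction ks)
  case Nil then show ?case using assms(2) by simp
next
  case (Cons k ks)
  have "x \<odot> pr (map f (k # ks)) = (x \<odot> f k) \<odot> pr (map f ks)" by simp
  also have "\<dots> = f k \<odot> (x \<odot> pr (map f ks))" using Cons by simp
  also have "\<dots> = f k \<odot> pr (map f ks) \<odot> x" using Cons by simp
  finally show ?case by simp
qed

lemma comm_blocks:
  assumes "\<And>k l. k \<in> set ks \<Longrightarrow> l \<in> set ls \<Longrightarrow> f k \<odot> h l = h l \<odot> f k"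
    and fM: "\<And>k. f k \<in> M"
  shows "pr (map f ks) \<odot> pr (map h ls) = pr (map h ls) \<odot> pr (map f ks)"
  using assms
proof (induction ks)
  case Nil then show ?case by simp
next
  case (Cons k ks)
  have c: "f k \<odot> pr (map h ls) = pr (map h ls) \<odot> f k"
    using Cons.prems fM by (intro comm_block) auto
  have "pr (map f (k # ks)) \<odot> pr (map h ls) = f k \<odot> (pr (map f ks) \<odot> pr (map h ls))" by simp
  also have "\<dots> = f k \<odot> pr (map h ls) \<odot> pr (map f ks)" using Cons by simp
  also have "\<dots> = pr (map h ls) \<odot> f k \<odot> pr (map f ks)" using ext1[OF c] by simp
  finally show ?case by simp
qed

lemma interleave:
  assumes "distinct ks" "\<And>k l. k \<in> set ks \<Longrightarrow> l \<in> set ks \<Longrightarrow> k \<noteq> l \<Longrightarrow> f l \<odot> h k = h k \<odot> f l"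
    and hM: "\<And>k. h k \<in> M"
  shows "pr (map f ks) \<odot> pr (map h ks) = pr (map (\<lambda>k. f k \<odot> h k) ks)"
  using assms
proof (induction ks)
  case Nil then show ?case by simp
next
  case (Cons k ks)
  have c: "h k \<odot> pr (map f ks) = pr (map f ks) \<odot> h k"
  proof (rule comm_block)
    fix l assume "l \<in> set ks"
    then have "l \<noteq> k" using Cons.prems(1) by auto
    then have "f l \<odot> h k = h k \<odot> f l" using Cons.prems(2)[of k l] \<open>l \<in> set ks\<close> by simp
    then show "h k \<odot> f l = f l \<odot> h k" by simp
  qed (simp add: hM)
  have "pr (map f (k # ks)) \<odot> pr (map h (k # ks)) = f k \<odot> (pr (map f ks) \<odot> h k) \<odot> pr (map h ks)" by simp
  also have "\<dots> = f k \<odot> h k \<odot> (pr (map f ks) \<odot> pr (map h ks))" using ext2[OF c[symmetric]] by simp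
  also have "\<dots> = f k \<odot> h k \<odot> pr (map (\<lambda>k. f k \<odot> h k) ks)" using Cons by simp
  finally show ?case by simp
qed

lemma pass_block:
  assumes "\<And>k. k \<in> set ks \<Longrightarrow> c \<odot> (f k \<odot> h k) = (h k \<odot> f k) \<odot> c"
    and cM: "c \<in> M"
  shows "c \<odot> pr (map (\<lambda>k. f k \<odot> h k) ks) = pr (map (\<lambda>k. h k \<odot> f k) ks) \<odot> c"
  using assms
proof (induction ks)
  case Nil then show ?case using cM by simp
next
  case (Cons k ks)
  have "c \<odot> pr (map (\<lambda>k. f k \<odot> h k) (k # ks)) = (c \<odot> (f k \<odot> h k)) \<odot> pr (map (\<lambda>k. f k \<odot> h k) ks)" by simp
  also have "\<dots> = (h k \<odot> f k) \<odot> (c \<odot> pr (map (\<lambda>k. f k \<odot> h k) ks))" using Cons by simp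
  also have "\<dots> = (h k \<odot> f k) \<odot> pr (map (\<lambda>k. h k \<odot> f k) ks) \<odot> c" using Cons by simp
  finally show ?case by simp
qed

end

locale heart = mon +
  fixes n :: nat and r :: "nat \<Rightarrow> nat \<Rightarrow> 'c \<Rightarrow> 'c \<Rightarrow> 'a" and g :: "nat \<Rightarrow> 'a"
    and dn :: "'c \<Rightarrow> 'c" and okY :: "'c \<Rightarrow> 'c \<Rightarrow> 'c \<Rightarrow> bool" and okU :: "'c \<Rightarrow> 'c \<Rightarrow> bool"
  assumes r_M[simp]: "r a b x y \<in> M" and g_M[simp]: "g a \<in> M"
    and YB: "a \<in> {1..n} \<Longrightarrow> b \<in> {1..n} \<Longrightarrow> c \<in> {1..n} \<Longrightarrow> distinct [a,b,c] \<Longrightarrow> okY x y z \<Longrightarrow>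
       r a b x y \<odot> r a c x z \<odot> r b c y z = r b c y z \<odot> r a c x z \<odot> r a b x y"
    and U: "a \<in> {1..n} \<Longrightarrow> b \<in> {1..n} \<Longrightarrow> a \<noteq> b \<Longrightarrow> okU x y \<Longrightarrow> r a b x y \<odot> r b a y x = e"
    and Cm: "a \<in> {1..n} \<Longrightarrow> b \<in> {1..n} \<Longrightarrow> c \<in> {1..n} \<Longrightarrow> d \<in> {1..n} \<Longrightarrow> distinct [a,b,c,d] \<Longrightarrow>
       r a b x y \<odot> r c d z w = r c d z w \<odot> r a b x y"
    and GC1: "a \<in> {1..n} \<Longrightarrow> c \<in> {1..n} \<Longrightarrow> d \<in> {1..n} \<Longrightarrow> distinct [a,c,d] \<Longrightarrow>
       g a \<odot> r c d x y = r c d x y \<odot> g a"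
    and GG: "a \<in> {1..n} \<Longrightarrow> b \<in> {1..n} \<Longrightarrow> a \<noteq> b \<Longrightarrow> g a \<odot> g b = g b \<odot> g a"
    and GC2: "a \<in> {1..n} \<Longrightarrow> b \<in> {1..n} \<Longrightarrow> a \<noteq> b \<Longrightarrow>
       (g a \<odot> g b) \<odot> r a b x y = r a b x y \<odot> (g a \<odot> g b)"
    and hom: "r a b (dn x) (dn y) = r a b x y"
begin

definition Dn :: "nat \<Rightarrow> (nat \<Rightarrow> 'c) \<Rightarrow> 'a" where
  "Dn i v = pr (map (\<lambda>k. r i k (v i) (v k)) (rev [1..<i]))"

definition Up :: "nat \<Rightarrow> (nat \<Rightarrow> 'c) \<Rightarrow> 'a" where
  "Up i v = pr (map (\<lambda>k. r i k (v i) (v k)) (rev [Suc i..<Suc n]))"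

lemma split_range:
  assumes "i < j" "j \<le> n"
  shows "rev [Suc i..<Suc n] = rev [Suc j..<Suc n] @ [j] @ rev [Suc i..<j]"
proof -
  have "[Suc i..<Suc n] = [Suc i..<j] @ [j..<Suc n]" using assms by (intro upt_split3) auto
  also have "[j..<Suc n] = j # [Suc j..<Suc n]" using assms by (simp add: upt_conv_Cons del: upt_Suc)
  finally show ?thesis by simp
qed

lemma split_range2:
  assumes "1 \<le> i" "i < j"
  shows "rev [1..<j] = rev [Suc i..<j] @ [i] @ rev [1..<i]"
proof -
  have "[1..<j] = [1..<i] @ [i..<j]" using assms by (intro upt_split3) auto
  also have "[i..<j] = i # [Suc i..<j]" using assms by (simp add: upt_conv_Cons del: upt_Suc)
  finally show ?thesis by simp
qed

theorem heart_comm: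
  assumes ij: "1 \<le> i" "i < j" "j \<le> n"
    and okU1: "okU (dn (u i)) (u j)" and okU2: "okU (u j) (u i)"
    and okY1: "\<And>k. i < k \<Longrightarrow> k < j \<Longrightarrow> okY (dn (u i)) (u j) (u k)"
    and okY2: "\<And>k. j < k \<Longrightarrow> k \<le> n \<Longrightarrow> okY (dn (u i)) (dn (u j)) (u k)"
    and okY3: "\<And>k. 1 \<le> k \<Longrightarrow> k < i \<Longrightarrow> okY (u i) (u j) (u k)"
  defines "ui \<equiv> u(i := dn (u i))" and "uj \<equiv> u(j := dn (u j))"
    and "uij \<equiv> u(i := dn (u i), j := dn (u j))"
  shows "Dn i u \<odot> g i \<odot> Up i ui \<odot> Dn j ui \<odot> g j \<odot> Up j uij
       = Dn j u \<odot> g j \<odot> Up j uj \<odot> Dn i uj \<odot> g i \<odot> Up i uij"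
proof -
  define A where "A = (\<lambda>k. r i k (u i) (u k))"
  define A' where "A' = (\<lambda>k. r i k (dn (u i)) (u k))"
  define B where "B = (\<lambda>k. r j k (u j) (u k))"
  define B'' where "B'' = (\<lambda>k. r j k (dn (u j)) (u k))"
  define lo where "lo = rev [1..<i]"
  define md where "md = rev [Suc i..<j]"
  define hi where "hi = rev [Suc j..<Suc n]"
  have lo_set: "set lo = {1..<i}" and md_set: "set md = {Suc i..<j}" and hi_set: "set hi = {Suc j..<Suc n}"
    by (auto simp: lo_def md_def hi_def)
  have dlo: "distinct lo" and dmd: "distinct md" and dhi: "distinct hi"
    by (auto simp: lo_def md_def hi_def)
  have ir: "i \<in> {1..n}" and jr: "j \<in> {1..n}" using ij by auto
  have ij': "i \<noteq> j" using ij by simp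
  have e1: "Dn i u = pr (map A lo)" by (simp add: Dn_def A_def lo_def)
  have e2: "Up i ui = pr (map A' hi) \<odot> A' j \<odot> pr (map A' md)"
  proof -
    have "Up i ui = pr (map (\<lambda>k. r i k (ui i) (ui k)) (hi @ [j] @ md))"
      using split_range[OF ij(2,3)] by (simp add: Up_def hi_def md_def)
    also have "\<dots> = pr (map A' hi) \<odot> A' j \<odot> pr (map A' md)"
    proof -
      have "map (\<lambda>k. r i k (ui i) (ui k)) hi = map A' hi"
        using hi_set ij by (auto simp: ui_def A'_def)
      moreover have "map (\<lambda>k. r i k (ui i) (ui k)) md = map A' md"
        using md_set ij by (auto simp: ui_def A'_def)
      ultimately show ?thesis using ij by (simp only: map_append pr_append list.map pr_Cons pr_Nil) (simp add: ui_def A'_def)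
    qed
    finally show ?thesis .
  qed
  have e3: "Dn j ui = pr (map B md) \<odot> r j i (u j) (dn (u i)) \<odot> pr (map B lo)"
  proof -
    have "Dn j ui = pr (map (\<lambda>k. r j k (ui j) (ui k)) (md @ [i] @ lo))"
      using split_range2[OF ij(1,2)] by (simp add: Dn_def lo_def md_def)
    also have "\<dots> = pr (map B md) \<odot> r j i (u j) (dn (u i)) \<odot> pr (map B lo)"
    proof -
      have "map (\<lambda>k. r j k (ui j) (ui k)) md = map B md"
        by (rule map_cong) (use md_set ij in \<open>auto simp: ui_def B_def\<close>)
      moreover have "map (\<lambda>k. r j k (ui j) (ui k)) lo = map B lo"
        by (rule map_cong) (use lo_set ij in \<open>auto simp: ui_def B_def\<close>)
      ultimately show ?thesis using ij by (simp only: map_append pr_append list.map pr_Cons pr_Nil) (simp add: ui_def B_def)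
    qed
    finally show ?thesis .
  qed
  have e4: "Up j uij = pr (map B'' hi)"
  proof -
    have "map (\<lambda>k. r j k (uij j) (uij k)) hi = map B'' hi"
      using hi_set ij by (auto simp: uij_def B''_def)
    then show ?thesis by (simp only: Up_def hi_def)
  qed
  have e5: "Dn j u = pr (map B md) \<odot> B i \<odot> pr (map B lo)"
    using split_range2[OF ij(1,2)] by (simp add: Dn_def lo_def md_def B_def)
  have e6: "Up j uj = pr (map B'' hi)"
  proof -
    have "map (\<lambda>k. r j k (uj j) (uj k)) hi = map B'' hi"
      using hi_set ij by (auto simp: uj_def B''_def)
    then show ?thesis by (simp only: Up_def hi_def)
  qed
  have e7: "Dn i uj = pr (map A lo)"
  proof -
    have "map (\<lambda>k. r i k (uj i) (uj k)) lo = map A lo"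
        by (rule map_cong) (use lo_set ij in \<open>auto simp: uj_def A_def\<close>)
    then show ?thesis using ij by (simp only: Dn_def lo_def)
  qed
  have e8: "Up i uij = pr (map A' hi) \<odot> r i j (dn (u i)) (dn (u j)) \<odot> pr (map A' md)"
  proof -
    have "Up i uij = pr (map (\<lambda>k. r i k (uij i) (uij k)) (hi @ [j] @ md))"
      using split_range[OF ij(2,3)] by (simp add: Up_def hi_def md_def)
    also have "\<dots> = pr (map A' hi) \<odot> r i j (dn (u i)) (dn (u j)) \<odot> pr (map A' md)"
    proof -
      have "map (\<lambda>k. r i k (uij i) (uij k)) hi = map A' hi"
        using hi_set ij by (auto simp: uij_def A'_def)
      moreover have "map (\<lambda>k. r i k (uij i) (uij k)) md = map A' md"
        using md_set ij by (auto simp: uij_def A'_def)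
      ultimately show ?thesis using ij by (simp only: map_append pr_append list.map pr_Cons pr_Nil) (simp add: uij_def A'_def)
    qed
    finally show ?thesis .
  qed
  have rng: "\<And>k. k \<in> set lo \<or> k \<in> set md \<or> k \<in> set hi \<Longrightarrow> k \<in> {1..n} \<and> k \<noteq> i \<and> k \<noteq> j"
    using ij by (auto simp: lo_set md_set hi_set)
  have CAB: "\<And>k l x y z w. k \<in> set lo \<or> k \<in> set md \<or> k \<in> set hi \<Longrightarrow> l \<in> set lo \<or> l \<in> set md \<or> l \<in> set hi \<Longrightarrow> k \<noteq> l \<Longrightarrow>
      r i k x y \<odot> r j l z w = r j l z w \<odot> r i k x y"
    using rng ir jr ij' by (intro Cm) auto
  have CBA: "\<And>k l x y z w. k \<in> set lo \<or> k \<in> set md \<or> k \<in> set hi \<Longrightarrow> l \<in> set lo \<or> l \<in> set md \<or> l \<in> set hi \<Longrightarrow> k \<noteq> l \<Longrightarrow>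
      r j l z w \<odot> r i k x y = r i k x y \<odot> r j l z w"
    using CAB by metis
  have Gi: "\<And>k x y. k \<in> set lo \<or> k \<in> set md \<or> k \<in> set hi \<Longrightarrow> g i \<odot> r j k x y = r j k x y \<odot> g i"
    using rng ir jr ij' by (intro GC1) auto
  have Gj: "\<And>k x y. k \<in> set lo \<or> k \<in> set md \<or> k \<in> set hi \<Longrightarrow> g j \<odot> r i k x y = r i k x y \<odot> g j"
    using rng ir jr ij' by (intro GC1) auto
  have lohi: "\<And>k l. k \<in> set lo \<Longrightarrow> l \<in> set hi \<Longrightarrow> k \<noteq> l" using ij by (auto simp: lo_set hi_set)
  have lomd: "\<And>k l. k \<in> set lo \<Longrightarrow> l \<in> set md \<Longrightarrow> k \<noteq> l" by (auto simp: lo_set md_set)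
  have mdhi: "\<And>k l. k \<in> set md \<Longrightarrow> l \<in> set hi \<Longrightarrow> k \<noteq> l" using ij by (auto simp: md_set hi_set)
  have hilo: "\<And>k l. k \<in> set hi \<Longrightarrow> l \<in> set lo \<Longrightarrow> k \<noteq> l" using lohi by blast
  have mdlo: "\<And>k l. k \<in> set md \<Longrightarrow> l \<in> set lo \<Longrightarrow> k \<noteq> l" using lomd by blast
  have himd: "\<And>k l. k \<in> set hi \<Longrightarrow> l \<in> set md \<Longrightarrow> k \<noteq> l" using mdhi by blast
  have L: "Dn i u \<odot> g i \<odot> Up i ui \<odot> Dn j ui \<odot> g j \<odot> Up j uij
      = pr (map B md) \<odot> pr (map A lo) \<odot> pr (map B lo) \<odot> g j \<odot> g i \<odot> pr (map A' hi) \<odot> pr (map B'' hi) \<odot> pr (map A' md)"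
  proof -
    have L1: "pr (map A' md) \<odot> pr (map B md) = pr (map (\<lambda>k. A' k \<odot> B k) md)"
      using dmd CBA by (intro interleave) (auto simp: A'_def B_def)
    have L2: "A' j \<odot> pr (map (\<lambda>k. A' k \<odot> B k) md) = pr (map (\<lambda>k. B k \<odot> A' k) md) \<odot> A' j"
    proof (rule pass_block)
      fix k assume k: "k \<in> set md"
      show "A' j \<odot> (A' k \<odot> B k) = (B k \<odot> A' k) \<odot> A' j"
        using YB[of i j k "dn (u i)" "u j" "u k"] okY1[of k] k ir jr ij' rng[of k] md_set
        by (auto simp: A'_def B_def)
    qed (simp add: A'_def)
    have L3: "A' j \<odot> r j i (u j) (dn (u i)) = e"
      using U[OF ir jr ij' okU1] by (simp add: A'_def)
    have L4: "pr (map (\<lambda>k. B k \<odot> A' k) md) = pr (map B md) \<odot> pr (map A' md)"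
      using dmd CAB by (intro interleave[symmetric]) (auto simp: A'_def B_def)
    have mid: "A' j \<odot> pr (map A' md) \<odot> pr (map B md) \<odot> r j i (u j) (dn (u i))
             = pr (map B md) \<odot> pr (map A' md)"
    proof -
      have "A' j \<odot> pr (map A' md) \<odot> pr (map B md) \<odot> r j i (u j) (dn (u i))
          = (A' j \<odot> pr (map (\<lambda>k. A' k \<odot> B k) md)) \<odot> r j i (u j) (dn (u i))"
        using ext1[OF L1] by simp
      also have "\<dots> = pr (map (\<lambda>k. B k \<odot> A' k) md) \<odot> (A' j \<odot> r j i (u j) (dn (u i)))"
        using L2 by simp
      also have "\<dots> = pr (map B md) \<odot> pr (map A' md)" using L3 L4 by simp
      finally show ?thesis .
    qed
    have "Dn i u \<odot> g i \<odot> Up i ui \<odot> Dn j ui \<odot> g j \<odot> Up j uij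
        = pr (map A lo) \<odot> g i \<odot> pr (map A' hi) \<odot> (A' j \<odot> pr (map A' md) \<odot> pr (map B md) \<odot> r j i (u j) (dn (u i)))
           \<odot> pr (map B lo) \<odot> g j \<odot> pr (map B'' hi)"
      by (simp add: e1 e2 e3 e4)
    also have "\<dots> = pr (map A lo) \<odot> g i \<odot> pr (map A' hi) \<odot> pr (map B md) \<odot> pr (map A' md)
           \<odot> pr (map B lo) \<odot> g j \<odot> pr (map B'' hi)"
      using mid by simp
    also have "\<dots> = pr (map B md) \<odot> pr (map A lo) \<odot> g i \<odot> pr (map A' hi) \<odot> pr (map A' md)
           \<odot> pr (map B lo) \<odot> g j \<odot> pr (map B'' hi)"
    proof -
      have c1: "pr (map A' hi) \<odot> pr (map B md) = pr (map B md) \<odot> pr (map A' hi)"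
        using CAB mdhi himd by (intro comm_blocks) (auto simp: A'_def B_def)
      have c2: "g i \<odot> pr (map B md) = pr (map B md) \<odot> g i"
        using Gi by (intro comm_block) (auto simp: B_def)
      have c3: "pr (map A lo) \<odot> pr (map B md) = pr (map B md) \<odot> pr (map A lo)"
        using CAB lomd mdlo by (intro comm_blocks) (auto simp: A_def B_def)
      show ?thesis using ext2[OF c1] ext2[OF c2] ext2[OF c3] by simp
    qed
    also have "\<dots> = pr (map B md) \<odot> pr (map A lo) \<odot> g i \<odot> pr (map A' hi)
           \<odot> pr (map B lo) \<odot> g j \<odot> pr (map B'' hi) \<odot> pr (map A' md)"
    proof -
      have c1: "pr (map A' md) \<odot> pr (map B lo) = pr (map B lo) \<odot> pr (map A' md)"
        using CAB lomd mdlo by (intro comm_blocks) (auto simp: A'_def B_def)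
      have c2: "pr (map A' md) \<odot> g j = g j \<odot> pr (map A' md)"
        using Gj by (intro comm_block[symmetric]) (auto simp: A'_def)
      have c3: "pr (map A' md) \<odot> pr (map B'' hi) = pr (map B'' hi) \<odot> pr (map A' md)"
        using CAB mdhi himd by (intro comm_blocks) (auto simp: A'_def B''_def)
      show ?thesis using ext2[OF c1] ext2[OF c2] c3 by simp
    qed
    also have "\<dots> = pr (map B md) \<odot> pr (map A lo) \<odot> pr (map B lo) \<odot> g j \<odot> g i \<odot> pr (map A' hi)
           \<odot> pr (map B'' hi) \<odot> pr (map A' md)"
    proof -
      have c1: "pr (map A' hi) \<odot> pr (map B lo) = pr (map B lo) \<odot> pr (map A' hi)"
        using CAB lohi hilo by (intro comm_blocks) (auto simp: A'_def B_def)
      have c2: "g i \<odot> pr (map B lo) = pr (map B lo) \<odot> g i"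
        using Gi by (intro comm_block) (auto simp: B_def)
      have c3: "pr (map A' hi) \<odot> g j = g j \<odot> pr (map A' hi)"
        using Gj by (intro comm_block[symmetric]) (auto simp: A'_def)
      have c4: "g i \<odot> g j = g j \<odot> g i" using GG ir jr ij' by blast
      show ?thesis using ext2[OF c1] ext2[OF c2] ext2[OF c3] ext2[OF c4] by simp
    qed
    finally show ?thesis .
  qed
  have R: "Dn j u \<odot> g j \<odot> Up j uj \<odot> Dn i uj \<odot> g i \<odot> Up i uij
      = pr (map B md) \<odot> pr (map A lo) \<odot> pr (map B lo) \<odot> g j \<odot> g i \<odot> pr (map A' hi) \<odot> pr (map B'' hi) \<odot> pr (map A' md)"
  proof -
    define Aj where "Aj = r i j (u i) (u j)"
    have hj: "r i j (dn (u i)) (dn (u j)) = Aj" by (simp add: Aj_def hom)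
    have "Dn j u \<odot> g j \<odot> Up j uj \<odot> Dn i uj \<odot> g i \<odot> Up i uij
        = pr (map B md) \<odot> B i \<odot> pr (map B lo) \<odot> g j \<odot> pr (map B'' hi) \<odot> pr (map A lo) \<odot> g i
           \<odot> pr (map A' hi) \<odot> Aj \<odot> pr (map A' md)"
      by (simp add: e5 e6 e7 e8 hj)
    also have "\<dots> = pr (map B md) \<odot> B i \<odot> pr (map B lo) \<odot> pr (map A lo) \<odot> g j \<odot> g i \<odot> pr (map B'' hi)
           \<odot> pr (map A' hi) \<odot> Aj \<odot> pr (map A' md)"
    proof -
      have c1: "pr (map B'' hi) \<odot> pr (map A lo) = pr (map A lo) \<odot> pr (map B'' hi)"
        using CBA lohi hilo by (intro comm_blocks) (auto simp: A_def B''_def)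
      have c2: "g j \<odot> pr (map A lo) = pr (map A lo) \<odot> g j"
        using Gj by (intro comm_block) (auto simp: A_def)
      have c3: "pr (map B'' hi) \<odot> g i = g i \<odot> pr (map B'' hi)"
        using Gi by (intro comm_block[symmetric]) (auto simp: B''_def)
      show ?thesis using ext2[OF c1] ext2[OF c2] ext2[OF c3] by simp
    qed
    finally have ch: "Dn j u \<odot> g j \<odot> Up j uj \<odot> Dn i uj \<odot> g i \<odot> Up i uij =
      pr (map B md) \<odot> B i \<odot> pr (map B lo) \<odot> pr (map A lo) \<odot>
      g j \<odot> g i \<odot> pr (map B'' hi) \<odot> pr (map A' hi) \<odot> Aj \<odot> pr (map A' md)" .
    have T1: "pr (map B'' hi) \<odot> pr (map A' hi) \<odot> Aj = Aj \<odot> pr (map A' hi) \<odot> pr (map B'' hi)"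
    proof -
      have i1: "pr (map B'' hi) \<odot> pr (map A' hi) = pr (map (\<lambda>k. B'' k \<odot> A' k) hi)"
        using dhi CAB by (intro interleave) (auto simp: A'_def B''_def)
      have i2: "pr (map (\<lambda>k. B'' k \<odot> A' k) hi) \<odot> Aj = Aj \<odot> pr (map (\<lambda>k. A' k \<odot> B'' k) hi)"
      proof -
        have "Aj \<odot> pr (map (\<lambda>k. A' k \<odot> B'' k) hi) = pr (map (\<lambda>k. B'' k \<odot> A' k) hi) \<odot> Aj"
        proof (rule pass_block)
          fix k assume k: "k \<in> set hi"
          show "Aj \<odot> (A' k \<odot> B'' k) = (B'' k \<odot> A' k) \<odot> Aj"
            using YB[of i j k "dn (u i)" "dn (u j)" "u k"] okY2[of k] k ir jr ij' rng[of k] hi_set hj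
            by (auto simp: A'_def B''_def)
        qed (simp add: Aj_def)
        then show ?thesis by simp
      qed
      have i3: "pr (map (\<lambda>k. A' k \<odot> B'' k) hi) = pr (map A' hi) \<odot> pr (map B'' hi)"
        using dhi CBA by (intro interleave[symmetric]) (auto simp: A'_def B''_def)
      show ?thesis using ext1[OF i1] i2 i3 by simp
    qed
    have T2: "g j \<odot> g i \<odot> Aj = Aj \<odot> g j \<odot> g i"
    proof -
      have c4: "g j \<odot> g i = g i \<odot> g j" using GG ir jr ij' by blast
      have "(g i \<odot> g j) \<odot> Aj = Aj \<odot> (g i \<odot> g j)" unfolding Aj_def using GC2 ir jr ij' by blast
      then have "(g j \<odot> g i) \<odot> Aj = Aj \<odot> (g j \<odot> g i)" using c4 by simp
      then show ?thesis by simp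
    qed
    have T3: "B i \<odot> pr (map B lo) \<odot> pr (map A lo) \<odot> Aj = pr (map A lo) \<odot> pr (map B lo)"
    proof -
      have i1: "pr (map B lo) \<odot> pr (map A lo) = pr (map (\<lambda>k. B k \<odot> A k) lo)"
        using dlo CAB by (intro interleave) (auto simp: A_def B_def)
      have i2: "pr (map (\<lambda>k. B k \<odot> A k) lo) \<odot> Aj = Aj \<odot> pr (map (\<lambda>k. A k \<odot> B k) lo)"
      proof -
        have "Aj \<odot> pr (map (\<lambda>k. A k \<odot> B k) lo) = pr (map (\<lambda>k. B k \<odot> A k) lo) \<odot> Aj"
        proof (rule pass_block)
          fix k assume k: "k \<in> set lo"
          show "Aj \<odot> (A k \<odot> B k) = (B k \<odot> A k) \<odot> Aj"
            using YB[of i j k "u i" "u j" "u k"] okY3[of k] k ir jr ij' rng[of k] lo_set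
            by (auto simp: A_def B_def Aj_def)
        qed (simp add: Aj_def)
        then show ?thesis by simp
      qed
      have i3: "pr (map (\<lambda>k. A k \<odot> B k) lo) = pr (map A lo) \<odot> pr (map B lo)"
        using dlo CBA by (intro interleave[symmetric]) (auto simp: A_def B_def)
      have u: "B i \<odot> Aj = e" using U[OF jr ir ij'[symmetric] okU2] by (simp add: B_def Aj_def)
      have "B i \<odot> pr (map B lo) \<odot> pr (map A lo) \<odot> Aj = B i \<odot> (pr (map (\<lambda>k. B k \<odot> A k) lo) \<odot> Aj)"
        using ext1[OF i1] by simp
      also have "\<dots> = (B i \<odot> Aj) \<odot> pr (map (\<lambda>k. A k \<odot> B k) lo)" using i2 by simp
      also have "\<dots> = pr (map A lo) \<odot> pr (map B lo)" using u i3 by simp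
      finally show ?thesis .
    qed
    have T1': "\<And>z. pr (map B'' hi) \<odot> pr (map A' hi) \<odot> Aj \<odot> z = Aj \<odot> pr (map A' hi) \<odot> pr (map B'' hi) \<odot> z"
      using tailI[OF T1] by simp
    have T2': "\<And>z. g j \<odot> g i \<odot> Aj \<odot> z = Aj \<odot> g j \<odot> g i \<odot> z"
      using tailI[OF T2] by simp
    have T3': "\<And>z. B i \<odot> pr (map B lo) \<odot> pr (map A lo) \<odot> Aj \<odot> z = pr (map A lo) \<odot> pr (map B lo) \<odot> z"
      using tailI[OF T3] by simp
    show ?thesis unfolding ch by (simp only: T1' T2' T3')
  qed
  show ?thesis using L R by simp
qed

end


locale qgens = gens +
  fixes P :: "nat \<Rightarrow> 'x \<Rightarrow> 'a" and G :: 'a and good :: "'x \<Rightarrow> bool"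
  assumes P_M[simp]: "P k X \<in> M" and G_M[simp]: "G \<in> M"
    and P1_comm: "3 \<le> j \<Longrightarrow> j < n \<Longrightarrow> s j \<odot> P 1 X = P 1 X \<odot> s j"
    and P_far: "1 \<le> k \<Longrightarrow> k + 1 < l \<Longrightarrow> l < n \<Longrightarrow> P k X \<odot> P l Y = P l Y \<odot> P k X"
    and cp: "good X \<Longrightarrow> 1 \<le> k \<Longrightarrow> k + 1 < n \<Longrightarrow> P (k+1) X \<odot> s k \<odot> s (k+1) = s k \<odot> s (k+1) \<odot> P k X"
    and G_comm: "2 \<le> j \<Longrightarrow> j < n \<Longrightarrow> s j \<odot> G = G \<odot> s j"
    and G_P: "2 \<le> k \<Longrightarrow> k < n \<Longrightarrow> G \<odot> P k X = P k X \<odot> G"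
begin

definition xr :: "nat \<Rightarrow> nat \<Rightarrow> 'x \<Rightarrow> 'a" where "xr a b X = xb a b (P 1 X)"
definition gg :: "nat \<Rightarrow> 'a" where "gg a = fd 1 a \<odot> G \<odot> fa 1 a"

lemma xr_M[simp]: "xr a b X \<in> M" by (simp add: xr_def)
lemma gg_M[simp]: "gg a \<in> M" by (simp add: gg_def)

lemma conj_mult: "1 \<le> k \<Longrightarrow> k < n \<Longrightarrow> y \<in> M \<Longrightarrow>
   s k \<odot> (x \<odot> y) \<odot> s k = (s k \<odot> x \<odot> s k) \<odot> (s k \<odot> y \<odot> s k)"
  by (simp add: s_inv2)

lemma P1c: "3 \<le> j \<Longrightarrow> j < n \<Longrightarrow> s j \<odot> P (Suc 0) X = P (Suc 0) X \<odot> s j"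
  using P1_comm by simp

lemma conj_comm: "1 \<le> k \<Longrightarrow> k < n \<Longrightarrow> x \<in> M \<Longrightarrow> y \<in> M \<Longrightarrow> x \<odot> y = y \<odot> x \<Longrightarrow>
   (s k \<odot> x \<odot> s k) \<odot> (s k \<odot> y \<odot> s k) = (s k \<odot> y \<odot> s k) \<odot> (s k \<odot> x \<odot> s k)"
proof -
  assume a: "1 \<le> k" "k < n" "x \<in> M" "y \<in> M" "x \<odot> y = y \<odot> x"
  have t: "x \<odot> (y \<odot> s k) = y \<odot> (x \<odot> s k)" using tailI[OF a(5), of "s k"] by simp
  have "(s k \<odot> x \<odot> s k) \<odot> (s k \<odot> y \<odot> s k) = s k \<odot> (x \<odot> (y \<odot> s k))" using a by (simp add: s_inv2)
  also have "\<dots> = s k \<odot> (y \<odot> (x \<odot> s k))" using t by simp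
  also have "\<dots> = (s k \<odot> y \<odot> s k) \<odot> (s k \<odot> x \<odot> s k)" using a by (simp add: s_inv2)
  finally show ?thesis .
qed

lemma conj_x: "1 \<le> k \<Longrightarrow> k < n \<Longrightarrow> a \<in> {1..n} \<Longrightarrow> b \<in> {1..n} \<Longrightarrow> a \<noteq> b \<Longrightarrow>
   s k \<odot> xr a b X \<odot> s k = xr (sw k a) (sw k b) X"
  unfolding xr_def by (rule conj_xb) (simp_all add: P1c)

lemma conj_x': "1 \<le> k \<Longrightarrow> k < n \<Longrightarrow> a \<in> {1..n} \<Longrightarrow> b \<in> {1..n} \<Longrightarrow> a \<noteq> b \<Longrightarrow>
   s k \<odot> xr a b X \<odot> s k \<odot> z = xr (sw k a) (sw k b) X \<odot> z"
  using tailI[OF conj_x] by simp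

lemma conj_g:
  assumes k: "1 \<le> k" "k < n" and a: "a \<in> {1..n}"
  shows "s k \<odot> gg a \<odot> s k = gg (sw k a)"
proof -
  have W: "fd 1 a \<odot> fa 1 a = e" "fa 1 a \<odot> fd 1 a = e" using a by (auto simp: fd_fa fa_fd)
  have gen: "\<And>a2 u. 1 \<le> a2 \<Longrightarrow> a2 \<le> n \<Longrightarrow> u \<odot> u = e \<Longrightarrow> u \<in> M \<Longrightarrow> s k \<odot> fd 1 a = fd 1 a2 \<odot> u \<Longrightarrow>
      s k \<odot> gg a \<odot> s k = fd 1 a2 \<odot> (u \<odot> G \<odot> u) \<odot> fa 1 a2"
  proof -
    fix a2 u assume h: "1 \<le> a2" "a2 \<le> n" "u \<odot> u = e" "u \<in> M" "s k \<odot> fd 1 a = fd 1 a2 \<odot> u"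
    have W2: "fd 1 a2 \<odot> fa 1 a2 = e" "fa 1 a2 \<odot> fd 1 a2 = e" using h by (auto simp: fd_fa fa_fd)
    show "s k \<odot> gg a \<odot> s k = fd 1 a2 \<odot> (u \<odot> G \<odot> u) \<odot> fa 1 a2"
      using conj_gen[OF s_inv[OF k] s_M W _ _ W2 _ _ h(3,4) h(5), of G] by (simp add: gg_def)
  qed
  consider "k + 1 < a" | "k + 1 = a" | "k = a" | "a < k" using a by linarith
  then show ?thesis
  proof cases
    case 1
    have "s k \<odot> gg a \<odot> s k = fd 1 a \<odot> (s (k+1) \<odot> G \<odot> s (k+1)) \<odot> fa 1 a"
      using 1 k a by (intro gen) (auto simp: s_inv fd_shift)
    also have "s (k+1) \<odot> G \<odot> s (k+1) = G"
    proof -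
      have "s (k+1) \<odot> G \<odot> s (k+1) = G \<odot> (s (k+1) \<odot> s (k+1))" using tailI[OF G_comm[of "k+1"]] 1 a k by simp
      then show ?thesis using s_inv[of "k+1"] 1 a k by simp
    qed
    finally show ?thesis using 1 by (simp add: gg_def sw_def)
  next
    case 2
    have "s k \<odot> gg a \<odot> s k = fd 1 (a-1) \<odot> (e \<odot> G \<odot> e) \<odot> fa 1 (a-1)"
      using 2 k a fd_top[of 1 a] by (intro gen) auto
    moreover have "a - 1 = k" using 2 by simp
    ultimately show ?thesis using 2 by (simp add: gg_def sw_def)
  next
    case 3
    have "s k \<odot> gg a \<odot> s k = fd 1 (a+1) \<odot> (e \<odot> G \<odot> e) \<odot> fa 1 (a+1)"
      using 3 k a fd_top2[of 1 a] by (intro gen) auto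
    then show ?thesis using 3 by (simp add: gg_def sw_def)
  next
    case 4
    have "s k \<odot> gg a \<odot> s k = fd 1 a \<odot> (s k \<odot> G \<odot> s k) \<odot> fa 1 a"
      using 4 k a by (intro gen) (auto simp: s_inv fd_comm)
    also have "s k \<odot> G \<odot> s k = G"
    proof -
      have "s k \<odot> G \<odot> s k = G \<odot> (s k \<odot> s k)" using tailI[OF G_comm[of k]] 4 a k by simp
      then show ?thesis using s_inv[of k] 4 a k by simp
    qed
    finally show ?thesis using 4 by (simp add: gg_def sw_def)
  qed
qed

lemma xrP: "good X \<Longrightarrow> 1 \<le> k \<Longrightarrow> k < n \<Longrightarrow> xr k (k+1) X = P k X"
proof (induction k)
  case 0 then show ?case by simp
next
  case (Suc k)
  show ?case
  proof (cases "k = 0")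
    case True
    then show ?thesis by (simp add: xr_def xb_def xbl_def fd_empty fa_empty)
  next
    case False
    then have k: "1 \<le> k" "k + 1 < n" using Suc by auto
    have IH: "xr k (k+1) X = P k X" using Suc k by simp
    have "xr (k+1) (k+2) X = s k \<odot> (s (k+1) \<odot> xr k (k+1) X \<odot> s (k+1)) \<odot> s k"
    proof -
      have "s (k+1) \<odot> xr k (k+1) X \<odot> s (k+1) = xr k (k+2) X"
        using k conj_x[of "k+1" k "k+1" X] by (simp add: sw_def)
      moreover have "s k \<odot> xr k (k+2) X \<odot> s k = xr (k+1) (k+2) X"
        using k conj_x[of k k "k+2" X] by (simp add: sw_def)
      ultimately show ?thesis by simp
    qed
    also have "\<dots> = (s k \<odot> s (k+1) \<odot> P k X) \<odot> s (k+1) \<odot> s k" using IH by simp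
    also have "\<dots> = (P (k+1) X \<odot> s k \<odot> s (k+1)) \<odot> s (k+1) \<odot> s k" using cp[OF Suc.prems(1) k] by simp
    also have "\<dots> = P (k+1) X" using k by (simp add: s_inv2 s_inv)
    finally show ?thesis by simp
  qed
qed

lemma xr13: "n \<ge> 3 \<Longrightarrow> xr 1 3 X = s 2 \<odot> P 1 X \<odot> s 2"
  by (simp add: xr_def xb_def xbl_def fd_empty fa_empty fd_def fa_def numeral_3_eq_3 numeral_2_eq_2)

lemma xr12: "xr 1 2 X = P 1 X"
  by (simp add: xr_def xb_def xbl_def fd_empty fa_empty)

lemma xr21: "xr 2 1 X = s 1 \<odot> P 1 X \<odot> s 1"
  by (simp add: xr_def xb_def xbl_def fd_empty fa_empty)

lemma gg1: "gg 1 = G" by (simp add: gg_def fd_empty fa_empty)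
lemma gg1': "gg (Suc 0) = G" by (simp add: gg_def fd_empty fa_empty)
lemma xr12': "xr (Suc 0) 2 X = P (Suc 0) X"
  by (simp add: xr_def xb_def xbl_def fd_empty fa_empty)
lemma xr21': "xr 2 (Suc 0) X = s (Suc 0) \<odot> P (Suc 0) X \<odot> s (Suc 0)"
  by (simp add: xr_def xb_def xbl_def fd_empty fa_empty)

lemma gg2: "n \<ge> 2 \<Longrightarrow> gg 2 = s 1 \<odot> G \<odot> s 1"
  by (simp add: gg_def fd_def fa_def numeral_2_eq_2)

lemma valid_nth: "valid n m t \<Longrightarrow> i < m \<Longrightarrow> t ! i \<in> {1..n}"
  unfolding valid_def by (metis nth_mem subsetD)

lemma valid_neq: "valid n m t \<Longrightarrow> i < m \<Longrightarrow> j < m \<Longrightarrow> i \<noteq> j \<Longrightarrow> t ! i \<noteq> t ! j"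
  unfolding valid_def by (simp add: nth_eq_iff_index_eq)

lemma comm_orbit:
  assumes X: "good X" and Y: "good Y" and t: "valid n 4 t"
  shows "xr (t!0) (t!1) X \<odot> xr (t!2) (t!3) Y = xr (t!2) (t!3) Y \<odot> xr (t!0) (t!1) X"
proof (rule orbit[where Q = "\<lambda>t. xr (t!0) (t!1) X \<odot> xr (t!2) (t!3) Y = xr (t!2) (t!3) Y \<odot> xr (t!0) (t!1) X"
      and n = n and m = 4, OF _ _ t])
  assume n4: "4 \<le> n"
  have "[Suc 0..<Suc 4] = [1,2,3,4]" by (simp add: upt_rec)
  then show "xr ([Suc 0..<Suc 4]!0) ([Suc 0..<Suc 4]!1) X \<odot> xr ([Suc 0..<Suc 4]!2) ([Suc 0..<Suc 4]!3) Y
     = xr ([Suc 0..<Suc 4]!2) ([Suc 0..<Suc 4]!3) Y \<odot> xr ([Suc 0..<Suc 4]!0) ([Suc 0..<Suc 4]!1) X"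
    using n4 xrP[OF X, of 1] xrP[OF Y, of 3] P_far[of 1 3 X Y] by (simp add: numeral_2_eq_2)
next
  fix k t assume 2: "1 \<le> k" "k < n" "valid n 4 t"
    "xr (t!0) (t!1) X \<odot> xr (t!2) (t!3) Y = xr (t!2) (t!3) Y \<odot> xr (t!0) (t!1) X"
  have rng: "\<And>i. i < 4 \<Longrightarrow> t!i \<in> {1..n}" using 2 valid_nth by blast
  have nq: "\<And>i j. i < 4 \<Longrightarrow> j < 4 \<Longrightarrow> i \<noteq> j \<Longrightarrow> t!i \<noteq> t!j" using 2 valid_neq by blast
  have lt: "length t = 4" using 2 by (simp add: valid_def)
  have "(s k \<odot> xr (t!0) (t!1) X \<odot> s k) \<odot> (s k \<odot> xr (t!2) (t!3) Y \<odot> s k)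
           = (s k \<odot> xr (t!2) (t!3) Y \<odot> s k) \<odot> (s k \<odot> xr (t!0) (t!1) X \<odot> s k)"
    using 2 by (intro conj_comm) auto
  then show "xr (map (sw k) t!0) (map (sw k) t!1) X \<odot> xr (map (sw k) t!2) (map (sw k) t!3) Y
     = xr (map (sw k) t!2) (map (sw k) t!3) Y \<odot> xr (map (sw k) t!0) (map (sw k) t!1) X"
    using 2 rng nq lt by (simp add: conj_x conj_x')
qed


lemma conj2: "x \<odot> y = x' \<odot> y' \<Longrightarrow> 1 \<le> k \<Longrightarrow> k < n \<Longrightarrow> y \<in> M \<Longrightarrow> y' \<in> M \<Longrightarrow>
   (s k \<odot> x \<odot> s k) \<odot> (s k \<odot> y \<odot> s k) = (s k \<odot> x' \<odot> s k) \<odot> (s k \<odot> y' \<odot> s k)"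
proof -
  assume a: "x \<odot> y = x' \<odot> y'" "1 \<le> k" "k < n" "y \<in> M" "y' \<in> M"
  have t: "x \<odot> (y \<odot> s k) = x' \<odot> (y' \<odot> s k)" using tailI[OF a(1), of "s k"] by simp
  show ?thesis using a t by (simp add: s_inv2)
qed

lemma conj3: "x \<odot> y \<odot> z = x' \<odot> y' \<odot> z' \<Longrightarrow> 1 \<le> k \<Longrightarrow> k < n \<Longrightarrow> y \<in> M \<Longrightarrow> y' \<in> M \<Longrightarrow> z \<in> M \<Longrightarrow> z' \<in> M \<Longrightarrow>
   (s k \<odot> x \<odot> s k) \<odot> (s k \<odot> y \<odot> s k) \<odot> (s k \<odot> z \<odot> s k)
   = (s k \<odot> x' \<odot> s k) \<odot> (s k \<odot> y' \<odot> s k) \<odot> (s k \<odot> z' \<odot> s k)"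
proof -
  assume a: "x \<odot> y \<odot> z = x' \<odot> y' \<odot> z'" "1 \<le> k" "k < n" "y \<in> M" "y' \<in> M" "z \<in> M" "z' \<in> M"
  have t: "x \<odot> (y \<odot> (z \<odot> s k)) = x' \<odot> (y' \<odot> (z' \<odot> s k))" using tailI[OF a(1), of "s k"] by simp
  show ?thesis using a t by (simp add: s_inv2)
qed

lemma conjU: "x \<odot> y = e \<Longrightarrow> 1 \<le> k \<Longrightarrow> k < n \<Longrightarrow> y \<in> M \<Longrightarrow>
   (s k \<odot> x \<odot> s k) \<odot> (s k \<odot> y \<odot> s k) = e"
proof -
  assume a: "x \<odot> y = e" "1 \<le> k" "k < n" "y \<in> M"
  have t: "x \<odot> (y \<odot> s k) = s k" using tailI[OF a(1), of "s k"] by simp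
  show ?thesis using a t by (simp add: s_inv2 s_inv)
qed

lemma conj_x_sym: "1 \<le> k \<Longrightarrow> k < n \<Longrightarrow> a \<in> {1..n} \<Longrightarrow> b \<in> {1..n} \<Longrightarrow> a \<noteq> b \<Longrightarrow>
   xr (sw k a) (sw k b) X = s k \<odot> xr a b X \<odot> s k"
  using conj_x by simp

lemma conj_g_sym: "1 \<le> k \<Longrightarrow> k < n \<Longrightarrow> a \<in> {1..n} \<Longrightarrow> gg (sw k a) = s k \<odot> gg a \<odot> s k"
  using conj_g by simp

lemma gc1_orbit:
  assumes X: "good X" and t: "valid n 3 t"
  shows "gg (t!0) \<odot> xr (t!1) (t!2) X = xr (t!1) (t!2) X \<odot> gg (t!0)"
proof (rule orbit[where Q = "\<lambda>t. gg (t!0) \<odot> xr (t!1) (t!2) X = xr (t!1) (t!2) X \<odot> gg (t!0)"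
      and n = n and m = 3, OF _ _ t])
  assume n3: "3 \<le> n"
  have "[Suc 0..<Suc 3] = [1,2,3]" by (simp add: upt_rec)
  then show "gg ([Suc 0..<Suc 3]!0) \<odot> xr ([Suc 0..<Suc 3]!1) ([Suc 0..<Suc 3]!2) X
     = xr ([Suc 0..<Suc 3]!1) ([Suc 0..<Suc 3]!2) X \<odot> gg ([Suc 0..<Suc 3]!0)"
  proof -
    have a: "xr 2 3 X = P 2 X" using xrP[OF X, of 2] n3 by simp
    have b: "G \<odot> P 2 X = P 2 X \<odot> G" using G_P[of 2 X] n3 by simp
    show ?thesis using a b \<open>[Suc 0..<Suc 3] = [1,2,3]\<close> by (simp add: gg1')
  qed
next
  fix k t assume 2: "1 \<le> k" "k < n" "valid n 3 t"
    "gg (t!0) \<odot> xr (t!1) (t!2) X = xr (t!1) (t!2) X \<odot> gg (t!0)"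
  have rng: "\<And>i. i < 3 \<Longrightarrow> t!i \<in> {1..n}" using 2 valid_nth by blast
  have nq: "\<And>i j. i < 3 \<Longrightarrow> j < 3 \<Longrightarrow> i \<noteq> j \<Longrightarrow> t!i \<noteq> t!j" using 2 valid_neq by blast
  have lt: "length t = 3" using 2 by (simp add: valid_def)
  have e1: "xr (sw k (t!1)) (sw k (t!2)) X = s k \<odot> xr (t!1) (t!2) X \<odot> s k"
    using 2 rng nq by (intro conj_x_sym) auto
  have e2: "gg (sw k (t!0)) = s k \<odot> gg (t!0) \<odot> s k"
    using 2 rng by (intro conj_g_sym) auto
  have "gg (sw k (t!0)) \<odot> xr (sw k (t!1)) (sw k (t!2)) X = xr (sw k (t!1)) (sw k (t!2)) X \<odot> gg (sw k (t!0))"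
    unfolding e1 e2 by (rule conj2[OF 2(4)]) (use 2 in simp_all)
  then show "gg (map (sw k) t!0) \<odot> xr (map (sw k) t!1) (map (sw k) t!2) X
     = xr (map (sw k) t!1) (map (sw k) t!2) X \<odot> gg (map (sw k) t!0)"
    using lt by simp
qed

lemma gc2_orbit:
  assumes base: "2 \<le> n \<Longrightarrow> (G \<odot> gg 2) \<odot> P 1 X = P 1 X \<odot> (G \<odot> gg 2)" and t: "valid n 2 t"
  shows "(gg (t!0) \<odot> gg (t!1)) \<odot> xr (t!0) (t!1) X = xr (t!0) (t!1) X \<odot> (gg (t!0) \<odot> gg (t!1))"
proof (rule orbit[where Q = "\<lambda>t. (gg (t!0) \<odot> gg (t!1)) \<odot> xr (t!0) (t!1) X = xr (t!0) (t!1) X \<odot> (gg (t!0) \<odot> gg (t!1))"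
      and n = n and m = 2, OF _ _ t])
  assume n2: "2 \<le> n"
  have "[Suc 0..<Suc 2] = [1,2]" by (simp add: upt_rec)
  then show "(gg ([Suc 0..<Suc 2]!0) \<odot> gg ([Suc 0..<Suc 2]!1)) \<odot> xr ([Suc 0..<Suc 2]!0) ([Suc 0..<Suc 2]!1) X
     = xr ([Suc 0..<Suc 2]!0) ([Suc 0..<Suc 2]!1) X \<odot> (gg ([Suc 0..<Suc 2]!0) \<odot> gg ([Suc 0..<Suc 2]!1))"
    using n2 base by (simp add: gg1' xr12')
next
  fix k t assume 2: "1 \<le> k" "k < n" "valid n 2 t"
    "(gg (t!0) \<odot> gg (t!1)) \<odot> xr (t!0) (t!1) X = xr (t!0) (t!1) X \<odot> (gg (t!0) \<odot> gg (t!1))"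
  have rng: "\<And>i. i < 2 \<Longrightarrow> t!i \<in> {1..n}" using 2 valid_nth by blast
  have nq: "t!0 \<noteq> t!1" using 2 valid_neq[of 2 t 0 1] by simp
  have lt: "length t = 2" using 2 by (simp add: valid_def)
  have e1: "xr (sw k (t!0)) (sw k (t!1)) X = s k \<odot> xr (t!0) (t!1) X \<odot> s k"
    using 2 rng nq by (intro conj_x_sym) auto
  have e2: "gg (sw k (t!0)) = s k \<odot> gg (t!0) \<odot> s k" "gg (sw k (t!1)) = s k \<odot> gg (t!1) \<odot> s k"
    using 2 rng by (intro conj_g_sym; auto)+
  have h: "gg (t!0) \<odot> gg (t!1) \<odot> xr (t!0) (t!1) X = xr (t!0) (t!1) X \<odot> gg (t!0) \<odot> gg (t!1)"
    using 2(4) by simp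
  have "gg (sw k (t!0)) \<odot> gg (sw k (t!1)) \<odot> xr (sw k (t!0)) (sw k (t!1)) X
      = xr (sw k (t!0)) (sw k (t!1)) X \<odot> gg (sw k (t!0)) \<odot> gg (sw k (t!1))"
    unfolding e1 e2 by (rule conj3[OF h]) (use 2 in simp_all)
  then show "(gg (map (sw k) t!0) \<odot> gg (map (sw k) t!1)) \<odot> xr (map (sw k) t!0) (map (sw k) t!1) X
     = xr (map (sw k) t!0) (map (sw k) t!1) X \<odot> (gg (map (sw k) t!0) \<odot> gg (map (sw k) t!1))"
    using lt by simp
qed

lemma u_orbit:
  assumes base: "2 \<le> n \<Longrightarrow> P 1 X \<odot> (s 1 \<odot> P 1 Y \<odot> s 1) = e" and t: "valid n 2 t"
  shows "xr (t!0) (t!1) X \<odot> xr (t!1) (t!0) Y = e"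
proof (rule orbit[where Q = "\<lambda>t. xr (t!0) (t!1) X \<odot> xr (t!1) (t!0) Y = e"
      and n = n and m = 2, OF _ _ t])
  assume n2: "2 \<le> n"
  have "[Suc 0..<Suc 2] = [1,2]" by (simp add: upt_rec)
  then show "xr ([Suc 0..<Suc 2]!0) ([Suc 0..<Suc 2]!1) X \<odot> xr ([Suc 0..<Suc 2]!1) ([Suc 0..<Suc 2]!0) Y = e"
    using n2 base by (simp add: xr12' xr21')
next
  fix k t assume 2: "1 \<le> k" "k < n" "valid n 2 t"
    "xr (t!0) (t!1) X \<odot> xr (t!1) (t!0) Y = e"
  have rng: "\<And>i. i < 2 \<Longrightarrow> t!i \<in> {1..n}" using 2 valid_nth by blast
  have nq: "t!0 \<noteq> t!1" using 2 valid_neq[of 2 t 0 1] by simp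
  have lt: "length t = 2" using 2 by (simp add: valid_def)
  have e1: "xr (sw k (t!0)) (sw k (t!1)) X = s k \<odot> xr (t!0) (t!1) X \<odot> s k"
    using 2 rng nq by (intro conj_x_sym) auto
  have e2: "xr (sw k (t!1)) (sw k (t!0)) Y = s k \<odot> xr (t!1) (t!0) Y \<odot> s k"
    using 2 rng nq by (intro conj_x_sym) auto
  have "xr (sw k (t!0)) (sw k (t!1)) X \<odot> xr (sw k (t!1)) (sw k (t!0)) Y = e"
    unfolding e1 e2 by (rule conjU[OF 2(4)]) (use 2 in simp_all)
  then show "xr (map (sw k) t!0) (map (sw k) t!1) X \<odot> xr (map (sw k) t!1) (map (sw k) t!0) Y = e"
    using lt by simp
qed

lemma yb_orbit:
  assumes X3: "good X3"
    and base: "3 \<le> n \<Longrightarrow> P 1 X1 \<odot> (s 2 \<odot> P 1 X2 \<odot> s 2) \<odot> P 2 X3 = P 2 X3 \<odot> (s 2 \<odot> P 1 X2 \<odot> s 2) \<odot> P 1 X1"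
    and t: "valid n 3 t"
  shows "xr (t!0) (t!1) X1 \<odot> xr (t!0) (t!2) X2 \<odot> xr (t!1) (t!2) X3
       = xr (t!1) (t!2) X3 \<odot> xr (t!0) (t!2) X2 \<odot> xr (t!0) (t!1) X1"
proof (rule orbit[where Q = "\<lambda>t. xr (t!0) (t!1) X1 \<odot> xr (t!0) (t!2) X2 \<odot> xr (t!1) (t!2) X3
       = xr (t!1) (t!2) X3 \<odot> xr (t!0) (t!2) X2 \<odot> xr (t!0) (t!1) X1"
      and n = n and m = 3, OF _ _ t])
  assume n3: "3 \<le> n"
  have "[Suc 0..<Suc 3] = [1,2,3]" by (simp add: upt_rec)
  moreover have "xr 2 3 X3 = P 2 X3" using xrP[OF X3, of 2] n3 by simp
  moreover have "xr 1 3 X2 = s 2 \<odot> P 1 X2 \<odot> s 2" using xr13 n3 by simp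
  ultimately show "xr ([Suc 0..<Suc 3]!0) ([Suc 0..<Suc 3]!1) X1 \<odot> xr ([Suc 0..<Suc 3]!0) ([Suc 0..<Suc 3]!2) X2
         \<odot> xr ([Suc 0..<Suc 3]!1) ([Suc 0..<Suc 3]!2) X3
       = xr ([Suc 0..<Suc 3]!1) ([Suc 0..<Suc 3]!2) X3 \<odot> xr ([Suc 0..<Suc 3]!0) ([Suc 0..<Suc 3]!2) X2
         \<odot> xr ([Suc 0..<Suc 3]!0) ([Suc 0..<Suc 3]!1) X1"
    using n3 base by (simp add: xr12')
next
  fix k t assume 2: "1 \<le> k" "k < n" "valid n 3 t"
    "xr (t!0) (t!1) X1 \<odot> xr (t!0) (t!2) X2 \<odot> xr (t!1) (t!2) X3
       = xr (t!1) (t!2) X3 \<odot> xr (t!0) (t!2) X2 \<odot> xr (t!0) (t!1) X1"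
  have rng: "\<And>i. i < 3 \<Longrightarrow> t!i \<in> {1..n}" using 2 valid_nth by blast
  have nq: "\<And>i j. i < 3 \<Longrightarrow> j < 3 \<Longrightarrow> i \<noteq> j \<Longrightarrow> t!i \<noteq> t!j" using 2 valid_neq by blast
  have lt: "length t = 3" using 2 by (simp add: valid_def)
  have e1: "xr (sw k (t!0)) (sw k (t!1)) X1 = s k \<odot> xr (t!0) (t!1) X1 \<odot> s k"
    using 2 rng nq by (intro conj_x_sym) auto
  have e2: "xr (sw k (t!0)) (sw k (t!2)) X2 = s k \<odot> xr (t!0) (t!2) X2 \<odot> s k"
    using 2 rng nq by (intro conj_x_sym) auto
  have e3: "xr (sw k (t!1)) (sw k (t!2)) X3 = s k \<odot> xr (t!1) (t!2) X3 \<odot> s k"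
    using 2 rng nq by (intro conj_x_sym) auto
  have "xr (sw k (t!0)) (sw k (t!1)) X1 \<odot> xr (sw k (t!0)) (sw k (t!2)) X2 \<odot> xr (sw k (t!1)) (sw k (t!2)) X3
       = xr (sw k (t!1)) (sw k (t!2)) X3 \<odot> xr (sw k (t!0)) (sw k (t!2)) X2 \<odot> xr (sw k (t!0)) (sw k (t!1)) X1"
    unfolding e1 e2 e3 by (rule conj3[OF 2(4)]) (use 2 in simp_all)
  then show "xr (map (sw k) t!0) (map (sw k) t!1) X1 \<odot> xr (map (sw k) t!0) (map (sw k) t!2) X2
         \<odot> xr (map (sw k) t!1) (map (sw k) t!2) X3
       = xr (map (sw k) t!1) (map (sw k) t!2) X3 \<odot> xr (map (sw k) t!0) (map (sw k) t!2) X2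
         \<odot> xr (map (sw k) t!0) (map (sw k) t!1) X1"
    using lt by simp
qed

end


section \<open>Concrete model\<close>

definition Mn :: "nat \<Rightarrow> nat \<Rightarrow> op set" where "Mn N n = {A. nrm N n A = A}"

definition PP :: "nat \<Rightarrow> nat \<Rightarrow> nat \<Rightarrow> op \<Rightarrow> op" where
  "PP N n k X = nrm N n (place2 k X)"

definition GG :: "nat \<Rightarrow> nat \<Rightarrow> (nat \<Rightarrow> nat \<Rightarrow> complex) \<Rightarrow> op" where
  "GG N n g = nrm N n (place1 g)"

lemma mon_mm: "mon (mm N n) (one N n) (Mn N n)"
  by unfold_locales (auto simp: Mn_def mm_assoc)

lemma nrm_PP[simp]: "nrm N n (PP N n k X) = PP N n k X" by (simp add: PP_def)
lemma nrm_GG[simp]: "nrm N n (GG N n g) = GG N n g" by (simp add: GG_def)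
lemma PP_Mn[simp]: "PP N n k X \<in> Mn N n" by (simp add: Mn_def)
lemma GG_Mn[simp]: "GG N n g \<in> Mn N n" by (simp add: Mn_def)
lemma mm_Mn[simp]: "mm N n A B \<in> Mn N n" by (simp add: Mn_def)
lemma one_Mn[simp]: "one N n \<in> Mn N n" by (simp add: Mn_def)
lemma nrm_Mn[simp]: "nrm N n A \<in> Mn N n" by (simp add: Mn_def)

lemma PP_emb: "1 \<le> k \<Longrightarrow> k + 1 \<le> n \<Longrightarrow> PP N n k X = nrm N n (emb n (k-1) 2 X)"
  unfolding PP_def by (rule place2_emb)

lemma PP_mul: "1 \<le> k \<Longrightarrow> k + 1 \<le> n \<Longrightarrow> mm N n (PP N n k X) (PP N n k Y) = PP N n k (opmul N 2 X Y)"
  by (simp add: PP_emb emb_mul)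

lemma PP_opeq: "1 \<le> k \<Longrightarrow> k + 1 \<le> n \<Longrightarrow> opeq N 2 X Y \<Longrightarrow> PP N n k X = PP N n k Y"
  by (simp add: PP_emb emb_opeq)

lemma PP_id: "1 \<le> k \<Longrightarrow> k + 1 \<le> n \<Longrightarrow> PP N n k opid = one N n"
  by (simp add: PP_emb emb_id)

lemma if_add0: "(if b then x + y else (0::complex)) = (if b then x else 0) + (if b then y else 0)"
  by simp

lemma if_scale0: "(if b then c * x else (0::complex)) = c * (if b then x else 0)"
  by simp

lemma place2_add: "place2 k (opadd X Y) = opadd (place2 k X) (place2 k Y)"
  by (intro ext) (simp only: place2_def opadd_def if_add0)

lemma place2_scale: "place2 k (opscale c X) = opscale c (place2 k X)"
  by (intro ext) (simp only: place2_def opscale_def if_scale0)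

lemma PP_add: "PP N n k (opadd X Y) = opadd (PP N n k X) (PP N n k Y)"
  by (simp add: PP_def place2_add nrm_add)

lemma PP_scale: "PP N n k (opscale c X) = opscale c (PP N n k X)"
  by (simp add: PP_def place2_scale nrm_scale)

lemma PP_comm: "1 \<le> k \<Longrightarrow> k + 1 < l \<Longrightarrow> l + 1 \<le> n \<Longrightarrow>
   mm N n (PP N n k X) (PP N n l Y) = mm N n (PP N n l Y) (PP N n k X)"
proof -
  assume a: "1 \<le> k" "k + 1 < l" "l + 1 \<le> n"
  have "mm N n (emb n (k-1) 2 X) (emb n (l-1) 2 Y) = mm N n (emb n (l-1) 2 Y) (emb n (k-1) 2 X)"
    using a by (intro emb_comm) auto
  then show ?thesis using a by (simp add: PP_emb)
qed

lemma GG_emb: "1 \<le> n \<Longrightarrow> GG N n g = nrm N n (emb n 0 1 (\<lambda>a b. g (a!0) (b!0)))"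
  unfolding GG_def by (rule place1_emb)

lemma GG_comm: "2 \<le> k \<Longrightarrow> k + 1 \<le> n \<Longrightarrow> mm N n (GG N n g) (PP N n k X) = mm N n (PP N n k X) (GG N n g)"
proof -
  assume a: "2 \<le> k" "k + 1 \<le> n"
  have "mm N n (emb n 0 1 (\<lambda>a b. g (a!0) (b!0))) (emb n (k-1) 2 X) = mm N n (emb n (k-1) 2 X) (emb n 0 1 (\<lambda>a b. g (a!0) (b!0)))"
    using a by (intro emb_comm) auto
  then show ?thesis using a by (simp add: PP_emb GG_emb)
qed

lemma emb3_mul: "j + 3 \<le> n \<Longrightarrow>
   nrm N n (emb n j 3 (opmul N 3 A B)) = mm N n (nrm N n (emb n j 3 A)) (nrm N n (emb n j 3 B))"
  by (simp add: emb_mul)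

lemma emb3_p1: "1 \<le> k \<Longrightarrow> k + 2 \<le> n \<Longrightarrow> nrm N n (emb n (k-1) 3 (place2 1 X)) = PP N n k X"
  using emb3_place[of "k-1" n 1 N X] by (simp add: PP_emb)

lemma emb3_p2: "1 \<le> k \<Longrightarrow> k + 2 \<le> n \<Longrightarrow> nrm N n (emb n (k-1) 3 (place2 2 X)) = PP N n (k+1) X"
  using emb3_place[of "k-1" n 2 N X] by (simp add: PP_emb)

lemma emb3_p1': "1 \<le> k \<Longrightarrow> Suc k < n \<Longrightarrow> nrm N n (emb n (k - Suc 0) 3 (place2 (Suc 0) X)) = PP N n k X"
  using emb3_p1[of k n N X] by simp

lemma emb3_p2': "1 \<le> k \<Longrightarrow> Suc k < n \<Longrightarrow> nrm N n (emb n (k - Suc 0) 3 (place2 2 X)) = PP N n (Suc k) X"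
  using emb3_p2[of k n N X] by simp

lemma emb3_prod: "j + 3 \<le> n \<Longrightarrow>
   nrm N n (emb n j 3 (opprod N 3 L)) = foldr (mm N n) (map (\<lambda>A. nrm N n (emb n j 3 A)) L) (one N n)"
proof (induction L)
  case Nil then show ?case by (simp add: opprod_def emb_id)
next
  case (Cons A L)
  have "nrm N n (emb n j 3 (opprod N 3 (A # L))) = mm N n (nrm N n (emb n j 3 A)) (nrm N n (emb n j 3 (opprod N 3 L)))"
    using Cons.prems by (simp add: opprod_def emb3_mul)
  then show ?case using Cons by simp
qed

lemma lift3:
  assumes "1 \<le> k" "k + 2 \<le> n" "opeq N 3 A B"
  shows "nrm N n (emb n (k-1) 3 A) = nrm N n (emb n (k-1) 3 B)"
  using assms by (intro emb_opeq) auto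

lemma s_inv_c:
  assumes "involutive_symmetry N F" "1 \<le> k" "k < n"
  shows "mm N n (PP N n k F) (PP N n k F) = one N n"
proof -
  have "opeq N 2 (opmul N 2 F F) opid" using assms by (simp add: involutive_symmetry_def)
  then show ?thesis using assms by (simp add: PP_mul PP_id PP_opeq[of k n N _ opid])
qed

lemma s_braid_c:
  assumes "braiding N F" "1 \<le> k" "k + 1 < n"
  shows "mm N n (PP N n k F) (mm N n (PP N n (k+1) F) (PP N n k F))
       = mm N n (PP N n (k+1) F) (mm N n (PP N n k F) (PP N n (k+1) F))"
proof -
  have "opeq N 3 (opmul N 3 (place2 1 F) (opmul N 3 (place2 2 F) (place2 1 F)))
              (opmul N 3 (place2 2 F) (opmul N 3 (place2 1 F) (place2 2 F)))"
    using assms by (simp add: braiding_def)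
  from lift3[of k n, OF assms(2) _ this] assms show ?thesis
    by (simp add: emb3_mul emb3_p1' emb3_p2' del: mm_nrm_l mm_nrm_r)
qed

lemma compat_c:
  assumes "compatible N X F" "1 \<le> k" "k + 1 < n"
  shows "mm N n (PP N n k X) (mm N n (PP N n (k+1) F) (PP N n k F))
       = mm N n (PP N n (k+1) F) (mm N n (PP N n k F) (PP N n (k+1) X))"
    and "mm N n (PP N n (k+1) X) (mm N n (PP N n k F) (PP N n (k+1) F))
       = mm N n (PP N n k F) (mm N n (PP N n (k+1) F) (PP N n k X))"
proof -
  have c1: "opeq N 3 (opprod N 3 [place2 1 X, place2 2 F, place2 1 F])
              (opprod N 3 [place2 2 F, place2 1 F, place2 2 X])"
   and c2: "opeq N 3 (opprod N 3 [place2 2 X, place2 1 F, place2 2 F])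
              (opprod N 3 [place2 1 F, place2 2 F, place2 1 X])"
    using assms by (auto simp: compatible_def)
  from lift3[of k n, OF assms(2) _ c1] assms show "mm N n (PP N n k X) (mm N n (PP N n (k+1) F) (PP N n k F))
       = mm N n (PP N n (k+1) F) (mm N n (PP N n k F) (PP N n (k+1) X))"
    by (simp add: emb3_prod emb3_p1' emb3_p2' del: mm_nrm_l mm_nrm_r)
  from lift3[of k n, OF assms(2) _ c2] assms show "mm N n (PP N n (k+1) X) (mm N n (PP N n k F) (PP N n (k+1) F))
       = mm N n (PP N n k F) (mm N n (PP N n (k+1) F) (PP N n k X))"
    by (simp add: emb3_prod emb3_p1' emb3_p2' del: mm_nrm_l mm_nrm_r)
qed

definition goodn :: "nat \<Rightarrow> nat \<Rightarrow> op \<Rightarrow> op \<Rightarrow> bool" where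
  "goodn N n F X \<longleftrightarrow> (\<forall>k. 1 \<le> k \<and> k + 1 < n \<longrightarrow>
     mm N n (PP N n (k+1) X) (mm N n (PP N n k F) (PP N n (k+1) F))
       = mm N n (PP N n k F) (mm N n (PP N n (k+1) F) (PP N n k X)))"

lemma gens_c:
  assumes "involutive_symmetry N F"
  shows "gens (mm N n) (one N n) (Mn N n) n (\<lambda>k. PP N n k F)"
proof -
  interpret mon "mm N n" "one N n" "Mn N n" by (rule mon_mm)
  have br: "braiding N F" using assms by (simp add: involutive_symmetry_def)
  show ?thesis
  proof (unfold_locales)
    fix k assume "1 \<le> k" "k < n"
    then show "mm N n (PP N n k F) (PP N n k F) = one N n" using s_inv_c[OF assms] by simp
  next
    fix k assume "1 \<le> k" "k + 1 < n"
    then show "mm N n (PP N n k F) (mm N n (PP N n (k+1) F) (PP N n k F))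
       = mm N n (PP N n (k+1) F) (mm N n (PP N n k F) (PP N n (k+1) F))"
      using s_braid_c[OF br] by simp
  next
    fix k l assume "1 \<le> k" "k + 1 < l" "l < n"
    then show "mm N n (PP N n k F) (PP N n l F) = mm N n (PP N n l F) (PP N n k F)"
      by (intro PP_comm) auto
  qed simp
qed

lemma qgens_c:
  assumes "involutive_symmetry N F"
  shows "qgens (mm N n) (one N n) (Mn N n) n (\<lambda>k. PP N n k F) (PP N n) (GG N n g) (goodn N n F)"
proof -
  interpret gens "mm N n" "one N n" "Mn N n" n "\<lambda>k. PP N n k F" by (rule gens_c[OF assms])
  show ?thesis
  proof (unfold_locales)
    fix j X assume "3 \<le> j" "j < n"
    then show "mm N n (PP N n j F) (PP N n 1 X) = mm N n (PP N n 1 X) (PP N n j F)"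
      using PP_comm[of 1 j n N X F] by simp
  next
    fix k l X Y assume "1 \<le> k" "k + 1 < l" "l < n"
    then show "mm N n (PP N n k X) (PP N n l Y) = mm N n (PP N n l Y) (PP N n k X)"
      by (intro PP_comm) auto
  next
    fix X k assume "goodn N n F X" "1 \<le> k" "k + 1 < n"
    then show "mm N n (PP N n (k+1) X) (mm N n (PP N n k F) (PP N n (k+1) F))
       = mm N n (PP N n k F) (mm N n (PP N n (k+1) F) (PP N n k X))"
      by (simp add: goodn_def)
  next
    fix j assume "2 \<le> j" "j < n"
    then show "mm N n (PP N n j F) (GG N n g) = mm N n (GG N n g) (PP N n j F)"
      using GG_comm[of j n N g F] by simp
  next
    fix k X assume "2 \<le> k" "k < n"
    then show "mm N n (GG N n g) (PP N n k X) = mm N n (PP N n k X) (GG N n g)"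
      using GG_comm[of k n N g X] by simp
  qed simp_all
qed


definition bet :: "bool \<Rightarrow> complex \<Rightarrow> complex \<Rightarrow> complex \<Rightarrow> complex" where
  "bet trig q u v = (if trig then - ((q - inverse q) * u / (u - v)) else - (1 / (u - v)))"

definition kap :: "bool \<Rightarrow> complex \<Rightarrow> complex" where
  "kap trig q = (if trig then q - inverse q else 0)"

definition q0 :: "bool \<Rightarrow> complex \<Rightarrow> complex" where
  "q0 trig q = (if trig then q else 1)"

lemma Ruv_eq: "Ruv trig q R u v = opadd R (opscale (bet trig q u v) opid)"
  by (simp add: Ruv_def bet_def)

lemma fuv_eq: "fuv trig q u v = q0 trig q + bet trig q u v"
  by (simp add: fuv_def bet_def q0_def)

lemma key_trig_gen:
  fixes K A B C x y :: complex
  assumes A: "A \<noteq> 0" and B: "B \<noteq> 0" and C: "C \<noteq> 0"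
  shows "(- (K * x / B)) * K + (- (K * x / B)) * (- (K * y / C))
       + (- (K * x / A)) * (- (K * x / B)) - (- (K * x / A)) * (- (K * y / C))
      = K * K * x * (- A * C + y * A + x * C - y * B) / (A * B * C)"
  using A B C by (simp add: field_simps)

lemma key_trig:
  fixes K x y z :: complex
  assumes xy: "x - y \<noteq> 0" and xz: "x - z \<noteq> 0" and yz: "y - z \<noteq> 0"
  shows "(- (K * x / (x - z))) * K + (- (K * x / (x - z))) * (- (K * y / (y - z)))
       + (- (K * x / (x - y))) * (- (K * x / (x - z))) - (- (K * x / (x - y))) * (- (K * y / (y - z))) = 0"
proof -
  have "- (x - y) * (y - z) + y * (x - y) + x * (y - z) - y * (x - z) = 0"
    by (simp add: algebra_simps)
  then show ?thesis using key_trig_gen[OF xy xz yz, of K x y] by simp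
qed

lemma key_rat_gen:
  fixes A B C :: complex
  assumes A: "A \<noteq> 0" and B: "B \<noteq> 0" and C: "C \<noteq> 0"
  shows "(- (1 / B)) * 0 + (- (1 / B)) * (- (1 / C)) + (- (1 / A)) * (- (1 / B)) - (- (1 / A)) * (- (1 / C))
     = (A + C - B) / (A * B * C)"
  using A B C by (simp add: field_simps)

lemma key_rat:
  fixes x y z :: complex
  assumes xy: "x - y \<noteq> 0" and xz: "x - z \<noteq> 0" and yz: "y - z \<noteq> 0"
  shows "(- (1 / (x - z))) * 0 + (- (1 / (x - z))) * (- (1 / (y - z)))
       + (- (1 / (x - y))) * (- (1 / (x - z))) - (- (1 / (x - y))) * (- (1 / (y - z))) = 0"
  using key_rat_gen[OF xy xz yz] by simp

lemma key_scalar: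
  assumes "x \<noteq> y" "x \<noteq> z" "y \<noteq> z"
  shows "bet trig q x z * kap trig q + bet trig q x z * bet trig q y z
       + bet trig q x y * bet trig q x z - bet trig q x y * bet trig q y z = 0"
proof -
  have xy: "x - y \<noteq> 0" and xz: "x - z \<noteq> 0" and yz: "y - z \<noteq> 0" using assms by auto
  show ?thesis
  proof (cases trig)
    case True
    then show ?thesis using key_trig[OF xy xz yz, of "q - inverse q"]
      by (simp add: bet_def kap_def mult.assoc)
  next
    case False
    then show ?thesis using key_rat[OF xy xz yz] by (simp add: bet_def kap_def)
  qed
qed

lemma unit_trig:
  fixes K x y :: complex
  assumes "x - y \<noteq> 0"
  shows "- (K * x / (x - y)) + - (K * y / (y - x)) = - K"
proof -
  have "y - x = - (x - y)" by simp
  then have "- (K * y / (y - x)) = K * y / (x - y)" by (simp only: divide_minus_right minus_minus)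
  then have "- (K * x / (x - y)) + - (K * y / (y - x)) = - (K * x - K * y) / (x - y)"
    by (simp add: diff_divide_distrib)
  also have "\<dots> = - K" using assms by (simp add: right_diff_distrib[symmetric])
  finally show ?thesis .
qed

lemma unit_scalar1: "x \<noteq> y \<Longrightarrow> bet trig q x y + bet trig q y x = - kap trig q"
proof -
  assume "x \<noteq> y"
  then have xy: "x - y \<noteq> 0" "y - x \<noteq> 0" by auto
  show ?thesis
  proof (cases trig)
    case True
    then show ?thesis using unit_trig[OF xy(1), of "q - inverse q"] by (simp add: bet_def kap_def)
  next
    case False
    have "- (1 / (x - y)) + - (1 / (y - x)) = 0" using xy
      by (metis add.inverse_inverse add.right_inverse divide_minus_right minus_diff_eq)
    then show ?thesis using False by (simp add: bet_def kap_def)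
  qed
qed

lemma unit_scalar2: "trig \<longrightarrow> q \<noteq> 0 \<Longrightarrow> q0 trig q * q0 trig q - q0 trig q * kap trig q = 1"
  by (cases trig) (auto simp: q0_def kap_def field_simps)

lemma unit_scalar:
  assumes "x \<noteq> y" "trig \<longrightarrow> q \<noteq> 0" "fuv trig q x y \<noteq> 0" "fuv trig q y x \<noteq> 0"
  shows "inverse (fuv trig q x y) * inverse (fuv trig q y x) * (1 + bet trig q x y * bet trig q y x) = 1"
proof -
  have "fuv trig q x y * fuv trig q y x = 1 + bet trig q x y * bet trig q y x"
  proof -
    have "fuv trig q x y * fuv trig q y x
        = q0 trig q * q0 trig q + q0 trig q * (bet trig q x y + bet trig q y x) + bet trig q x y * bet trig q y x"
      by (simp add: fuv_eq algebra_simps)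
    also have "\<dots> = 1 + bet trig q x y * bet trig q y x"
      using unit_scalar1[OF assms(1)] unit_scalar2[OF assms(2)] by (simp add: algebra_simps)
    finally show ?thesis .
  qed
  then have "inverse (fuv trig q x y) * inverse (fuv trig q y x) * (1 + bet trig q x y * bet trig q y x)
     = inverse (fuv trig q x y) * inverse (fuv trig q y x) * (fuv trig q x y * fuv trig q y x)" by simp
  also have "\<dots> = 1" using assms(3,4) by (simp add: field_simps)
  finally show ?thesis .
qed

definition ad :: "nat \<Rightarrow> nat \<Rightarrow> op \<Rightarrow> complex \<Rightarrow> op" where
  "ad N n X c = opadd X (opscale c (one N n))"

lemma opscale_opscale[simp]: "opscale c (opscale d A) = opscale (c * d) A"
  by (simp add: opscale_def fun_eq_iff)

lemma nrm_ad[simp]: "nrm N n (ad N n X c) = ad N n (nrm N n X) c"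
  by (simp add: ad_def nrm_add nrm_scale)

lemma ad_Mn[simp]: "X \<in> Mn N n \<Longrightarrow> ad N n X c \<in> Mn N n"
  by (simp add: Mn_def)

lemma scale_Mn[simp]: "X \<in> Mn N n \<Longrightarrow> opscale c X \<in> Mn N n"
  by (simp add: Mn_def nrm_scale)

lemma Mn_nrm: "X \<in> Mn N n \<Longrightarrow> nrm N n X = X" by (simp add: Mn_def)

lemma intertw:
  assumes "Z \<in> Mn N n" "mm N n Z Y = mm N n X Z"
  shows "mm N n Z (ad N n Y c) = mm N n (ad N n X c) Z"
  using assms by (simp add: ad_def mm_add_l mm_add_r mm_scale_l mm_scale_r Mn_nrm)

lemma PP_calR:
  assumes "1 \<le> k" "k + 1 \<le> n"
  shows "PP N n k (calR N trig q R F u v)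
       = opscale (inverse (fuv trig q u v)) (mm N n (ad N n (PP N n k R) (bet trig q u v)) (PP N n k F))"
proof -
  have "PP N n k (calR N trig q R F u v)
      = opscale (inverse (fuv trig q u v)) (mm N n (PP N n k (Ruv trig q R u v)) (PP N n k F))"
    using assms by (simp add: calR_def PP_scale PP_mul)
  also have "PP N n k (Ruv trig q R u v) = ad N n (PP N n k R) (bet trig q u v)"
    using assms by (simp add: Ruv_eq PP_add PP_scale PP_id ad_def)
  finally show ?thesis .
qed


lemma PP_zero: "PP N n k opzero = opzero"
  by (simp add: PP_def place2_def opzero_def nrm_def fun_eq_iff)

lemma tl2: "mm N n A B = mm N n C D \<Longrightarrow> mm N n A (mm N n B Z) = mm N n C (mm N n D Z)"
  by (metis mm_assoc)

lemma tl3: "mm N n A (mm N n B C) = mm N n D (mm N n E H) \<Longrightarrow>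
   mm N n A (mm N n B (mm N n C Z)) = mm N n D (mm N n E (mm N n H Z))"
  by (metis mm_assoc)

lemma tl2e: "mm N n A B = one N n \<Longrightarrow> Z \<in> Mn N n \<Longrightarrow> mm N n A (mm N n B Z) = Z"
  by (metis mm_assoc mm_one_l Mn_nrm)

locale conc =
  fixes N n :: nat and trig :: bool and q :: complex and R F :: op and g :: "nat \<Rightarrow> nat \<Rightarrow> complex"
  assumes invF: "involutive_symmetry N F" and compR: "compatible N R F" and brR: "braiding N R"
    and hR: "(\<not> trig \<and> involutive_symmetry N R) \<or> (trig \<and> hecke_symmetry N q R)"
begin

sublocale Q: qgens "mm N n" "one N n" "Mn N n" n "\<lambda>k. PP N n k F" "PP N n" "GG N n g" "goodn N n F"
  by (rule qgens_c[OF invF])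

lemma q_nz: "trig \<longrightarrow> q \<noteq> 0"
  using hR by (auto simp: hecke_symmetry_def)

lemma R_sq:
  assumes k: "1 \<le> k" "k + 1 \<le> n"
  shows "mm N n (PP N n k R) (PP N n k R) = opadd (opscale (kap trig q) (PP N n k R)) (one N n)"
proof (cases trig)
  case False
  then have "opeq N 2 (opmul N 2 R R) opid" using hR by (auto simp: involutive_symmetry_def)
  then have "mm N n (PP N n k R) (PP N n k R) = one N n"
    using k by (simp add: PP_mul PP_id PP_opeq[of k n N _ opid])
  then show ?thesis using False by (simp add: kap_def opadd_def opscale_def fun_eq_iff)
next
  case True
  then have h: "opeq N 2 (opmul N 2 (opadd R (opscale (-q) opid)) (opadd R (opscale (inverse q) opid))) opzero"
    and qn: "q \<noteq> 0" using hR by (auto simp: hecke_symmetry_def)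
  have "PP N n k (opmul N 2 (opadd R (opscale (-q) opid)) (opadd R (opscale (inverse q) opid))) = opzero"
    using PP_opeq[OF k h] by (simp add: PP_zero)
  then have z: "mm N n (ad N n (PP N n k R) (-q)) (ad N n (PP N n k R) (inverse q)) = opzero"
    using k by (simp add: PP_mul[symmetric] PP_add PP_scale PP_id ad_def)
  have "mm N n (ad N n (PP N n k R) (-q)) (ad N n (PP N n k R) (inverse q))
      = opadd (mm N n (PP N n k R) (PP N n k R))
          (opadd (opscale (inverse q - q) (PP N n k R)) (opscale (- (q * inverse q)) (one N n)))"
    by (simp add: ad_def mm_add_l mm_add_r mm_scale_l mm_scale_r nrm_add nrm_scale)
      (simp add: opadd_def opscale_def fun_eq_iff algebra_simps)
  then have "\<And>xs ys. mm N n (PP N n k R) (PP N n k R) xs ys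
        + ((inverse q - q) * PP N n k R xs ys + (- (q * inverse q)) * one N n xs ys) = 0"
    using z by (simp add: opadd_def opscale_def opzero_def fun_eq_iff)
  then show ?thesis using True qn
    by (simp add: kap_def opadd_def opscale_def fun_eq_iff algebra_simps eq_neg_iff_add_eq_0[symmetric])
qed

lemma R_braid:
  assumes "1 \<le> k" "k + 1 < n"
  shows "mm N n (PP N n k R) (mm N n (PP N n (k+1) R) (PP N n k R))
       = mm N n (PP N n (k+1) R) (mm N n (PP N n k R) (PP N n (k+1) R))"
  using s_braid_c[OF brR assms] .

lemma good_cR: "goodn N n F (calR N trig q R F x y)"
  unfolding goodn_def
proof (intro allI impI)
  fix k assume k: "1 \<le> k \<and> k + 1 < n"
  define Z where "Z = mm N n (PP N n k F) (PP N n (k+1) F)"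
  define al where "al = inverse (fuv trig q x y)"
  define be where "be = bet trig q x y"
  have ZM: "Z \<in> Mn N n" by (simp add: Z_def)
  have c2: "mm N n Z (PP N n k R) = mm N n (PP N n (k+1) R) Z"
    using compat_c(2)[OF compR, of k n] k by (simp add: Z_def)
  have iw: "mm N n Z (ad N n (PP N n k R) be) = mm N n (ad N n (PP N n (k+1) R) be) Z"
    by (rule intertw[OF ZM c2])
  have br: "mm N n (PP N n (Suc k) F) (mm N n (PP N n k F) (PP N n (Suc k) F))
          = mm N n (PP N n k F) (mm N n (PP N n (Suc k) F) (PP N n k F))"
    using Q.s_braid[of k] k by simp
  have e1: "PP N n k (calR N trig q R F x y) = opscale al (mm N n (ad N n (PP N n k R) be) (PP N n k F))"
    using k by (simp add: PP_calR al_def be_def)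
  have e2: "PP N n (Suc k) (calR N trig q R F x y) = opscale al (mm N n (ad N n (PP N n (Suc k) R) be) (PP N n (Suc k) F))"
    using k by (simp add: PP_calR al_def be_def)
  have "mm N n (PP N n (k+1) (calR N trig q R F x y)) (mm N n (PP N n k F) (PP N n (k+1) F))
      = opscale al (mm N n (ad N n (PP N n (k+1) R) be) (mm N n (PP N n (k+1) F) (mm N n (PP N n k F) (PP N n (k+1) F))))"
    by (simp add: e2 mm_scale_l)
  also have "\<dots> = opscale al (mm N n (mm N n (ad N n (PP N n (k+1) R) be) Z) (PP N n k F))"
    by (simp add: br Z_def)
  also have "\<dots> = opscale al (mm N n (mm N n Z (ad N n (PP N n k R) be)) (PP N n k F))"
    by (simp only: iw)
  also have "\<dots> = mm N n (PP N n k F) (mm N n (PP N n (k+1) F) (PP N n k (calR N trig q R F x y)))"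
    by (simp add: e1 mm_scale_r Z_def)
  finally show "mm N n (PP N n (k+1) (calR N trig q R F x y)) (mm N n (PP N n k F) (PP N n (k+1) F))
      = mm N n (PP N n k F) (mm N n (PP N n (k+1) F) (PP N n k (calR N trig q R F x y)))" .
qed


lemma bYBE:
  assumes n3: "3 \<le> n" and d: "x \<noteq> y" "x \<noteq> z" "y \<noteq> z"
  shows "mm N n (ad N n (PP N n 1 R) (bet trig q x y)) (mm N n (ad N n (PP N n 2 R) (bet trig q x z)) (ad N n (PP N n 1 R) (bet trig q y z)))
       = mm N n (ad N n (PP N n 2 R) (bet trig q y z)) (mm N n (ad N n (PP N n 1 R) (bet trig q x z)) (ad N n (PP N n 2 R) (bet trig q x y)))"
proof -
  define a where "a = bet trig q x y"
  define b where "b = bet trig q x z"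
  define c where "c = bet trig q y z"
  define K where "K = kap trig q"
  have key: "b * K + b * c + a * b - a * c = 0" using key_scalar[OF d, of trig q] by (simp add: a_def b_def c_def K_def)
  have sq1: "mm N n (PP N n (Suc 0) R) (PP N n (Suc 0) R) = opadd (opscale K (PP N n (Suc 0) R)) (one N n)"
    using R_sq[of 1] n3 by (simp add: K_def)
  have sq2: "mm N n (PP N n 2 R) (PP N n 2 R) = opadd (opscale K (PP N n 2 R)) (one N n)"
    using R_sq[of 2] n3 by (simp add: K_def)
  have br: "mm N n (PP N n 2 R) (mm N n (PP N n (Suc 0) R) (PP N n 2 R)) = mm N n (PP N n (Suc 0) R) (mm N n (PP N n 2 R) (PP N n (Suc 0) R))"
    using R_braid[of 1] n3 by (simp add: numeral_2_eq_2)
  have br': "\<And>Z. mm N n (PP N n 2 R) (mm N n (PP N n 2 R) Z) = mm N n (opadd (opscale K (PP N n 2 R)) (one N n)) Z"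
    using sq2 by (metis mm_assoc)
  have br1': "\<And>Z. mm N n (PP N n (Suc 0) R) (mm N n (PP N n (Suc 0) R) Z) = mm N n (opadd (opscale K (PP N n (Suc 0) R)) (one N n)) Z"
    using sq1 by (metis mm_assoc)
  have brz: "\<And>Z. mm N n (PP N n 2 R) (mm N n (PP N n (Suc 0) R) (mm N n (PP N n 2 R) Z)) = mm N n (PP N n (Suc 0) R) (mm N n (PP N n 2 R) (mm N n (PP N n (Suc 0) R) Z))"
    using br by (metis mm_assoc)
  show ?thesis
    unfolding a_def[symmetric] b_def[symmetric] c_def[symmetric]
    apply (simp add: ad_def mm_add_l mm_add_r mm_scale_l mm_scale_r nrm_add nrm_scale mm_assoc sq1 sq2 br br' br1' brz)
    apply (simp add: opadd_def opscale_def fun_eq_iff)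
    apply (intro allI)
    using key by algebra
qed


lemma baseYB:
  assumes n3: "3 \<le> n" and d: "x \<noteq> y" "x \<noteq> z" "y \<noteq> z"
  defines "X1 \<equiv> calR N trig q R F x y" and "X2 \<equiv> calR N trig q R F x z" and "X3 \<equiv> calR N trig q R F y z"
  shows "mm N n (PP N n 1 X1) (mm N n (mm N n (PP N n 2 F) (mm N n (PP N n 1 X2) (PP N n 2 F))) (PP N n 2 X3))
       = mm N n (PP N n 2 X3) (mm N n (mm N n (PP N n 2 F) (mm N n (PP N n 1 X2) (PP N n 2 F))) (PP N n 1 X1))"
proof -
  define s1 where "s1 = PP N n (Suc 0) F"
  define s2 where "s2 = PP N n 2 F"
  define R1 where "R1 = PP N n (Suc 0) R"
  define R2 where "R2 = PP N n 2 R"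
  define a where "a = bet trig q x y"
  define b where "b = bet trig q x z"
  define c where "c = bet trig q y z"
  define A1 where "A1 = ad N n R1 a"
  define A2 where "A2 = ad N n R2 a"
  define B1 where "B1 = ad N n R1 b"
  define B2 where "B2 = ad N n R2 b"
  define C1 where "C1 = ad N n R1 c"
  define C2 where "C2 = ad N n R2 c"
  define al1 where "al1 = inverse (fuv trig q x y)"
  define al2 where "al2 = inverse (fuv trig q x z)"
  define al3 where "al3 = inverse (fuv trig q y z)"
  have M: "A1 \<in> Mn N n" "A2 \<in> Mn N n" "B1 \<in> Mn N n" "B2 \<in> Mn N n" "C1 \<in> Mn N n" "C2 \<in> Mn N n"
    "s1 \<in> Mn N n" "s2 \<in> Mn N n"
    by (simp_all add: A1_def A2_def B1_def B2_def C1_def C2_def R1_def R2_def s1_def s2_def)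
  have e1: "PP N n (Suc 0) X1 = opscale al1 (mm N n A1 s1)"
    using n3 by (simp add: X1_def PP_calR al1_def A1_def R1_def a_def s1_def)
  have e2: "PP N n (Suc 0) X2 = opscale al2 (mm N n B1 s1)"
    using n3 by (simp add: X2_def PP_calR al2_def B1_def R1_def b_def s1_def)
  have e3: "PP N n 2 X3 = opscale al3 (mm N n C2 s2)"
    using n3 by (simp add: X3_def PP_calR al3_def C2_def R2_def c_def s2_def)
  have c2: "mm N n (mm N n s1 s2) R1 = mm N n R2 (mm N n s1 s2)"
    using compat_c(2)[OF compR, of 1 n] n3 by (simp add: s1_def s2_def R1_def R2_def numeral_2_eq_2)
  have c1: "mm N n (mm N n s2 s1) R2 = mm N n R1 (mm N n s2 s1)"
    using compat_c(1)[OF compR, of 1 n] n3 by (simp add: s1_def s2_def R1_def R2_def numeral_2_eq_2)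
  have i1: "mm N n s1 (mm N n s2 B1) = mm N n B2 (mm N n s1 s2)"
    using intertw[OF _ c2, of b] by (simp add: B1_def B2_def)
  have i3: "mm N n s1 (mm N n s2 A1) = mm N n A2 (mm N n s1 s2)"
    using intertw[OF _ c2, of a] by (simp add: A1_def A2_def)
  have i2: "mm N n s2 (mm N n s1 C2) = mm N n C1 (mm N n s2 s1)"
    using intertw[OF _ c1, of c] by (simp add: C1_def C2_def)
  have brF: "mm N n s1 (mm N n s2 s1) = mm N n s2 (mm N n s1 s2)"
    using Q.s_braid[of 1] n3 by (simp add: s1_def s2_def numeral_2_eq_2)
  have inv2: "mm N n s2 s2 = one N n" using Q.s_inv[of 2] n3 by (simp add: s2_def)
  have yb: "mm N n A1 (mm N n B2 C1) = mm N n C2 (mm N n B1 A2)"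
    using bYBE[OF n3 d] by (simp add: A1_def A2_def B1_def B2_def C1_def C2_def R1_def R2_def a_def b_def c_def)
  have W1: "mm N n A1 (mm N n s1 (mm N n s2 (mm N n B1 (mm N n s1 (mm N n s2 (mm N n C2 s2))))))
          = mm N n C2 (mm N n B1 (mm N n A2 (mm N n s2 (mm N n s1 s2))))"
  proof -
    have "mm N n A1 (mm N n s1 (mm N n s2 (mm N n B1 (mm N n s1 (mm N n s2 (mm N n C2 s2))))))
        = mm N n A1 (mm N n B2 (mm N n s1 (mm N n s2 (mm N n s1 (mm N n s2 (mm N n C2 s2))))))"
      using tl3[OF i1] by simp
    also have "\<dots> = mm N n A1 (mm N n B2 (mm N n s2 (mm N n s1 (mm N n s2 (mm N n s2 (mm N n C2 s2))))))"
      using tl3[OF brF] by simp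
    also have "\<dots> = mm N n A1 (mm N n B2 (mm N n s2 (mm N n s1 (mm N n C2 s2))))"
      using tl2e[OF inv2] by simp
    also have "\<dots> = mm N n A1 (mm N n B2 (mm N n C1 (mm N n s2 (mm N n s1 s2))))"
      using tl3[OF i2] by simp
    also have "\<dots> = mm N n C2 (mm N n B1 (mm N n A2 (mm N n s2 (mm N n s1 s2))))"
      using tl3[OF yb] by simp
    finally show ?thesis .
  qed
  have W2: "mm N n C2 (mm N n s2 (mm N n s2 (mm N n B1 (mm N n s1 (mm N n s2 (mm N n A1 s1))))))
          = mm N n C2 (mm N n B1 (mm N n A2 (mm N n s2 (mm N n s1 s2))))"
  proof -
    have "mm N n C2 (mm N n s2 (mm N n s2 (mm N n B1 (mm N n s1 (mm N n s2 (mm N n A1 s1))))))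
        = mm N n C2 (mm N n B1 (mm N n s1 (mm N n s2 (mm N n A1 s1))))"
      using tl2e[OF inv2] by simp
    also have "\<dots> = mm N n C2 (mm N n B1 (mm N n A2 (mm N n s1 (mm N n s2 s1))))"
      using tl3[OF i3] by simp
    also have "\<dots> = mm N n C2 (mm N n B1 (mm N n A2 (mm N n s2 (mm N n s1 s2))))"
      using brF by simp
    finally show ?thesis .
  qed
  have L: "mm N n (PP N n 1 X1) (mm N n (mm N n (PP N n 2 F) (mm N n (PP N n 1 X2) (PP N n 2 F))) (PP N n 2 X3))
     = opscale (al1 * (al2 * al3)) (mm N n A1 (mm N n s1 (mm N n s2 (mm N n B1 (mm N n s1 (mm N n s2 (mm N n C2 s2)))))))"
    by (simp add: e1 e2 e3 mm_scale_l mm_scale_r mm_assoc s2_def[symmetric] mult_ac)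
  have R: "mm N n (PP N n 2 X3) (mm N n (mm N n (PP N n 2 F) (mm N n (PP N n 1 X2) (PP N n 2 F))) (PP N n 1 X1))
     = opscale (al1 * (al2 * al3)) (mm N n C2 (mm N n s2 (mm N n s2 (mm N n B1 (mm N n s1 (mm N n s2 (mm N n A1 s1)))))))"
    by (simp add: e1 e2 e3 mm_scale_l mm_scale_r mm_assoc s2_def[symmetric] mult_ac)
  show ?thesis unfolding L R W1 W2 ..
qed


lemma baseU:
  assumes n2: "2 \<le> n" and xy: "x \<noteq> y" and f1: "fuv trig q x y \<noteq> 0" and f2: "fuv trig q y x \<noteq> 0"
  shows "mm N n (PP N n 1 (calR N trig q R F x y)) (mm N n (PP N n 1 F) (mm N n (PP N n 1 (calR N trig q R F y x)) (PP N n 1 F)))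
       = one N n"
proof -
  define s1 where "s1 = PP N n (Suc 0) F"
  define R1 where "R1 = PP N n (Suc 0) R"
  define a where "a = bet trig q x y"
  define a' where "a' = bet trig q y x"
  define K where "K = kap trig q"
  define al where "al = inverse (fuv trig q x y)"
  define al' where "al' = inverse (fuv trig q y x)"
  have e1: "PP N n (Suc 0) (calR N trig q R F x y) = opscale al (mm N n (ad N n R1 a) s1)"
    using n2 by (simp add: PP_calR al_def R1_def a_def s1_def)
  have e2: "PP N n (Suc 0) (calR N trig q R F y x) = opscale al' (mm N n (ad N n R1 a') s1)"
    using n2 by (simp add: PP_calR al'_def R1_def a'_def s1_def)
  have inv1: "mm N n s1 s1 = one N n" using Q.s_inv[of 1] n2 by (simp add: s1_def)
  have sq1: "mm N n R1 R1 = opadd (opscale K R1) (one N n)"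
    using R_sq[of 1] n2 by (simp add: K_def R1_def)
  have hR1: "nrm N n R1 = R1" by (simp add: R1_def)
  have sc1: "a + a' = - K" using unit_scalar1[OF xy] by (simp add: a_def a'_def K_def)
  have sc2: "al * al' * (1 + a * a') = 1" using unit_scalar[OF xy q_nz f1 f2] by (simp add: al_def al'_def a_def a'_def)
  have "mm N n (PP N n 1 (calR N trig q R F x y)) (mm N n (PP N n 1 F) (mm N n (PP N n 1 (calR N trig q R F y x)) (PP N n 1 F)))
      = opscale (al * al') (mm N n (ad N n R1 a) (mm N n s1 (mm N n s1 (mm N n (ad N n R1 a') (mm N n s1 s1)))))"
    by (simp add: e1 e2 mm_scale_l mm_scale_r mm_assoc s1_def[symmetric] mult_ac)
  also have "\<dots> = opscale (al * al') (mm N n (ad N n R1 a) (ad N n R1 a'))"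
    using tl2e[OF inv1] inv1 by (simp add: R1_def)
  also have "\<dots> = opadd (opscale (al * al' * (K + a + a')) R1) (opscale (al * al' * (1 + a * a')) (one N n))"
    using hR1 by (simp add: ad_def mm_add_l mm_add_r mm_scale_l mm_scale_r nrm_add nrm_scale sq1)
      (simp add: opadd_def opscale_def fun_eq_iff algebra_simps)
  also have "\<dots> = one N n"
  proof -
    have sc1': "K + a + a' = 0" using sc1 by (simp add: add.assoc)
    show ?thesis using sc1' sc2 by (simp add: opadd_def opscale_def fun_eq_iff)
  qed
  finally show ?thesis .
qed

lemma baseGC2:
  assumes n2: "2 \<le> n"
    and hR: "mm N n (mm N n (GG N n g) (Q.gg 2)) (PP N n 1 R) = mm N n (PP N n 1 R) (mm N n (GG N n g) (Q.gg 2))"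
    and hG: "mm N n (GG N n g) (Q.gg 2) = mm N n (Q.gg 2) (GG N n g)"
  shows "mm N n (mm N n (GG N n g) (Q.gg 2)) (PP N n 1 (calR N trig q R F x y))
       = mm N n (PP N n 1 (calR N trig q R F x y)) (mm N n (GG N n g) (Q.gg 2))"
proof -
  define s1 where "s1 = PP N n (Suc 0) F"
  define R1 where "R1 = PP N n (Suc 0) R"
  define G where "G = GG N n g"
  define Z where "Z = mm N n G (Q.gg 2)"
  have g2: "Q.gg 2 = mm N n s1 (mm N n G s1)" using Q.gg2[OF n2] by (simp add: s1_def G_def numeral_2_eq_2)
  have inv1: "mm N n s1 s1 = one N n" using Q.s_inv[of 1] n2 by (simp add: s1_def)
  have ZM: "Z \<in> Mn N n" by (simp add: Z_def)
  have zs: "mm N n Z s1 = mm N n s1 Z"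
  proof -
    have "mm N n s1 Z = mm N n (mm N n (Q.gg 2) G) s1"
      unfolding Z_def g2 by (simp only: mm_assoc)
    also have "mm N n (Q.gg 2) G = Z" using hG by (simp only: Z_def G_def)
    finally show ?thesis ..
  qed
  have zr: "mm N n Z R1 = mm N n R1 Z" using hR by (simp only: Z_def G_def R1_def One_nat_def)
  have za: "mm N n Z (ad N n R1 (bet trig q x y)) = mm N n (ad N n R1 (bet trig q x y)) Z"
    by (rule intertw[OF ZM zr])
  have e1: "PP N n (Suc 0) (calR N trig q R F x y) = opscale (inverse (fuv trig q x y)) (mm N n (ad N n R1 (bet trig q x y)) s1)"
    using n2 by (simp add: PP_calR R1_def s1_def)
  have "mm N n Z (mm N n (ad N n R1 (bet trig q x y)) s1) = mm N n (ad N n R1 (bet trig q x y)) (mm N n Z s1)"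
    using tl2[OF za, of s1] by (simp only: mm_assoc)
  also have "\<dots> = mm N n (mm N n (ad N n R1 (bet trig q x y)) s1) Z" using zs by (simp only: mm_assoc)
  finally have "mm N n Z (PP N n (Suc 0) (calR N trig q R F x y)) = mm N n (PP N n (Suc 0) (calR N trig q R F x y)) Z"
    by (simp only: e1 mm_scale_l mm_scale_r)
  then show ?thesis by (simp only: Z_def G_def One_nat_def)
qed

end


lemma opapp_opapp: "opapp N n A (opapp N n B v) = opapp N n (opmul N n A B) v"
proof (rule ext)
  fix xs
  have "opapp N n A (opapp N n B v) xs = (\<Sum>ys\<in>tidx N n. \<Sum>zs\<in>tidx N n. A xs ys * (B ys zs * v zs))"
    by (simp add: opapp_def sum_distrib_left)
  also have "\<dots> = (\<Sum>zs\<in>tidx N n. \<Sum>ys\<in>tidx N n. A xs ys * (B ys zs * v zs))" by (rule sum.swap)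
  also have "\<dots> = opapp N n (opmul N n A B) v xs"
    by (simp add: opapp_def opmul_def sum_distrib_right mult.assoc)
  finally show "opapp N n A (opapp N n B v) xs = opapp N n (opmul N n A B) v xs" .
qed

lemma mm_opmul_r: "mm N n A (opmul N n B C) = mm N n A (mm N n B C)"
  by (metis mm_nrm_r nrm_opmul)

lemma mm_opmul_l: "mm N n (opmul N n B C) A = mm N n (mm N n B C) A"
  by (metis mm_nrm_l nrm_opmul)

lemma opapp_nrm: "xs \<in> tidx N n \<Longrightarrow> opapp N n A v xs = opapp N n (nrm N n A) v xs"
  by (simp add: opapp_def nrm_def)

lemma Delta_eq: "Delta N n trig q p R F g i Psi u
   = opapp N n (opmul N n (Rdown N n trig q R F i u) (opmul N n (gbar N n F g i) (Rup N n trig q R F i (u(i := unshiftf trig p (u i))))))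
       (Psi (u(i := unshiftf trig p (u i))))"
  by (simp add: Delta_def mulop_def Tinv_def opapp_opapp)

context conc
begin

lemma nrm_Fdesc: "nrm N n (Fdesc N n F a b) = Q.fd a b"
  by (simp add: Fdesc_def Q.fd_def Q.pr_def nrm_opprod comp_def PP_def[symmetric])

lemma nrm_Fasc: "nrm N n (Fasc N n F a b) = Q.fa a b"
  by (simp add: Fasc_def Q.fa_def Q.pr_def nrm_opprod comp_def PP_def[symmetric])

lemma nrm_xbar_lt: "nrm N n (xbar_lt N n F a b X) = Q.xbl a b (PP N n 1 X)"
proof -
  have "nrm N n (xbar_lt N n F a b X) = mm N n (Q.fd 1 a) (mm N n (Q.fd 2 b) (mm N n (PP N n 1 X)
          (mm N n (Q.fa 2 b) (mm N n (Q.fa 1 a) (one N n)))))"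
    by (simp add: xbar_lt_def nrm_opprod nrm_Fdesc nrm_Fasc PP_def[symmetric])
  then show ?thesis by (simp add: Q.xbl_def)
qed

lemma PP_FXF: "2 \<le> n \<Longrightarrow> PP N n (Suc 0) (opprod N 2 [F, X, F]) = mm N n (PP N n (Suc 0) F) (mm N n (PP N n (Suc 0) X) (PP N n (Suc 0) F))"
  by (simp add: opprod_def PP_mul[symmetric] PP_id)

lemma nrm_xbar: "2 \<le> n \<Longrightarrow> nrm N n (xbar N n F a b X) = Q.xr a b X"
  by (simp add: xbar_def Q.xr_def Q.xb_def nrm_xbar_lt PP_FXF)

lemma nrm_gbar_r: "nrm N n (gbar_r N n F g k) = mm N n (Q.fd 1 (Suc k)) (mm N n (GG N n g) (Q.fa 1 (Suc k)))"
proof (induction k)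
  case 0 then show ?case by (simp add: Q.fd_empty Q.fa_empty GG_def)
next
  case (Suc k)
  have "nrm N n (gbar_r N n F g (Suc k)) = mm N n (PP N n (Suc k) F) (mm N n (nrm N n (gbar_r N n F g k)) (PP N n (Suc k) F))"
    by (simp add: nrm_opprod PP_def)
  also have "\<dots> = mm N n (Q.fd 1 (Suc (Suc k))) (mm N n (GG N n g) (Q.fa 1 (Suc (Suc k))))"
    using Suc by (simp add: Q.fd_Suc Q.fa_Suc)
  finally show ?case .
qed

lemma nrm_gbar: "1 \<le> a \<Longrightarrow> nrm N n (gbar N n F g a) = Q.gg a"
  by (simp add: gbar_def nrm_gbar_r Q.gg_def)

end


lemma calR_hom:
  assumes "trig \<longrightarrow> p \<noteq> 0"
  shows "calR N trig q R F (unshiftf trig p x) (unshiftf trig p y) = calR N trig q R F x y"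
proof (cases trig)
  case True
  then have p: "p \<noteq> 0" using assms by simp
  have "x / p / (x / p - y / p) = x / (x - y)"
    using p by (cases "x = y") (simp_all add: field_simps)
  then have h: "(q - inverse q) * (x / p) / (x / p - y / p) = (q - inverse q) * x / (x - y)"
    by (metis times_divide_eq_right)
  show ?thesis by (simp only: calR_def Ruv_def fuv_def unshiftf_def True if_True h)
next
  case False
  then show ?thesis by (simp add: calR_def Ruv_def fuv_def unshiftf_def)
qed

definition okY :: "complex \<Rightarrow> complex \<Rightarrow> complex \<Rightarrow> bool" where
  "okY x y z \<longleftrightarrow> x \<noteq> y \<and> x \<noteq> z \<and> y \<noteq> z"

definition okU :: "bool \<Rightarrow> complex \<Rightarrow> complex \<Rightarrow> complex \<Rightarrow> bool" where
  "okU trig q x y \<longleftrightarrow> x \<noteq> y \<and> fuv trig q x y \<noteq> 0 \<and> fuv trig q y x \<noteq> 0"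

locale conc2 = conc +
  fixes p :: complex
  assumes n2: "2 \<le> n" and p0: "p \<noteq> 0"
    and hg1: "\<And>i j. i \<in> {1..n} \<Longrightarrow> j \<in> {1..n} \<Longrightarrow> i \<noteq> j \<Longrightarrow>
           opeq N n (opmul N n (gbar N n F g i) (gbar N n F g j))
                    (opmul N n (gbar N n F g j) (gbar N n F g i))"
    and hg2: "\<And>i j. i \<in> {1..n} \<Longrightarrow> j \<in> {1..n} \<Longrightarrow> i \<noteq> j \<Longrightarrow>
           opeq N n (opmul N n (xbar N n F i j R) (opmul N n (gbar N n F g i) (gbar N n F g j)))
                    (opmul N n (opmul N n (gbar N n F g i) (gbar N n F g j)) (xbar N n F i j R))"
begin

lemma GGc: "a \<in> {1..n} \<Longrightarrow> b \<in> {1..n} \<Longrightarrow> a \<noteq> b \<Longrightarrow> mm N n (Q.gg a) (Q.gg b) = mm N n (Q.gg b) (Q.gg a)"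
  using hg1[of a b] by (simp add: opeq_nrm nrm_opmul nrm_gbar[symmetric])

lemma hR12: "mm N n (mm N n (GG N n g) (Q.gg 2)) (PP N n 1 R) = mm N n (PP N n 1 R) (mm N n (GG N n g) (Q.gg 2))"
proof -
  have "mm N n (Q.xr 1 2 R) (mm N n (Q.gg 1) (Q.gg 2)) = mm N n (mm N n (Q.gg 1) (Q.gg 2)) (Q.xr 1 2 R)"
    using hg2[of 1 2] n2 by (simp add: opeq_nrm nrm_opmul mm_opmul_l mm_opmul_r nrm_gbar[symmetric] nrm_xbar[symmetric])
  then show ?thesis by (simp add: Q.xr12' Q.gg1')
qed

lemma valid3: "a \<in> {1..n} \<Longrightarrow> b \<in> {1..n} \<Longrightarrow> c \<in> {1..n} \<Longrightarrow> distinct [a,b,c] \<Longrightarrow> valid n 3 [a,b,c]"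
  by (simp add: valid_def)

lemma valid2: "a \<in> {1..n} \<Longrightarrow> b \<in> {1..n} \<Longrightarrow> a \<noteq> b \<Longrightarrow> valid n 2 [a,b]"
  by (simp add: valid_def)

lemma valid4: "a \<in> {1..n} \<Longrightarrow> b \<in> {1..n} \<Longrightarrow> c \<in> {1..n} \<Longrightarrow> d \<in> {1..n} \<Longrightarrow> distinct [a,b,c,d] \<Longrightarrow> valid n 4 [a,b,c,d]"
  by (simp add: valid_def)

sublocale Hh: heart "mm N n" "one N n" "Mn N n" n "\<lambda>a b x y. Q.xr a b (calR N trig q R F x y)" Q.gg
  "unshiftf trig p" okY "okU trig q"
proof unfold_locales
  fix a b c x y z
  assume h: "a \<in> {1..n}" "b \<in> {1..n}" "c \<in> {1..n}" "distinct [a, b, c]" "okY x y z"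
  have d: "x \<noteq> y" "x \<noteq> z" "y \<noteq> z" using h(5) by (auto simp: okY_def)
  show "mm N n (Q.xr a b (calR N trig q R F x y)) (mm N n (Q.xr a c (calR N trig q R F x z)) (Q.xr b c (calR N trig q R F y z)))
      = mm N n (Q.xr b c (calR N trig q R F y z)) (mm N n (Q.xr a c (calR N trig q R F x z)) (Q.xr a b (calR N trig q R F x y)))"
    using Q.yb_orbit[OF good_cR baseYB[OF _ d] valid3[OF h(1-4)]] by simp
next
  fix a b x y
  assume h: "a \<in> {1..n}" "b \<in> {1..n}" "a \<noteq> b" "okU trig q x y"
  have d: "x \<noteq> y" "fuv trig q x y \<noteq> 0" "fuv trig q y x \<noteq> 0" using h(4) by (auto simp: okU_def)
  show "mm N n (Q.xr a b (calR N trig q R F x y)) (Q.xr b a (calR N trig q R F y x)) = one N n"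
    using Q.u_orbit[OF baseU[OF _ d] valid2[OF h(1-3)]] by simp
next
  fix a b c d x y z w
  assume h: "a \<in> {1..n}" "b \<in> {1..n}" "c \<in> {1..n}" "d \<in> {1..n}" "distinct [a, b, c, d]"
  show "mm N n (Q.xr a b (calR N trig q R F x y)) (Q.xr c d (calR N trig q R F z w))
      = mm N n (Q.xr c d (calR N trig q R F z w)) (Q.xr a b (calR N trig q R F x y))"
    using Q.comm_orbit[OF good_cR good_cR valid4[OF h]] by simp
next
  fix a c d x y
  assume h: "a \<in> {1..n}" "c \<in> {1..n}" "d \<in> {1..n}" "distinct [a, c, d]"
  show "mm N n (Q.gg a) (Q.xr c d (calR N trig q R F x y)) = mm N n (Q.xr c d (calR N trig q R F x y)) (Q.gg a)"
    using Q.gc1_orbit[OF good_cR valid3[OF h]] by simp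
next
  fix a b
  assume "a \<in> {1..n}" "b \<in> {1..n}" "a \<noteq> b"
  then show "mm N n (Q.gg a) (Q.gg b) = mm N n (Q.gg b) (Q.gg a)" by (rule GGc)
next
  fix a b x y
  assume h: "a \<in> {1..n}" "b \<in> {1..n}" "a \<noteq> b"
  have base: "2 \<le> n \<Longrightarrow> mm N n (mm N n (GG N n g) (Q.gg 2)) (PP N n 1 (calR N trig q R F x y))
      = mm N n (PP N n 1 (calR N trig q R F x y)) (mm N n (GG N n g) (Q.gg 2))"
  proof -
    have hG: "mm N n (GG N n g) (Q.gg 2) = mm N n (Q.gg 2) (GG N n g)"
      using GGc[of 1 2] n2 Q.gg1 by simp
    show "2 \<le> n \<Longrightarrow> mm N n (mm N n (GG N n g) (Q.gg 2)) (PP N n 1 (calR N trig q R F x y))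
      = mm N n (PP N n 1 (calR N trig q R F x y)) (mm N n (GG N n g) (Q.gg 2))"
      using baseGC2[OF _ hR12 hG] by simp
  qed
  show "mm N n (mm N n (Q.gg a) (Q.gg b)) (Q.xr a b (calR N trig q R F x y))
      = mm N n (Q.xr a b (calR N trig q R F x y)) (mm N n (Q.gg a) (Q.gg b))"
    using Q.gc2_orbit[OF base valid2[OF h]] by simp
next
  fix a b x y
  show "Q.xr a b (calR N trig q R F (unshiftf trig p x) (unshiftf trig p y)) = Q.xr a b (calR N trig q R F x y)"
    using calR_hom[of trig p] p0 by simp
qed simp_all

end


definition shm :: "bool \<Rightarrow> complex \<Rightarrow> int \<Rightarrow> complex \<Rightarrow> complex" where
  "shm trig p m z = (if trig then p powi m * z else z + of_int m * p)"

lemma shm0: "shm trig p 0 z = z" by (simp add: shm_def)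

lemma unshift_shm: "trig \<longrightarrow> p \<noteq> 0 \<Longrightarrow> unshiftf trig p (shm trig p m z) = shm trig p (m - 1) z"
proof (cases trig)
  case True
  assume "trig \<longrightarrow> p \<noteq> 0"
  then have p: "p \<noteq> 0" using True by simp
  have "p powi (m - 1) = p powi m / p" using p by (simp add: power_int_diff)
  then show ?thesis using True by (simp add: shm_def unshiftf_def)
next
  case False
  then show ?thesis by (simp add: shm_def unshiftf_def algebra_simps)
qed

lemma shift_shm: "trig \<longrightarrow> p \<noteq> 0 \<Longrightarrow> shiftf trig p (shm trig p m z) = shm trig p (m + 1) z"
proof (cases trig)
  case True
  assume "trig \<longrightarrow> p \<noteq> 0"
  then have p: "p \<noteq> 0" using True by simp
  have "p powi (m + 1) = p * p powi m" using p by (simp add: power_int_add)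
  then show ?thesis using True by (simp add: shm_def shiftf_def)
next
  case False
  then show ?thesis by (simp add: shm_def shiftf_def algebra_simps)
qed

lemma shift_unshift: "trig \<longrightarrow> p \<noteq> 0 \<Longrightarrow> shiftf trig p (unshiftf trig p z) = z"
  by (cases trig) (auto simp: shiftf_def unshiftf_def)

lemma gen_pair:
  assumes gen: "generic n trig q p u" and ab: "a \<in> {1..n}" "b \<in> {1..n}" "a \<noteq> b"
    and m: "\<bar>m1\<bar> \<le> 1" "\<bar>m2\<bar> \<le> 1" and pq: "trig \<longrightarrow> p \<noteq> 0 \<and> q \<noteq> 0"
  shows "shm trig p m1 (u a) \<noteq> shm trig p m2 (u b) \<and> fuv trig q (shm trig p m1 (u a)) (shm trig p m2 (u b)) \<noteq> 0"
proof -
  define m where "m = m1 - m2"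
  have mm: "\<bar>m\<bar> \<le> 2" using m by (simp add: m_def)
  have G: "if trig then p powi m * u a \<noteq> u b \<and> p powi m * u a \<noteq> q^2 * u b
           else u a - u b + of_int m * p \<noteq> 0 \<and> u a - u b + of_int m * p \<noteq> 1"
    using gen ab mm unfolding generic_def by blast
  show ?thesis
  proof (cases trig)
    case True
    then have p: "p \<noteq> 0" and q: "q \<noteq> 0" using pq by auto
    have G1: "p powi m * u a \<noteq> u b" and G2: "p powi m * u a \<noteq> q^2 * u b" using G True by auto
    define X where "X = p powi m1 * u a"
    define Y where "Y = p powi m2 * u b"
    have pm2: "p powi m2 \<noteq> 0" using p by simp
    have pm: "p powi m1 = p powi m * p powi m2" using p by (simp add: m_def power_int_add[symmetric])
    have XY: "X \<noteq> Y"
    proof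
      assume "X = Y"
      then have "p powi m2 * (p powi m * u a) = p powi m2 * u b" by (simp add: X_def Y_def pm algebra_simps)
      then show False using G1 pm2 by simp
    qed
    have F: "fuv trig q X Y \<noteq> 0"
    proof
      assume f0: "fuv trig q X Y = 0"
      have XY': "X - Y \<noteq> 0" using XY by simp
      have "q - (q - inverse q) * X / (X - Y) = 0" using f0 True by (simp add: fuv_def)
      then have "q * (X - Y) = (q - inverse q) * X" using XY' by (simp add: field_simps)
      then have "q * q * (X - Y) = (q * q - 1) * X" using q by (simp add: field_simps)
      then have "X = q^2 * Y" by (simp add: algebra_simps power2_eq_square)
      then have "p powi m2 * (p powi m * u a) = p powi m2 * (q^2 * u b)" by (simp add: X_def Y_def pm algebra_simps)
      then show False using G2 pm2 by simp
    qed
    show ?thesis using XY F True by (simp add: shm_def X_def Y_def)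
  next
    case False
    have G1: "u a - u b + of_int m * p \<noteq> 0" and G2: "u a - u b + of_int m * p \<noteq> 1" using G False by auto
    have d: "(u a + of_int m1 * p) - (u b + of_int m2 * p) = u a - u b + of_int m * p"
      by (simp add: m_def algebra_simps)
    have XY: "u a + of_int m1 * p \<noteq> u b + of_int m2 * p" using G1 d by (metis eq_iff_diff_eq_0)
    have F: "fuv trig q (u a + of_int m1 * p) (u b + of_int m2 * p) \<noteq> 0"
    proof
      assume "fuv trig q (u a + of_int m1 * p) (u b + of_int m2 * p) = 0"
      then have "1 - 1 / (u a - u b + of_int m * p) = 0" using False d by (simp add: fuv_def)
      then have "u a - u b + of_int m * p = 1" using G1 by (simp add: field_simps)
      then show False using G2 by simp
    qed
    show ?thesis using XY F False by (simp add: shm_def)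
  qed
qed

context conc2
begin

lemma q_nz': "trig \<longrightarrow> p \<noteq> 0 \<and> q \<noteq> 0" using q_nz p0 by simp

lemma pt_ok:
  assumes gen: "generic n trig q p u" and ee: "\<And>a. a \<in> {1..n} \<Longrightarrow> v a = shm trig p (e a) (u a)"
    and e01: "\<And>a. e a \<in> {0, 1}"
    and ab: "a \<in> {1..n}" "b \<in> {1..n}" "a \<noteq> b" and d: "d1 \<in> {0,1}" "d2 \<in> {0,1}"
  defines "X \<equiv> \<lambda>a d. if d = (1::int) then unshiftf trig p (v a) else v a"
  shows "X a d1 \<noteq> X b d2 \<and> fuv trig q (X a d1) (X b d2) \<noteq> 0"
proof -
  have Xe: "\<And>c d. c \<in> {1..n} \<Longrightarrow> d \<in> {0,1} \<Longrightarrow> X c d = shm trig p (e c - d) (u c)"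
    using ee p0 by (auto simp: X_def unshift_shm)
  have r: "\<bar>e a - d1\<bar> \<le> 1" "\<bar>e b - d2\<bar> \<le> 1" using e01[of a] e01[of b] d by auto
  show ?thesis using gen_pair[OF gen ab r q_nz'] Xe[OF ab(1) d(1)] Xe[OF ab(2) d(2)] by simp
qed


lemma nrm_Rdown: "nrm N n (Rdown N n trig q R F i v) = Hh.Dn i v"
  using n2 by (simp add: Rdown_def nrm_opprod comp_def nrm_xbar Hh.Dn_def Q.pr_def)

lemma nrm_Rup: "nrm N n (Rup N n trig q R F i v) = Hh.Up i v"
  using n2 by (simp add: Rup_def nrm_opprod comp_def nrm_xbar Hh.Up_def Q.pr_def)

lemma DD:
  assumes ab: "a \<noteq> b" "1 \<le> a" "1 \<le> b" and xs: "xs \<in> tidx N n"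
  shows "Delta N n trig q p R F g a (Delta N n trig q p R F g b Psi) v xs
    = opapp N n (mm N n (Hh.Dn a v) (mm N n (Q.gg a) (mm N n (Hh.Up a (v(a := unshiftf trig p (v a))))
        (mm N n (Hh.Dn b (v(a := unshiftf trig p (v a)))) (mm N n (Q.gg b)
          (Hh.Up b (v(a := unshiftf trig p (v a), b := unshiftf trig p (v b)))))))))
      (Psi (v(a := unshiftf trig p (v a), b := unshiftf trig p (v b)))) xs"
proof -
  define va where "va = v(a := unshiftf trig p (v a))"
  define vab where "vab = v(a := unshiftf trig p (v a), b := unshiftf trig p (v b))"
  have vab': "va(b := unshiftf trig p (va b)) = vab" using ab by (simp add: va_def vab_def)
  have "Delta N n trig q p R F g a (Delta N n trig q p R F g b Psi) v xs
      = opapp N n (opmul N n (opmul N n (Rdown N n trig q R F a v) (opmul N n (gbar N n F g a) (Rup N n trig q R F a va)))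
          (opmul N n (Rdown N n trig q R F b va) (opmul N n (gbar N n F g b) (Rup N n trig q R F b vab)))) (Psi vab) xs"
    by (simp add: Delta_eq opapp_opapp va_def[symmetric] vab'[symmetric])
  also have "\<dots> = opapp N n (nrm N n (opmul N n (opmul N n (Rdown N n trig q R F a v) (opmul N n (gbar N n F g a) (Rup N n trig q R F a va)))
          (opmul N n (Rdown N n trig q R F b va) (opmul N n (gbar N n F g b) (Rup N n trig q R F b vab))))) (Psi vab) xs"
    using xs by (rule opapp_nrm)
  also have "nrm N n (opmul N n (opmul N n (Rdown N n trig q R F a v) (opmul N n (gbar N n F g a) (Rup N n trig q R F a va)))
          (opmul N n (Rdown N n trig q R F b va) (opmul N n (gbar N n F g b) (Rup N n trig q R F b vab))))
     = mm N n (Hh.Dn a v) (mm N n (Q.gg a) (mm N n (Hh.Up a va) (mm N n (Hh.Dn b va) (mm N n (Q.gg b) (Hh.Up b vab)))))"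
  proof -
    have "nrm N n (opmul N n (opmul N n (Rdown N n trig q R F a v) (opmul N n (gbar N n F g a) (Rup N n trig q R F a va)))
          (opmul N n (Rdown N n trig q R F b va) (opmul N n (gbar N n F g b) (Rup N n trig q R F b vab))))
      = mm N n (mm N n (nrm N n (Rdown N n trig q R F a v)) (mm N n (nrm N n (gbar N n F g a)) (nrm N n (Rup N n trig q R F a va))))
          (mm N n (nrm N n (Rdown N n trig q R F b va)) (mm N n (nrm N n (gbar N n F g b)) (nrm N n (Rup N n trig q R F b vab))))"
      by (simp add: nrm_opmul mm_opmul_l mm_opmul_r)
    also have "\<dots> = mm N n (Hh.Dn a v) (mm N n (Q.gg a) (mm N n (Hh.Up a va) (mm N n (Hh.Dn b va) (mm N n (Q.gg b) (Hh.Up b vab)))))"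
      using ab by (simp only: nrm_Rdown nrm_Rup nrm_gbar Q.assoc)
    finally show ?thesis .
  qed
  finally show ?thesis unfolding va_def vab_def .
qed

lemma core:
  assumes gen: "generic n trig q p u" and ee: "\<And>a. a \<in> {1..n} \<Longrightarrow> v a = shm trig p (e a) (u a)"
    and e01: "\<And>a. e a \<in> {0, 1}"
    and ij: "i \<in> {1..n}" "j \<in> {1..n}" "i \<noteq> j" and xs: "xs \<in> tidx N n"
  shows "Delta N n trig q p R F g i (Delta N n trig q p R F g j Psi) v xs
       = Delta N n trig q p R F g j (Delta N n trig q p R F g i Psi) v xs"
proof -
  define X where "X = (\<lambda>a d. if d = (1::int) then unshiftf trig p (v a) else v a)"
  have pt: "\<And>a b d1 d2. a \<in> {1..n} \<Longrightarrow> b \<in> {1..n} \<Longrightarrow> a \<noteq> b \<Longrightarrow> d1 \<in> {0,1} \<Longrightarrow> d2 \<in> {0,1} \<Longrightarrow>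
      X a d1 \<noteq> X b d2 \<and> fuv trig q (X a d1) (X b d2) \<noteq> 0"
    unfolding X_def by (rule pt_ok[OF gen ee e01]) auto
  have X0: "\<And>a. X a 0 = v a" and X1: "\<And>a. X a 1 = unshiftf trig p (v a)" by (simp_all add: X_def)
  have hc: "\<And>i j. i \<in> {1..n} \<Longrightarrow> j \<in> {1..n} \<Longrightarrow> i < j \<Longrightarrow>
    mm N n (Hh.Dn i v) (mm N n (Q.gg i) (mm N n (Hh.Up i (v(i := unshiftf trig p (v i))))
        (mm N n (Hh.Dn j (v(i := unshiftf trig p (v i)))) (mm N n (Q.gg j)
          (Hh.Up j (v(i := unshiftf trig p (v i), j := unshiftf trig p (v j))))))))
  = mm N n (Hh.Dn j v) (mm N n (Q.gg j) (mm N n (Hh.Up j (v(j := unshiftf trig p (v j))))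
        (mm N n (Hh.Dn i (v(j := unshiftf trig p (v j)))) (mm N n (Q.gg i)
          (Hh.Up i (v(i := unshiftf trig p (v i), j := unshiftf trig p (v j))))))))"
  proof -
    fix i j assume h: "i \<in> {1..n}" "j \<in> {1..n}" "i < j"
    have nij: "i \<noteq> j" "j \<noteq> i" using h by auto
    have okU1: "okU trig q (unshiftf trig p (v i)) (v j)"
      using pt[OF h(1,2) nij(1), of 1 0] pt[OF h(2,1) nij(2), of 0 1] by (simp add: okU_def X0 X1)
    have okU2: "okU trig q (v j) (v i)"
      using pt[OF h(2,1) nij(2), of 0 0] pt[OF h(1,2) nij(1), of 0 0] by (simp add: okU_def X0 X1)
    have okY1: "\<And>k. i < k \<Longrightarrow> k < j \<Longrightarrow> okY (unshiftf trig p (v i)) (v j) (v k)"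
    proof -
      fix k assume k: "i < k" "k < j"
      then have kr: "k \<in> {1..n}" using h by auto
      show "okY (unshiftf trig p (v i)) (v j) (v k)"
        using pt[OF h(1,2) nij(1), of 1 0] pt[OF h(1) kr, of 1 0] pt[OF h(2) kr, of 0 0] k
        by (auto simp: okY_def X0 X1)
    qed
    have okY2: "\<And>k. j < k \<Longrightarrow> k \<le> n \<Longrightarrow> okY (unshiftf trig p (v i)) (unshiftf trig p (v j)) (v k)"
    proof -
      fix k assume k: "j < k" "k \<le> n"
      then have kr: "k \<in> {1..n}" using h by auto
      show "okY (unshiftf trig p (v i)) (unshiftf trig p (v j)) (v k)"
        using pt[OF h(1,2) nij(1), of 1 1] pt[OF h(1) kr, of 1 0] pt[OF h(2) kr, of 1 0] k h
        by (auto simp: okY_def X0 X1)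
    qed
    have okY3: "\<And>k. 1 \<le> k \<Longrightarrow> k < i \<Longrightarrow> okY (v i) (v j) (v k)"
    proof -
      fix k assume k: "1 \<le> k" "k < i"
      then have kr: "k \<in> {1..n}" using h by auto
      show "okY (v i) (v j) (v k)"
        using pt[OF h(1,2) nij(1), of 0 0] pt[OF h(1) kr, of 0 0] pt[OF h(2) kr, of 0 0] k h
        by (auto simp: okY_def X0 X1)
    qed
    have ij': "1 \<le> i" "i < j" "j \<le> n" using h by auto
    show "?thesis i j"
      using Hh.heart_comm[OF ij' okU1 okU2 okY1 okY2 okY3] by (simp add: fun_upd_twist[OF nij(2)])
  qed
  have tw: "v(j := unshiftf trig p (v j), i := unshiftf trig p (v i)) = v(i := unshiftf trig p (v i), j := unshiftf trig p (v j))"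
    using ij by (simp add: fun_upd_twist)
  have i1: "1 \<le> i" "1 \<le> j" using ij by auto
  show ?thesis
  proof (cases "i < j")
    case True
    show ?thesis using hc[OF ij(1,2) True] DD[OF ij(3) i1 xs, of Psi v] DD[OF ij(3)[symmetric] i1(2,1) xs, of Psi v] tw
      by simp
  next
    case False
    then have "j < i" using ij by simp
    show ?thesis using hc[OF ij(2,1) \<open>j < i\<close>] DD[OF ij(3) i1 xs, of Psi v] DD[OF ij(3)[symmetric] i1(2,1) xs, of Psi v] tw
      by simp
  qed
qed

end


lemma Tinv_Mop: "trig \<longrightarrow> p \<noteq> 0 \<Longrightarrow> Tinv trig p i (Mop N n trig q p R F g i Psi) = Delta N n trig q p R F g i Psi"
  by (simp add: Tinv_def Mop_def Tsh_def shift_unshift fun_eq_iff)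

lemma Tsh_Mop: "i \<noteq> j \<Longrightarrow> Tsh trig p i (Mop N n trig q p R F g j X) u
   = Delta N n trig q p R F g j X (u(i := shiftf trig p (u i), j := shiftf trig p (u j)))"
  by (simp add: Mop_def Tsh_def)

theorem mainTheorem6:
  fixes N n :: nat and trig :: bool and q p :: complex and R F :: op
    and g :: "nat \<Rightarrow> nat \<Rightarrow> complex"
  assumes "n \<ge> 2"
    and "involutive_symmetry N F" and "skew_invertible N F"
    and "braiding N R" and "compatible N R F"
    and "(\<not> trig \<and> involutive_symmetry N R \<and> p \<noteq> 0) \<or>
         (trig \<and> hecke_symmetry N q R \<and> p \<noteq> 0 \<and> p \<noteq> 1)"
    and "\<And>i j. i \<in> {1..n} \<Longrightarrow> j \<in> {1..n} \<Longrightarrow> i \<noteq> j \<Longrightarrow>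
           opeq N n (opmul N n (gbar N n F g i) (gbar N n F g j))
                    (opmul N n (gbar N n F g j) (gbar N n F g i))"
    and "\<And>i j. i \<in> {1..n} \<Longrightarrow> j \<in> {1..n} \<Longrightarrow> i \<noteq> j \<Longrightarrow>
           opeq N n (opmul N n (xbar N n F i j R) (opmul N n (gbar N n F g i) (gbar N n F g j)))
                    (opmul N n (opmul N n (gbar N n F g i) (gbar N n F g j)) (xbar N n F i j R))"
    and "i \<in> {1..n}" and "j \<in> {1..n}"
  shows "\<forall>Psi u. generic n trig q p u \<longrightarrow> (\<forall>xs\<in>tidx N n.
           Tsh trig p i (Mop N n trig q p R F g j (Tinv trig p i (Mop N n trig q p R F g i Psi))) u xs
         = Tsh trig p j (Mop N n trig q p R F g i (Tinv trig p j (Mop N n trig q p R F g j Psi))) u xs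
         \<and> Delta N n trig q p R F g i (Delta N n trig q p R F g j Psi) u xs
         = Delta N n trig q p R F g j (Delta N n trig q p R F g i Psi) u xs)"
proof -
  have hR: "(\<not> trig \<and> involutive_symmetry N R) \<or> (trig \<and> hecke_symmetry N q R)"
    and p0: "p \<noteq> 0" using assms(6) by auto
  interpret conc2 N n trig q R F g p
    by (unfold_locales) (use assms hR p0 in auto)
  have pp: "trig \<longrightarrow> p \<noteq> 0" using p0 by simp
  show ?thesis
  proof (intro allI impI ballI)
    fix Psi u xs assume gen: "generic n trig q p u" and xs: "xs \<in> tidx N n"
    show "Tsh trig p i (Mop N n trig q p R F g j (Tinv trig p i (Mop N n trig q p R F g i Psi))) u xs
         = Tsh trig p j (Mop N n trig q p R F g i (Tinv trig p j (Mop N n trig q p R F g j Psi))) u xs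
         \<and> Delta N n trig q p R F g i (Delta N n trig q p R F g j Psi) u xs
         = Delta N n trig q p R F g j (Delta N n trig q p R F g i Psi) u xs"
    proof (cases "i = j")
      case True then show ?thesis by simp
    next
      case False
      have second: "Delta N n trig q p R F g i (Delta N n trig q p R F g j Psi) u xs
         = Delta N n trig q p R F g j (Delta N n trig q p R F g i Psi) u xs"
        by (rule core[OF gen _ _ assms(9,10) False xs, of u "\<lambda>_. 0"]) (simp_all add: shm0)
      define w where "w = u(i := shiftf trig p (u i), j := shiftf trig p (u j))"
      have w': "u(j := shiftf trig p (u j), i := shiftf trig p (u i)) = w"
        using False by (simp add: w_def fun_upd_twist)
      have wsh: "\<And>a. a \<in> {1..n} \<Longrightarrow> w a = shm trig p (if a = i \<or> a = j then 1 else 0) (u a)"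
        using pp shift_shm[OF pp, of 0] by (auto simp: w_def shm0)
      have first: "Delta N n trig q p R F g j (Delta N n trig q p R F g i Psi) w xs
          = Delta N n trig q p R F g i (Delta N n trig q p R F g j Psi) w xs"
        by (rule core[OF gen wsh _ assms(10,9) _ xs]) (use False in auto)
      have l: "Tsh trig p i (Mop N n trig q p R F g j (Tinv trig p i (Mop N n trig q p R F g i Psi))) u xs
          = Delta N n trig q p R F g j (Delta N n trig q p R F g i Psi) w xs"
        using False by (simp add: Tinv_Mop[OF pp] Tsh_Mop w_def)
      have r: "Tsh trig p j (Mop N n trig q p R F g i (Tinv trig p j (Mop N n trig q p R F g j Psi))) u xs
          = Delta N n trig q p R F g i (Delta N n trig q p R F g j Psi) w xs"
        using False by (simp add: Tinv_Mop[OF pp] Tsh_Mop w'[symmetric])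
      show ?thesis using l r first second by simp
    qed
  qed
qed


end
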